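(* Let $D=(Ele,Rg,rt)$ be a DTD and $P=(\mathcal A,\mathcal F)$ a policy over $D$. Then $P$ is consistent if and only if all of the following hold: (1) for every $A\in Ele$ with $Rg(A)=B^*$: if $(A,\mathsf{insert}(B))\in\mathcal A$ and $(A,\mathsf{delete}(B))\in\mathcal A$, then nothing is forbidden below $B$ in $P$; (2) for every $A\in Ele$ with $Rg(A)=B_1+\dots+B_n$: no edge $(B_i,B_j)$ of $G_A^+$ belongs to $F_A$; (3) for every $A\in Ele$ with $Rg(A)=B_1+\dots+B_n$ and every $i\in\{1,\dots,n\}$: if $B_i$ lies on a (directed) cycle of $G_A$, then nothing is forbidden below $B_i$ in $P$.
   Context: Let $\mathcal L$ be an infinite set of labels and $\mathsf{str}\notin\mathcal L$ a special symbol. A DTD is a triple $D=(Ele,Rg,rt)$ where $Ele\subseteq\mathcal L$ is finite, $rt\in Ele$ is the root type, and for each $A\in Ele$, $Rg(A)$ is one of: $\mathsf{str}$, $\epsilon$, $B_1,\dots,B_n$ (concatenation), $B_1+\dots+B_n$ (disjunction), or $B_1^*$ (Kleene star), where the $B_i\in Ele$ are pairwise distinct and are called subelement types of $A$. DTDs are non-recursive: the directed graph on $Ele$ with an edge $A\to B$ whenever $B$ is a subelement type of $A$ is acyclic. $\le_D$ denotes the reflexive–transitive closure of the subelement relation. We assume every element type is reachable from the root: $rt\le_D A$ for all $A\in Ele$. An XML tree is $t=(N_t,E_t,\lambda_t,r_t,v_t)$: a finite rooted unordered tree with node set $N_t$, parent–child edge set $E_t$, root $r_t$, labelling $\lambda_t:N_t\to\mathcal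 L\cup\{\mathsf{str}\}$, and a function $v_t$ assigning a string to each node labelled $\mathsf{str}$. The tree $t$ conforms to $D$ at $A\in Ele$ if $\lambda_t(r_t)=A$, every node is labelled by an element of $Ele\cup\{\mathsf{str}\}$, every node labelled $B\in Ele$ has children whose labels, listed in some order, form a word of the language of the regular expression $Rg(B)$ (with $Rg(B)=\mathsf{str}$ meaning a single child labelled $\mathsf{str}$ and $\epsilon$ meaning no children), and every node labelled $\mathsf{str}$ is a leaf with a defined string value. $I_D(A)$ is the set of trees conforming to $D$ at $A$, and $I_D=I_D(rt)$. Trees $t_1,t_2$ are isomorphic, $t_1\equiv t_2$, if there is a bijection $N_{t_1}\to N_{t_2}$ preserving root, edges, labels and string values. Atomic updates on a tree $t$: $\mathsf{insert}(n,t')$ adds the tree $t'$ with its root as a new child of $n$; $\mathsf{delete}(n)$ removes $n$ and all its descendants; $\mathsf{replace}(n,t')$ removes the subtree rooted at $n$ and attaches $t'$ (by its root) as a child of the former parent of $n$; $\mathsf{replace}(n,s)$, for a string $s$, sets the string value of $n$ to $s$. An update is valid on $t$ if $n\in N_t$ and the tree $t'$ (if present) has node set disjoint from $N_t$; $[\![op]\!](t)$ denotes the result. For a sequence, $[\![op_1;\dots;op_k]\!](t)=[\![op_k]\!](\cdots[\![op_1]\!](t)\cdots)$, and the sequence is valid on $t$ if each $op_i$ is valid on the result of $op_1;\dots;op_{i-1}$. Update access types (UATs) are expressions $(A,\mathsf{insert}(B))$, $(A,\mathsf{delete}(B))$, $(A,\mathsf{replace}(B,B'))$ with $B\neq B'$,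 and $(A,\mathsf{replace}(\mathsf{str},\mathsf{str}))$, with $A\in Ele$; $A$ is the element type of the UAT. Such a UAT is valid for $D$ iff, respectively: $Rg(A)=B^*$; $Rg(A)=B^*$; $Rg(A)=B_1+\dots+B_n$ with $B,B'\in\{B_1,\dots,B_n\}$, $B\neq B'$; $Rg(A)=\mathsf{str}$. $\mathrm{valid}(D)$ is the set of UATs valid for $D$. An atomic update matches a UAT on $t$ as follows: $\mathsf{insert}(n,t')$ matches $(A,\mathsf{insert}(B))$ if $\lambda_t(n)=A$ and $t'\in I_D(B)$; $\mathsf{delete}(n)$ matches $(A,\mathsf{delete}(B))$ if $\lambda_t(n)=B$ and the parent of $n$ is labelled $A$; $\mathsf{replace}(n,t')$ matches $(A,\mathsf{replace}(B,B'))$ if $\lambda_t(n)=B$, the parent of $n$ is labelled $A$, $t'\in I_D(B')$ and $B\neq B'$; $\mathsf{replace}(n,s)$ matches $(A,\mathsf{replace}(\mathsf{str},\mathsf{str}))$ if $\lambda_t(n)=\mathsf{str}$ and the parent of $n$ is labelled $A$. For a set $S$ of UATs, $[\![S]\!]_t$ is the set of atomic updates matching some element of $S$ on $t$. A sequence $op_1;\dots;op_k$ is allowed on $t$ by $S$ if it is valid on $t$ and $op_i\in[\![S]\!]_{t_{i-1}}$ for all $i$, where $t_0=t$ and $t_i=[\![op_i]\!](t_{i-1})$. A policy over $D$ is a pair $P=(\mathcal A,\mathcal F)$ with $\mathcal A,\mathcal F\subseteq\mathrm{valid}(D)$ and $\mathcal A\cap\mathcal F=\emptyset$ (allowed and forbidden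 UATs); it is total if $\mathcal A\cup\mathcal F=\mathrm{valid}(D)$ and partial otherwise. $P$ is consistent if there exist no $t\in I_D$, no sequence $op_1;\dots;op_k$ ($k\ge1$) allowed on $t$ by $\mathcal A$, and no $op_0\in[\![\mathcal F]\!]_t$ valid on $t$ and non-trivial (i.e. $[\![op_0]\!](t)\not\equiv t$) such that $[\![op_1;\dots;op_k]\!](t)\equiv[\![op_0]\!](t)$. Nothing is forbidden below $B$ in $P=(\mathcal A,\mathcal F)$ means: $\mathcal F$ contains no UAT whose element type $C$ satisfies $B\le_D C$. For $A$ with $Rg(A)=B_1+\dots+B_n$, the replace graph $G_A$ is the directed graph with vertices $B_1,\dots,B_n$ and an edge $(B_i,B_j)$ iff $(A,\mathsf{replace}(B_i,B_j))\in\mathcal A$; $G_A^+$ is its transitive closure; and $F_A=\{(B_i,B_j)\mid (A,\mathsf{replace}(B_i,B_j))\in\mathcal F\}$ is the set of forbidden edges of $A$. *)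

theory Defs
  imports Main "HOL-Library.Multiset"
begin

datatype 'l lab = Elem 'l | Str

text \<open>Right-hand sides of DTD rules.  RConc [B1,..,Bn] is B1,...,Bn; RDisj [B1,..,Bn] is B1+...+Bn.\<close>
datatype 'l rg = RStr | REps | RConc "'l list" | RDisj "'l list" | RStar 'l

record 'l dtd =
  d_ele :: "'l set"
  d_rg  :: "'l \<Rightarrow> 'l rg"
  d_rt  :: 'l

fun subs :: "'l rg \<Rightarrow> 'l set" where
  "subs RStr = {}"
| "subs REps = {}"
| "subs (RConc Bs) = set Bs"
| "subs (RDisj Bs) = set Bs"
| "subs (RStar B) = {B}"

fun rg_ok :: "'l rg \<Rightarrow> bool" where
  "rg_ok (RConc Bs) = (Bs \<noteq> [] \<and> distinct Bs)"
| "rg_ok (RDisj Bs) = (Bs \<noteq> [] \<and> distinct Bs)"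
| "rg_ok _ = True"

definition sub_rel :: "'l dtd \<Rightarrow> ('l \<times> 'l) set" where
  "sub_rel D = {(A, B). A \<in> d_ele D \<and> B \<in> subs (d_rg D A)}"

definition le_D :: "'l dtd \<Rightarrow> 'l \<Rightarrow> 'l \<Rightarrow> bool" where
  "le_D D A B \<longleftrightarrow> (A, B) \<in> (sub_rel D)\<^sup>*"

definition wf_dtd :: "'l dtd \<Rightarrow> bool" where
  "wf_dtd D \<longleftrightarrow> finite (d_ele D) \<and> d_rt D \<in> d_ele D
     \<and> (\<forall>A \<in> d_ele D. subs (d_rg D A) \<subseteq> d_ele D \<and> rg_ok (d_rg D A))
     \<and> acyclic (sub_rel D)
     \<and> (\<forall>A \<in> d_ele D. le_D D (d_rt D) A)"

text \<open>Nodes are natural numbers (an unbounded supply of node identities).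
  The string-value function is total, but only its values at str-labelled nodes matter.\<close>
record 'l xtree =
  tnodes :: "nat set"
  tedges :: "(nat \<times> nat) set"
  tlab   :: "nat \<Rightarrow> 'l lab"
  troot  :: nat
  tval   :: "nat \<Rightarrow> string"

definition is_tree :: "'l xtree \<Rightarrow> bool" where
  "is_tree t \<longleftrightarrow> finite (tnodes t) \<and> troot t \<in> tnodes t
     \<and> tedges t \<subseteq> tnodes t \<times> tnodes t
     \<and> (\<forall>p. (p, troot t) \<notin> tedges t)
     \<and> (\<forall>n \<in> tnodes t. n \<noteq> troot t \<longrightarrow> (\<exists>!p. (p, n) \<in> tedges t))
     \<and> (\<forall>n \<in> tnodes t. (troot t, n) \<in> (tedges t)\<^sup>*)"

definition children :: "'l xtree \<Rightarrow> nat \<Rightarrow> nat set" where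
  "children t n = {c. (n, c) \<in> tedges t}"

text \<open>Multiset of labels of the children of a node (the tree is unordered).\<close>
definition child_labels :: "'l xtree \<Rightarrow> nat \<Rightarrow> 'l lab multiset" where
  "child_labels t n = image_mset (tlab t) (mset_set (children t n))"

text \<open>A multiset of labels can be listed as a word of the language of the content model.\<close>
fun word_ok :: "'l rg \<Rightarrow> 'l lab multiset \<Rightarrow> bool" where
  "word_ok RStr M = (M = {#Str#})"
| "word_ok REps M = (M = {#})"
| "word_ok (RConc Bs) M = (M = mset (map Elem Bs))"
| "word_ok (RDisj Bs) M = (\<exists>B \<in> set Bs. M = {#Elem B#})"
| "word_ok (RStar B) M = (set_mset M \<subseteq> {Elem B})"

definition conforms :: "'l dtd \<Rightarrow> 'l \<Rightarrow> 'l xtree \<Rightarrow> bool" where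
  "conforms D A t \<longleftrightarrow> tlab t (troot t) = Elem A
     \<and> (\<forall>n \<in> tnodes t. \<forall>B. tlab t n = Elem B \<longrightarrow> B \<in> d_ele D)
     \<and> (\<forall>n \<in> tnodes t. \<forall>B. tlab t n = Elem B \<longrightarrow> word_ok (d_rg D B) (child_labels t n))
     \<and> (\<forall>n \<in> tnodes t. tlab t n = Str \<longrightarrow> children t n = {})"

definition I_D :: "'l dtd \<Rightarrow> 'l \<Rightarrow> 'l xtree set" where
  "I_D D A = {t. is_tree t \<and> conforms D A t}"

definition iso :: "'l xtree \<Rightarrow> 'l xtree \<Rightarrow> bool" where
  "iso t1 t2 \<longleftrightarrow> (\<exists>f. bij_betw f (tnodes t1) (tnodes t2) \<and> f (troot t1) = troot t2
     \<and> (\<forall>x \<in> tnodes t1. \<forall>y \<in> tnodes t1. (x, y) \<in> tedges t1 \<longleftrightarrow> (f x, f y) \<in> tedges t2)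
     \<and> (\<forall>x \<in> tnodes t1. tlab t2 (f x) = tlab t1 x)
     \<and> (\<forall>x \<in> tnodes t1. tlab t1 x = Str \<longrightarrow> tval t2 (f x) = tval t1 x))"

datatype 'l upd =
    Insert nat "'l xtree"
  | Delete nat
  | ReplaceT nat "'l xtree"
  | ReplaceS nat string

definition ins_tree :: "'l xtree \<Rightarrow> nat \<Rightarrow> 'l xtree \<Rightarrow> 'l xtree" where
  "ins_tree t n t' = \<lparr> tnodes = tnodes t \<union> tnodes t',
     tedges = tedges t \<union> tedges t' \<union> {(n, troot t')},
     tlab = (\<lambda>x. if x \<in> tnodes t' then tlab t' x else tlab t x),
     troot = troot t,
     tval = (\<lambda>x. if x \<in> tnodes t' then tval t' x else tval t x) \<rparr>"

definition del_tree :: "'l xtree \<Rightarrow> nat \<Rightarrow> 'l xtree" where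
  "del_tree t n = (let K = tnodes t - {m. (n, m) \<in> (tedges t)\<^sup>*} in
     t\<lparr> tnodes := K, tedges := tedges t \<inter> (K \<times> K) \<rparr>)"

definition parent :: "'l xtree \<Rightarrow> nat \<Rightarrow> nat" where
  "parent t n = (THE p. (p, n) \<in> tedges t)"

fun apply_upd :: "'l upd \<Rightarrow> 'l xtree \<Rightarrow> 'l xtree" where
  "apply_upd (Insert n t') t = ins_tree t n t'"
| "apply_upd (Delete n) t = del_tree t n"
| "apply_upd (ReplaceT n t') t = ins_tree (del_tree t n) (parent t n) t'"
| "apply_upd (ReplaceS n s) t = t\<lparr> tval := (tval t)(n := s) \<rparr>"

fun valid_upd :: "'l upd \<Rightarrow> 'l xtree \<Rightarrow> bool" where
  "valid_upd (Insert n t') t = (n \<in> tnodes t \<and> tnodes t' \<inter> tnodes t = {})"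
| "valid_upd (Delete n) t = (n \<in> tnodes t)"
| "valid_upd (ReplaceT n t') t = (n \<in> tnodes t \<and> tnodes t' \<inter> tnodes t = {})"
| "valid_upd (ReplaceS n s) t = (n \<in> tnodes t)"

text \<open>UIns A B = (A, insert(B)); UDel A B = (A, delete(B));
  URep A B B' = (A, replace(B,B')); URepStr A = (A, replace(str,str)).\<close>
datatype 'l uat = UIns 'l 'l | UDel 'l 'l | URep 'l 'l 'l | URepStr 'l

fun uat_elem :: "'l uat \<Rightarrow> 'l" where
  "uat_elem (UIns A B) = A"
| "uat_elem (UDel A B) = A"
| "uat_elem (URep A B B') = A"
| "uat_elem (URepStr A) = A"

fun valid_uat :: "'l dtd \<Rightarrow> 'l uat \<Rightarrow> bool" where
  "valid_uat D (UIns A B) = (A \<in> d_ele D \<and> d_rg D A = RStar B)"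
| "valid_uat D (UDel A B) = (A \<in> d_ele D \<and> d_rg D A = RStar B)"
| "valid_uat D (URep A B B') = (A \<in> d_ele D \<and> B \<noteq> B'
     \<and> (\<exists>Bs. d_rg D A = RDisj Bs \<and> B \<in> set Bs \<and> B' \<in> set Bs))"
| "valid_uat D (URepStr A) = (A \<in> d_ele D \<and> d_rg D A = RStr)"

definition valid_set :: "'l dtd \<Rightarrow> 'l uat set" where
  "valid_set D = {u. valid_uat D u}"

definition parent_labelled :: "'l xtree \<Rightarrow> nat \<Rightarrow> 'l \<Rightarrow> bool" where
  "parent_labelled t n A \<longleftrightarrow> (\<exists>p. (p, n) \<in> tedges t \<and> tlab t p = Elem A)"

fun matches :: "'l dtd \<Rightarrow> 'l xtree \<Rightarrow> 'l upd \<Rightarrow> 'l uat \<Rightarrow> bool" where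
  "matches D t (Insert n t') (UIns A B) = (tlab t n = Elem A \<and> t' \<in> I_D D B)"
| "matches D t (Delete n) (UDel A B) = (tlab t n = Elem B \<and> parent_labelled t n A)"
| "matches D t (ReplaceT n t') (URep A B B') =
     (tlab t n = Elem B \<and> parent_labelled t n A \<and> t' \<in> I_D D B' \<and> B \<noteq> B')"
| "matches D t (ReplaceS n s) (URepStr A) = (tlab t n = Str \<and> parent_labelled t n A)"
| "matches D t _ _ = False"

definition sem_uats :: "'l dtd \<Rightarrow> 'l uat set \<Rightarrow> 'l xtree \<Rightarrow> 'l upd set" where
  "sem_uats D S t = {op. \<exists>u \<in> S. matches D t op u}"

fun apply_seq :: "'l upd list \<Rightarrow> 'l xtree \<Rightarrow> 'l xtree" where
  "apply_seq [] t = t"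
| "apply_seq (op # ops) t = apply_seq ops (apply_upd op t)"

fun allowed :: "'l dtd \<Rightarrow> 'l uat set \<Rightarrow> 'l xtree \<Rightarrow> 'l upd list \<Rightarrow> bool" where
  "allowed D S t [] = True"
| "allowed D S t (op # ops) =
     (valid_upd op t \<and> op \<in> sem_uats D S t \<and> allowed D S (apply_upd op t) ops)"

definition policy :: "'l dtd \<Rightarrow> 'l uat set \<Rightarrow> 'l uat set \<Rightarrow> bool" where
  "policy D AA FF \<longleftrightarrow> AA \<subseteq> valid_set D \<and> FF \<subseteq> valid_set D \<and> AA \<inter> FF = {}"

definition consistent :: "'l dtd \<Rightarrow> 'l uat set \<Rightarrow> 'l uat set \<Rightarrow> bool" where
  "consistent D AA FF \<longleftrightarrow> \<not> (\<exists>t ops op0. t \<in> I_D D (d_rt D) \<and> ops \<noteq> []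
      \<and> allowed D AA t ops
      \<and> op0 \<in> sem_uats D FF t \<and> valid_upd op0 t \<and> \<not> iso (apply_upd op0 t) t
      \<and> iso (apply_seq ops t) (apply_upd op0 t))"

definition nothing_forbidden_below :: "'l dtd \<Rightarrow> 'l uat set \<Rightarrow> 'l \<Rightarrow> bool" where
  "nothing_forbidden_below D FF B \<longleftrightarrow> (\<forall>u \<in> FF. \<not> le_D D B (uat_elem u))"

definition replace_graph :: "'l dtd \<Rightarrow> 'l uat set \<Rightarrow> 'l \<Rightarrow> ('l \<times> 'l) set" where
  "replace_graph D AA A = {(X, Y). X \<in> subs (d_rg D A) \<and> Y \<in> subs (d_rg D A) \<and> URep A X Y \<in> AA}"

definition forbidden_edges :: "'l uat set \<Rightarrow> 'l \<Rightarrow> ('l \<times> 'l) set" where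
  "forbidden_edges FF A = {(X, Y). URep A X Y \<in> FF}"

end

theory Submission
  imports Defs
begin

lemma is_treeD:
  assumes "is_tree t"
  shows "finite (tnodes t)" "troot t \<in> tnodes t" "tedges t \<subseteq> tnodes t \<times> tnodes t"
    "\<And>p. (p, troot t) \<notin> tedges t"
    "\<And>n. n \<in> tnodes t \<Longrightarrow> n \<noteq> troot t \<Longrightarrow> \<exists>!p. (p, n) \<in> tedges t"
    "\<And>n. n \<in> tnodes t \<Longrightarrow> (troot t, n) \<in> (tedges t)\<^sup>*"
  using assms unfolding is_tree_def by auto

lemma edge_nodes: "is_tree t \<Longrightarrow> (a, b) \<in> tedges t \<Longrightarrow> a \<in> tnodes t \<and> b \<in> tnodes t"
  unfolding is_tree_def by auto

lemma uniq_parent: "is_tree t \<Longrightarrow> (p, n) \<in> tedges t \<Longrightarrow> (p', n) \<in> tedges t \<Longrightarrow> p = p'"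
  unfolding is_tree_def by (metis edge_nodes[unfolded is_tree_def] SigmaD2 subsetD)

lemma children_sub: "is_tree t \<Longrightarrow> children t n \<subseteq> tnodes t"
  unfolding children_def using edge_nodes by fastforce

lemma finite_children: "is_tree t \<Longrightarrow> finite (children t n)"
  using children_sub is_treeD(1) finite_subset by metis

lemma parent_eq: "is_tree t \<Longrightarrow> (p, n) \<in> tedges t \<Longrightarrow> parent t n = p"
  unfolding parent_def using uniq_parent by blast


definition conf_at :: "'l dtd \<Rightarrow> 'l xtree \<Rightarrow> nat \<Rightarrow> bool" where
  "conf_at D t n \<longleftrightarrow> (\<forall>B. tlab t n = Elem B \<longrightarrow> B \<in> d_ele D \<and> word_ok (d_rg D B) (child_labels t n))
     \<and> (tlab t n = Str \<longrightarrow> children t n = {})"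

definition ok :: "'l dtd \<Rightarrow> 'l xtree \<Rightarrow> bool" where
  "ok D t \<longleftrightarrow> is_tree t \<and> (\<forall>n\<in>tnodes t. conf_at D t n)"

lemma I_D_iff: "t \<in> I_D D A \<longleftrightarrow> ok D t \<and> tlab t (troot t) = Elem A"
  unfolding I_D_def ok_def conforms_def conf_at_def children_def by auto

lemma okD: "ok D t \<Longrightarrow> is_tree t" "ok D t \<Longrightarrow> n \<in> tnodes t \<Longrightarrow> conf_at D t n"
  unfolding ok_def by auto

definition rk :: "'l dtd \<Rightarrow> 'l lab \<Rightarrow> nat" where
  "rk D L = (case L of Str \<Rightarrow> 0 | Elem A \<Rightarrow> Suc (card {B. (A, B) \<in> (sub_rel D)\<^sup>+}))"

lemma sub_rel_sub: "wf_dtd D \<Longrightarrow> sub_rel D \<subseteq> d_ele D \<times> d_ele D"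
  unfolding wf_dtd_def sub_rel_def by auto

lemma sub_rel_I: "A \<in> d_ele D \<Longrightarrow> B \<in> subs (d_rg D A) \<Longrightarrow> (A, B) \<in> sub_rel D"
  unfolding sub_rel_def by auto

lemma rk_lt:
  assumes w: "wf_dtd D" and ab: "(A, B) \<in> sub_rel D"
  shows "rk D (Elem B) < rk D (Elem A)"
proof -
  let ?r = "sub_rel D"
  have fin: "finite {C. (A, C) \<in> ?r\<^sup>+}"
  proof (rule finite_subset)
    show "{C. (A, C) \<in> ?r\<^sup>+} \<subseteq> d_ele D"
    proof
      fix C assume "C \<in> {C. (A, C) \<in> ?r\<^sup>+}"
      then have "(A, C) \<in> ?r\<^sup>+" by simp
      then obtain X where "(X, C) \<in> ?r" by (meson tranclE)
      then show "C \<in> d_ele D" using sub_rel_sub[OF w] by auto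
    qed
    show "finite (d_ele D)" using w unfolding wf_dtd_def by auto
  qed
  have sub: "{C. (B, C) \<in> ?r\<^sup>+} \<subseteq> {C. (A, C) \<in> ?r\<^sup>+}" using ab by auto
  have "B \<in> {C. (A, C) \<in> ?r\<^sup>+}" using ab by auto
  moreover have "B \<notin> {C. (B, C) \<in> ?r\<^sup>+}" using w unfolding wf_dtd_def acyclic_def by auto
  ultimately have "{C. (B, C) \<in> ?r\<^sup>+} \<subset> {C. (A, C) \<in> ?r\<^sup>+}" using sub by blast
  then have "card {C. (B, C) \<in> ?r\<^sup>+} < card {C. (A, C) \<in> ?r\<^sup>+}" using fin psubset_card_mono by blast
  then show ?thesis unfolding rk_def by simp
qed

lemma mem_child_labels: "is_tree t \<Longrightarrow> c \<in> children t n \<Longrightarrow> tlab t c \<in># child_labels t n"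
  unfolding child_labels_def using finite_children by fastforce

lemma child_label_cases:
  assumes "is_tree t" "conf_at D t n" "c \<in> children t n"
  shows "tlab t n \<noteq> Str \<and> (\<forall>A. tlab t n = Elem A \<longrightarrow>
      (tlab t c = Str \<and> d_rg D A = RStr) \<or> (\<exists>B. tlab t c = Elem B \<and> B \<in> subs (d_rg D A)))"
proof -
  have m: "tlab t c \<in># child_labels t n" using mem_child_labels assms by metis
  have "tlab t n \<noteq> Str" using assms unfolding conf_at_def by auto
  moreover
  { fix A assume a: "tlab t n = Elem A"
    then have wo: "word_ok (d_rg D A) (child_labels t n)" using assms(2) unfolding conf_at_def by auto
    have "(tlab t c = Str \<and> d_rg D A = RStr) \<or> (\<exists>B. tlab t c = Elem B \<and> B \<in> subs (d_rg D A))"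
    proof (cases "d_rg D A")
      case RStr then show ?thesis using wo m by auto
    next
      case REps then show ?thesis using wo m by auto
    next
      case (RConc Bs) then show ?thesis using wo m by auto
    next
      case (RDisj Bs) then show ?thesis using wo m by auto
    next
      case (RStar B) then show ?thesis using wo m by (auto dest!: subsetD[of _ _ "tlab t c"])
    qed }
  ultimately show ?thesis by blast
qed

lemma edge_rk:
  assumes w: "wf_dtd D" and o: "ok D t" and e: "(n, c) \<in> tedges t"
  shows "rk D (tlab t c) < rk D (tlab t n)"
proof -
  have tr: "is_tree t" using o okD by auto
  have n: "n \<in> tnodes t" using edge_nodes[OF tr e] by auto
  have ch: "c \<in> children t n" using e unfolding children_def by auto
  from child_label_cases[OF tr okD(2)[OF o n] ch] obtain A where a: "tlab t n = Elem A"
    and cs: "(tlab t c = Str \<and> d_rg D A = RStr) \<or> (\<exists>B. tlab t c = Elem B \<and> B \<in> subs (d_rg D A))"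
    by (cases "tlab t n") auto
  have A: "A \<in> d_ele D" using okD(2)[OF o n] a unfolding conf_at_def by auto
  show ?thesis
  proof (cases "tlab t c")
    case Str then show ?thesis using a unfolding rk_def by simp
  next
    case (Elem B)
    then have "B \<in> subs (d_rg D A)" using cs by auto
    then have "(A, B) \<in> sub_rel D" using A sub_rel_I by metis
    then show ?thesis using rk_lt[OF w] a Elem by metis
  qed
qed

lemma trancl_rk:
  assumes w: "wf_dtd D" and o: "ok D t" and e: "(n, c) \<in> (tedges t)\<^sup>+"
  shows "rk D (tlab t c) < rk D (tlab t n)"
  using e by (induction rule: trancl_induct) (use edge_rk[OF w o] less_trans in blast)+

lemma no_cycle:
  assumes w: "wf_dtd D" and o: "ok D t"
  shows "(n, n) \<notin> (tedges t)\<^sup>+"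
  using trancl_rk[OF w o] by blast

lemma path_le:
  assumes w: "wf_dtd D" and o: "ok D t" and p: "(n, z) \<in> (tedges t)\<^sup>*"
    and nn: "n \<in> tnodes t" and ln: "tlab t n = Elem X" and lz: "tlab t z = Elem Z"
  shows "le_D D X Z"
  using p lz
proof (induction arbitrary: Z rule: rtrancl_induct)
  case base then show ?case using ln unfolding le_D_def by auto
next
  case (step y z)
  have tr: "is_tree t" using o okD by auto
  have y: "y \<in> tnodes t" using edge_nodes[OF tr step.hyps(2)] by auto
  have ch: "z \<in> children t y" using step.hyps(2) unfolding children_def by auto
  from child_label_cases[OF tr okD(2)[OF o y] ch] obtain Y where a: "tlab t y = Elem Y"
    and cs: "(tlab t z = Str \<and> d_rg D Y = RStr) \<or> (\<exists>B. tlab t z = Elem B \<and> B \<in> subs (d_rg D Y))"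
    by (cases "tlab t y") auto
  have Y: "Y \<in> d_ele D" using okD(2)[OF o y] a unfolding conf_at_def by auto
  have "Z \<in> subs (d_rg D Y)" using cs step.prems by auto
  then have "(Y, Z) \<in> sub_rel D" using Y sub_rel_I by metis
  moreover have "le_D D X Y" using step.IH a by auto
  ultimately show ?case unfolding le_D_def by auto
qed

section \<open>Insertion\<close>

locale ins_ctx =
  fixes t s :: "'l xtree" and q :: nat
  assumes tt: "is_tree t" and ts: "is_tree s" and q: "q \<in> tnodes t"
    and disj: "tnodes s \<inter> tnodes t = {}"
begin

abbreviation "t' \<equiv> ins_tree t q s"

lemma simps: "tnodes t' = tnodes t \<union> tnodes s" "troot t' = troot t"
  "tedges t' = tedges t \<union> tedges s \<union> {(q, troot s)}"
  "x \<in> tnodes s \<Longrightarrow> tlab t' x = tlab s x" "x \<notin> tnodes s \<Longrightarrow> tlab t' x = tlab t x"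
  "x \<in> tnodes s \<Longrightarrow> tval t' x = tval s x" "x \<notin> tnodes s \<Longrightarrow> tval t' x = tval t x"
  unfolding ins_tree_def by auto

lemma lab_t: "x \<in> tnodes t \<Longrightarrow> tlab t' x = tlab t x" using disj simps(5) by blast
lemma val_t: "x \<in> tnodes t \<Longrightarrow> tval t' x = tval t x" using disj simps(7) by blast

lemma rs: "troot s \<in> tnodes s" "troot s \<notin> tnodes t" using is_treeD(2)[OF ts] disj by auto

lemma children_t: "x \<in> tnodes t \<Longrightarrow> children t' x = children t x \<union> (if x = q then {troot s} else {})"
  unfolding children_def simps using edge_nodes[OF ts] disj by auto

lemma children_s: "x \<in> tnodes s \<Longrightarrow> children t' x = children s x"
  unfolding children_def simps using edge_nodes[OF tt] disj q by auto

lemma np: "(p, troot t') \<notin> tedges t'"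
proof
  assume a: "(p, troot t') \<in> tedges t'"
  have rt: "troot t \<in> tnodes t" using is_treeD(2)[OF tt] .
  then have "troot t \<notin> tnodes s" using disj by auto
  then have "(p, troot t) \<notin> tedges s" by (meson edge_nodes ts)
  moreover have "(p, troot t) \<notin> tedges t" using is_treeD(4)[OF tt] .
  moreover have "troot s \<noteq> troot t" using rs rt by auto
  ultimately show False using a simps(2,3) by auto
qed

lemma up: "m \<in> tnodes t' \<Longrightarrow> m \<noteq> troot t' \<Longrightarrow> \<exists>!p. (p, m) \<in> tedges t'"
proof -
  assume n: "m \<in> tnodes t'" "m \<noteq> troot t'"
  have mr: "m \<noteq> troot t" using n(2) simps(2) by simp
  show "\<exists>!p. (p, m) \<in> tedges t'"
  proof (cases "m \<in> tnodes t")
    case True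
    obtain p where p: "(p, m) \<in> tedges t" using is_treeD(5)[OF tt True mr] by blast
    have ms: "m \<notin> tnodes s" "m \<noteq> troot s" using True disj rs by auto
    have u: "\<And>p'. (p', m) \<in> tedges t' \<Longrightarrow> p' = p"
    proof -
      fix p' assume a: "(p', m) \<in> tedges t'"
      have "(p', m) \<notin> tedges s" using ms by (meson edge_nodes ts)
      then have "(p', m) \<in> tedges t" using a ms simps(3) by auto
      then show "p' = p" using uniq_parent[OF tt] p by blast
    qed
    have "(p, m) \<in> tedges t'" using p simps(3) by simp
    then show ?thesis using u by blast
  next
    case False
    then have ns: "m \<in> tnodes s" using n(1) simps(1) by simp
    show ?thesis
    proof (cases "m = troot s")
      case True
      have u: "\<And>p'. (p', m) \<in> tedges t' \<Longrightarrow> p' = q"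
      proof -
        fix p' assume "(p', m) \<in> tedges t'"
        moreover have "(p', m) \<notin> tedges s" using True is_treeD(4)[OF ts] by blast
        moreover have "(p', m) \<notin> tedges t" using False by (meson edge_nodes tt)
        ultimately show "p' = q" using simps(3) by auto
      qed
      have "(q, m) \<in> tedges t'" using True simps(3) by simp
      then show ?thesis using u by blast
    next
      case nr: False
      obtain p where p: "(p, m) \<in> tedges s" using is_treeD(5)[OF ts ns nr] by blast
      have u: "\<And>p'. (p', m) \<in> tedges t' \<Longrightarrow> p' = p"
      proof -
        fix p' assume a: "(p', m) \<in> tedges t'"
        have "(p', m) \<notin> tedges t" using False by (meson edge_nodes tt)
        then have "(p', m) \<in> tedges s" using a nr simps(3) by auto
        then show "p' = p" using uniq_parent[OF ts] p by blast
      qed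
      have "(p, m) \<in> tedges t'" using p simps(3) by simp
      then show ?thesis using u by blast
    qed
  qed
qed

lemma reach: "m \<in> tnodes t' \<Longrightarrow> (troot t', m) \<in> (tedges t')\<^sup>*"
proof -
  assume n: "m \<in> tnodes t'"
  have mono: "(tedges t)\<^sup>* \<subseteq> (tedges t')\<^sup>*" "(tedges s)\<^sup>* \<subseteq> (tedges t')\<^sup>*"
    by (auto intro!: rtrancl_mono simp: simps)
  show "(troot t', m) \<in> (tedges t')\<^sup>*"
  proof (cases "m \<in> tnodes t")
    case True then show ?thesis using is_treeD(6)[OF tt] mono simps by auto
  next
    case False
    then have ns: "m \<in> tnodes s" using n simps by auto
    have 1: "(troot t, q) \<in> (tedges t')\<^sup>*" using is_treeD(6)[OF tt q] mono by auto
    have 2: "(q, troot s) \<in> (tedges t')\<^sup>*" using simps by auto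
    have 3: "(troot s, m) \<in> (tedges t')\<^sup>*" using is_treeD(6)[OF ts ns] mono by auto
    show ?thesis using 1 2 3 simps(2) by (metis rtrancl_trans)
  qed
qed

lemma is_tree: "is_tree t'"
proof -
  have f: "finite (tnodes t')" using is_treeD(1)[OF tt] is_treeD(1)[OF ts] simps by auto
  have r: "troot t' \<in> tnodes t'" using is_treeD(2)[OF tt] simps by auto
  have e: "tedges t' \<subseteq> tnodes t' \<times> tnodes t'" using is_treeD(3)[OF tt] is_treeD(3)[OF ts] q rs simps by auto
  show ?thesis unfolding is_tree_def
    using f r e np up reach by simp
qed

lemma child_labels_t: "x \<in> tnodes t \<Longrightarrow>
  child_labels t' x = child_labels t x + (if x = q then {#tlab s (troot s)#} else {#})"
proof -
  assume x: "x \<in> tnodes t"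
  have cs: "children t x \<subseteq> tnodes t" using children_sub[OF tt] .
  have fc: "finite (children t x)" using finite_children[OF tt] .
  have lab: "\<And>c. c \<in> children t x \<Longrightarrow> tlab t' c = tlab t c" using cs lab_t by auto
  have "image_mset (tlab t') (mset_set (children t x)) = image_mset (tlab t) (mset_set (children t x))"
    using lab by (intro image_mset_cong) (simp add: fc)
  moreover have "troot s \<notin> children t x" using cs rs by auto
  ultimately show ?thesis unfolding child_labels_def children_t[OF x] using fc simps rs
    by (auto simp: mset_set.insert_remove)
qed

lemma child_labels_s: "x \<in> tnodes s \<Longrightarrow> child_labels t' x = child_labels s x"
proof -
  assume x: "x \<in> tnodes s"
  have cs: "children s x \<subseteq> tnodes s" using children_sub[OF ts] .
  have fc: "finite (children s x)" using finite_children[OF ts] .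
  have lab: "\<And>c. c \<in> children s x \<Longrightarrow> tlab t' c = tlab s c" using cs simps by auto
  show ?thesis unfolding child_labels_def children_s[OF x]
    using lab by (intro image_mset_cong) (simp add: fc)
qed

lemma conf_t: "x \<in> tnodes t \<Longrightarrow> x \<noteq> q \<Longrightarrow> conf_at D t' x = conf_at D t x"
  unfolding conf_at_def by (simp add: child_labels_t children_t lab_t)

lemma conf_s: "x \<in> tnodes s \<Longrightarrow> conf_at D t' x = conf_at D s x"
  unfolding conf_at_def using child_labels_s children_s simps by auto

end


section \<open>Deletion\<close>

locale del_ctx =
  fixes t :: "'l xtree" and n :: nat
  assumes tt: "is_tree t" and n: "n \<in> tnodes t" and nr: "n \<noteq> troot t"
begin

definition "De = {m. (n, m) \<in> (tedges t)\<^sup>*}"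
definition "K = tnodes t - De"

abbreviation "t' \<equiv> del_tree t n"

lemma simps: "tnodes t' = K" "tedges t' = tedges t \<inter> (K \<times> K)" "troot t' = troot t"
  "tlab t' = tlab t" "tval t' = tval t"
  unfolding del_tree_def K_def De_def Let_def by auto

lemma K_sub: "K \<subseteq> tnodes t" unfolding K_def by auto

lemma root_K: "troot t \<in> K"
proof -
  have "(n, troot t) \<notin> (tedges t)\<^sup>*"
  proof
    assume "(n, troot t) \<in> (tedges t)\<^sup>*"
    then have "(n, troot t) \<in> (tedges t)\<^sup>+" using nr by (simp add: rtrancl_eq_or_trancl)
    then obtain y where "(y, troot t) \<in> tedges t" by (meson tranclE)
    then show False using is_treeD(4)[OF tt] by blast
  qed
  then show ?thesis using is_treeD(2)[OF tt] unfolding K_def De_def by auto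
qed

lemma De_step: "(x, c) \<in> tedges t \<Longrightarrow> x \<in> De \<Longrightarrow> c \<in> De"
  unfolding De_def by (auto intro: rtrancl_into_rtrancl)

lemma child_De: "x \<in> K \<Longrightarrow> (x, c) \<in> tedges t \<Longrightarrow> c \<in> De \<Longrightarrow> c = n"
proof -
  assume x: "x \<in> K" and e: "(x, c) \<in> tedges t" and c: "c \<in> De"
  show "c = n"
  proof (rule ccontr)
    assume "c \<noteq> n"
    then have "(n, c) \<in> (tedges t)\<^sup>+" using c unfolding De_def by (simp add: rtrancl_eq_or_trancl)
    then obtain y where y: "(n, y) \<in> (tedges t)\<^sup>*" "(y, c) \<in> tedges t" using tranclD2 by metis
    then have "y = x" using uniq_parent[OF tt e] by metis
    then show False using y x unfolding K_def De_def by auto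
  qed
qed

lemma children_K: "x \<in> K \<Longrightarrow> children t' x = children t x - {n}"
proof -
  assume x: "x \<in> K"
  have "\<And>c. (x, c) \<in> tedges t \<Longrightarrow> c \<noteq> n \<Longrightarrow> c \<in> K"
    using child_De[OF x] edge_nodes[OF tt] unfolding K_def by blast
  moreover have "n \<notin> K" unfolding K_def De_def by auto
  ultimately show ?thesis unfolding children_def simps using x by auto
qed

lemma is_tree: "is_tree t'"
proof -
  have f: "finite (tnodes t')" using is_treeD(1)[OF tt] K_sub finite_subset unfolding simps(1) by blast
  have r: "troot t' \<in> tnodes t'" using root_K unfolding simps by simp
  have e: "tedges t' \<subseteq> tnodes t' \<times> tnodes t'" unfolding simps by simp
  have np: "\<forall>p. (p, troot t') \<notin> tedges t'" using is_treeD(4)[OF tt] unfolding simps by simp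
  have up: "\<forall>m \<in> tnodes t'. m \<noteq> troot t' \<longrightarrow> (\<exists>!p. (p, m) \<in> tedges t')"
  proof (intro ballI impI)
    fix m assume m: "m \<in> tnodes t'" "m \<noteq> troot t'"
    then have mK: "m \<in> K" and mr: "m \<noteq> troot t" unfolding simps by simp_all
    have mt: "m \<in> tnodes t" using mK K_sub by blast
    obtain p where p: "(p, m) \<in> tedges t" using is_treeD(5)[OF tt mt mr] by blast
    have "p \<in> K"
    proof -
      have "p \<in> tnodes t" using edge_nodes[OF tt p] by simp
      moreover have "p \<notin> De" using De_step[OF p] mK unfolding K_def by blast
      ultimately show ?thesis unfolding K_def by simp
    qed
    then have pe: "(p, m) \<in> tedges t'" using p mK unfolding simps by simp
    have u: "\<And>p'. (p', m) \<in> tedges t' \<Longrightarrow> p' = p"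
    proof -
      fix p' assume "(p', m) \<in> tedges t'"
      then have "(p', m) \<in> tedges t" unfolding simps by simp
      then show "p' = p" using uniq_parent[OF tt _ p] by blast
    qed
    show "\<exists>!p. (p, m) \<in> tedges t'" using pe u by blast
  qed
  have reach: "\<forall>m \<in> tnodes t'. (troot t', m) \<in> (tedges t')\<^sup>*"
  proof
    fix m assume "m \<in> tnodes t'"
    then have mK: "m \<in> K" unfolding simps by simp
    have "(troot t, m) \<in> (tedges t)\<^sup>*" using is_treeD(6)[OF tt] mK K_sub by blast
    then have "m \<in> K \<longrightarrow> (troot t, m) \<in> (tedges t \<inter> K \<times> K)\<^sup>*"
    proof (induction rule: rtrancl_induct)
      case base then show ?case by simp
    next
      case (step y z)
      show ?case
      proof
        assume z: "z \<in> K"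
        have "y \<in> K"
        proof -
          have "y \<in> tnodes t" using edge_nodes[OF tt step.hyps(2)] by simp
          moreover have "y \<notin> De" using De_step[OF step.hyps(2)] z unfolding K_def by blast
          ultimately show ?thesis unfolding K_def by simp
        qed
        then have "(y, z) \<in> tedges t \<inter> K \<times> K" using step.hyps(2) z by simp
        moreover have "(troot t, y) \<in> (tedges t \<inter> K \<times> K)\<^sup>*" using step.IH \<open>y \<in> K\<close> by simp
        ultimately show "(troot t, z) \<in> (tedges t \<inter> K \<times> K)\<^sup>*" by (rule rtrancl_into_rtrancl[rotated])
      qed
    qed
    then show "(troot t', m) \<in> (tedges t')\<^sup>*" using mK unfolding simps by simp
  qed
  show ?thesis unfolding is_tree_def using f r e np up reach by blast
qed

lemma child_labels_K: "x \<in> K \<Longrightarrow>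
  child_labels t' x = child_labels t x - (if (x, n) \<in> tedges t then {#tlab t n#} else {#})"
proof -
  assume x: "x \<in> K"
  have fc: "finite (children t x)" using finite_children[OF tt] .
  show ?thesis
  proof (cases "(x, n) \<in> tedges t")
    case True
    then have "n \<in> children t x" unfolding children_def by auto
    then show ?thesis unfolding child_labels_def children_K[OF x] simps using True fc
      by (simp add: mset_set_Diff image_mset_Diff)
  next
    case False
    then have "children t x - {n} = children t x" unfolding children_def by auto
    then show ?thesis unfolding child_labels_def children_K[OF x] simps using False by simp
  qed
qed

lemma conf_K: "x \<in> K \<Longrightarrow> (x, n) \<notin> tedges t \<Longrightarrow> conf_at D t' x = conf_at D t x"
  unfolding conf_at_def using child_labels_K children_K simps by (auto simp: children_def)

lemma n_notK: "n \<notin> K" unfolding K_def De_def by auto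


end

datatype 'l mode = MFree | MIns | MDel | MStrF | MDisj 'l | MBij

definition mode :: "'l dtd \<Rightarrow> 'l uat set \<Rightarrow> 'l lab \<Rightarrow> 'l mode" where
  "mode D AA L = (case L of Str \<Rightarrow> MBij | Elem A \<Rightarrow> (case d_rg D A of
      RStar B \<Rightarrow> (if UIns A B \<in> AA \<and> UDel A B \<in> AA then MFree else if UIns A B \<in> AA then MIns
                  else if UDel A B \<in> AA then MDel else MBij)
    | RStr \<Rightarrow> (if URepStr A \<in> AA then MStrF else MBij)
    | RDisj Bs \<Rightarrow> MDisj A
    | _ \<Rightarrow> MBij))"

inductive Rl :: "'l dtd \<Rightarrow> 'l uat set \<Rightarrow> 'l xtree \<Rightarrow> nat \<Rightarrow> 'l xtree \<Rightarrow> nat \<Rightarrow> bool"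
  for D :: "'l dtd" and AA :: "'l uat set" where
  RlI: "tlab t1 n1 = tlab t2 n2 \<Longrightarrow> (tlab t1 n1 = Str \<longrightarrow> tval t1 n1 = tval t2 n2) \<Longrightarrow>
   (mode D AA (tlab t1 n1) = MIns \<longrightarrow> (\<exists>f. inj_on f (children t1 n1) \<and> f ` children t1 n1 \<subseteq> children t2 n2
       \<and> (\<forall>c\<in>children t1 n1. Rl D AA t1 c t2 (f c)))) \<Longrightarrow>
   (mode D AA (tlab t1 n1) = MDel \<longrightarrow> (\<exists>g. inj_on g (children t2 n2) \<and> g ` children t2 n2 \<subseteq> children t1 n1
       \<and> (\<forall>c\<in>children t2 n2. Rl D AA t1 (g c) t2 c))) \<Longrightarrow>
   (mode D AA (tlab t1 n1) = MStrF \<longrightarrow> (\<exists>f. bij_betw f (children t1 n1) (children t2 n2)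
       \<and> (\<forall>c\<in>children t1 n1. tlab t2 (f c) = tlab t1 c))) \<Longrightarrow>
   (\<forall>A. mode D AA (tlab t1 n1) = MDisj A \<longrightarrow> (\<exists>f. bij_betw f (children t1 n1) (children t2 n2)
       \<and> (\<forall>c\<in>children t1 n1. Rl D AA t1 c t2 (f c) \<or> (\<exists>X Y. tlab t1 c = Elem X \<and> tlab t2 (f c) = Elem Y
            \<and> (X, Y) \<in> (replace_graph D AA A)\<^sup>+)))) \<Longrightarrow>
   (mode D AA (tlab t1 n1) = MBij \<longrightarrow> (\<exists>f. bij_betw f (children t1 n1) (children t2 n2)
       \<and> (\<forall>c\<in>children t1 n1. Rl D AA t1 c t2 (f c)))) \<Longrightarrow>
   Rl D AA t1 n1 t2 n2"

definition cc :: "'l dtd \<Rightarrow> 'l uat set \<Rightarrow> 'l xtree \<Rightarrow> nat \<Rightarrow> 'l xtree \<Rightarrow> nat \<Rightarrow> bool" where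
  "cc D AA t1 n1 t2 n2 \<longleftrightarrow>
   (mode D AA (tlab t1 n1) = MIns \<longrightarrow> (\<exists>f. inj_on f (children t1 n1) \<and> f ` children t1 n1 \<subseteq> children t2 n2
       \<and> (\<forall>c\<in>children t1 n1. Rl D AA t1 c t2 (f c)))) \<and>
   (mode D AA (tlab t1 n1) = MDel \<longrightarrow> (\<exists>g. inj_on g (children t2 n2) \<and> g ` children t2 n2 \<subseteq> children t1 n1
       \<and> (\<forall>c\<in>children t2 n2. Rl D AA t1 (g c) t2 c))) \<and>
   (mode D AA (tlab t1 n1) = MStrF \<longrightarrow> (\<exists>f. bij_betw f (children t1 n1) (children t2 n2)
       \<and> (\<forall>c\<in>children t1 n1. tlab t2 (f c) = tlab t1 c))) \<and>
   (\<forall>A. mode D AA (tlab t1 n1) = MDisj A \<longrightarrow> (\<exists>f. bij_betw f (children t1 n1) (children t2 n2)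
       \<and> (\<forall>c\<in>children t1 n1. Rl D AA t1 c t2 (f c) \<or> (\<exists>X Y. tlab t1 c = Elem X \<and> tlab t2 (f c) = Elem Y
            \<and> (X, Y) \<in> (replace_graph D AA A)\<^sup>+)))) \<and>
   (mode D AA (tlab t1 n1) = MBij \<longrightarrow> (\<exists>f. bij_betw f (children t1 n1) (children t2 n2)
       \<and> (\<forall>c\<in>children t1 n1. Rl D AA t1 c t2 (f c))))"

lemma Rl_iff: "Rl D AA t1 n1 t2 n2 \<longleftrightarrow> tlab t1 n1 = tlab t2 n2 \<and> (tlab t1 n1 = Str \<longrightarrow> tval t1 n1 = tval t2 n2)
   \<and> cc D AA t1 n1 t2 n2"
proof
  assume r: "Rl D AA t1 n1 t2 n2"
  show "tlab t1 n1 = tlab t2 n2 \<and> (tlab t1 n1 = Str \<longrightarrow> tval t1 n1 = tval t2 n2) \<and> cc D AA t1 n1 t2 n2"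
    using r unfolding cc_def by (cases rule: Rl.cases) (intro conjI; assumption)
next
  assume "tlab t1 n1 = tlab t2 n2 \<and> (tlab t1 n1 = Str \<longrightarrow> tval t1 n1 = tval t2 n2) \<and> cc D AA t1 n1 t2 n2"
  then show "Rl D AA t1 n1 t2 n2" unfolding cc_def by (elim conjE) (rule Rl.RlI; assumption)
qed

lemma Rl_lab: "Rl D AA t1 n1 t2 n2 \<Longrightarrow> tlab t1 n1 = tlab t2 n2"
  using Rl_iff by blast

lemma cc_bij:
  assumes "bij_betw f (children t1 n1) (children t2 n2)" "\<forall>c\<in>children t1 n1. Rl D AA t1 c t2 (f c)"
  shows "cc D AA t1 n1 t2 n2"
proof -
  let ?g = "inv_into (children t1 n1) f"
  have gb: "bij_betw ?g (children t2 n2) (children t1 n1)" using assms(1) bij_betw_inv_into by blast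
  have "\<forall>c\<in>children t2 n2. Rl D AA t1 (?g c) t2 c"
  proof
    fix c assume c: "c \<in> children t2 n2"
    then have "?g c \<in> children t1 n1" using gb bij_betwE by blast
    moreover have "f (?g c) = c" using c assms(1) bij_betw_inv_into_right by fastforce
    ultimately show "Rl D AA t1 (?g c) t2 c" using assms(2) by metis
  qed
  moreover have "\<forall>c\<in>children t1 n1. tlab t2 (f c) = tlab t1 c" using assms(2) Rl_lab by metis
  ultimately show ?thesis unfolding cc_def using assms gb
    by (auto simp: bij_betw_def) blast+
qed

lemma ccD:
  assumes "cc D AA t1 n1 t2 n2"
  shows "mode D AA (tlab t1 n1) = MIns \<Longrightarrow> \<exists>f. inj_on f (children t1 n1) \<and> f ` children t1 n1 \<subseteq> children t2 n2
       \<and> (\<forall>c\<in>children t1 n1. Rl D AA t1 c t2 (f c))"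
   "mode D AA (tlab t1 n1) = MDel \<Longrightarrow> \<exists>g. inj_on g (children t2 n2) \<and> g ` children t2 n2 \<subseteq> children t1 n1
       \<and> (\<forall>c\<in>children t2 n2. Rl D AA t1 (g c) t2 c)"
   "mode D AA (tlab t1 n1) = MStrF \<Longrightarrow> \<exists>f. bij_betw f (children t1 n1) (children t2 n2)
       \<and> (\<forall>c\<in>children t1 n1. tlab t2 (f c) = tlab t1 c)"
   "mode D AA (tlab t1 n1) = MDisj A \<Longrightarrow> \<exists>f. bij_betw f (children t1 n1) (children t2 n2)
       \<and> (\<forall>c\<in>children t1 n1. Rl D AA t1 c t2 (f c) \<or> (\<exists>X Y. tlab t1 c = Elem X \<and> tlab t2 (f c) = Elem Y
            \<and> (X, Y) \<in> (replace_graph D AA A)\<^sup>+))"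
   "mode D AA (tlab t1 n1) = MBij \<Longrightarrow> \<exists>f. bij_betw f (children t1 n1) (children t2 n2)
       \<and> (\<forall>c\<in>children t1 n1. Rl D AA t1 c t2 (f c))"
  using assms unfolding cc_def by blast+

lemma Rl_trans:
  assumes "Rl D AA t1 a t2 b"
  shows "Rl D AA t2 b t3 c \<Longrightarrow> Rl D AA t1 a t3 c"
  using assms
proof (induction arbitrary: t3 c rule: Rl.induct)
  case (RlI t1 n1 t2 n2 t3 n3)
  have l12: "tlab t1 n1 = tlab t2 n2" using RlI.hyps(1) .
  have l23: "tlab t2 n2 = tlab t3 n3" and v23: "tlab t2 n2 = Str \<longrightarrow> tval t2 n2 = tval t3 n3"
    and c23: "cc D AA t2 n2 t3 n3" using RlI.prems unfolding Rl_iff by blast+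
  let ?M = "mode D AA (tlab t1 n1)"
  have M2: "mode D AA (tlab t2 n2) = ?M" using l12 by simp
  show ?case
  proof (rule Rl.RlI)
    show "tlab t1 n1 = tlab t3 n3" using l12 l23 by simp
    show "tlab t1 n1 = Str \<longrightarrow> tval t1 n1 = tval t3 n3" using RlI.hyps(2) v23 l12 by auto
    show "?M = MIns \<longrightarrow> (\<exists>f. inj_on f (children t1 n1) \<and> f ` children t1 n1 \<subseteq> children t3 n3
       \<and> (\<forall>c\<in>children t1 n1. Rl D AA t1 c t3 (f c)))"
    proof
      assume M: "?M = MIns"
      obtain f1 where f1: "inj_on f1 (children t1 n1)" "f1 ` children t1 n1 \<subseteq> children t2 n2"
        "\<forall>c\<in>children t1 n1. Rl D AA t1 c t2 (f1 c) \<and> (\<forall>t3 c'. Rl D AA t2 (f1 c) t3 c' \<longrightarrow> Rl D AA t1 c t3 c')"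
        using RlI.IH(1) M by blast
      obtain f2 where f2: "inj_on f2 (children t2 n2)" "f2 ` children t2 n2 \<subseteq> children t3 n3"
        "\<forall>c\<in>children t2 n2. Rl D AA t2 c t3 (f2 c)" using ccD[OF c23] M M2 by simp blast
      have "inj_on (f2 \<circ> f1) (children t1 n1)" using f1 f2 by (meson comp_inj_on inj_on_subset)
      moreover have "(f2 \<circ> f1) ` children t1 n1 \<subseteq> children t3 n3" using f1(2) f2(2) by (fastforce simp: image_subset_iff)
      moreover have "\<forall>c\<in>children t1 n1. Rl D AA t1 c t3 ((f2 \<circ> f1) c)" using f1(2,3) f2(3) by (fastforce simp: image_subset_iff)
      ultimately show "\<exists>f. inj_on f (children t1 n1) \<and> f ` children t1 n1 \<subseteq> children t3 n3
       \<and> (\<forall>c\<in>children t1 n1. Rl D AA t1 c t3 (f c))" by blast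
    qed
    show "?M = MDel \<longrightarrow> (\<exists>g. inj_on g (children t3 n3) \<and> g ` children t3 n3 \<subseteq> children t1 n1
       \<and> (\<forall>c\<in>children t3 n3. Rl D AA t1 (g c) t3 c))"
    proof
      assume M: "?M = MDel"
      obtain g1 where g1: "inj_on g1 (children t2 n2)" "g1 ` children t2 n2 \<subseteq> children t1 n1"
        "\<forall>c\<in>children t2 n2. Rl D AA t1 (g1 c) t2 c \<and> (\<forall>t3 c'. Rl D AA t2 c t3 c' \<longrightarrow> Rl D AA t1 (g1 c) t3 c')"
        using RlI.IH(2) M by blast
      obtain g2 where g2: "inj_on g2 (children t3 n3)" "g2 ` children t3 n3 \<subseteq> children t2 n2"
        "\<forall>c\<in>children t3 n3. Rl D AA t2 (g2 c) t3 c" using ccD[OF c23] M M2 by simp blast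
      have "inj_on (g1 \<circ> g2) (children t3 n3)" using g1 g2 by (meson comp_inj_on inj_on_subset)
      moreover have "(g1 \<circ> g2) ` children t3 n3 \<subseteq> children t1 n1" using g1(2) g2(2) by (fastforce simp: image_subset_iff)
      moreover have "\<forall>c\<in>children t3 n3. Rl D AA t1 ((g1 \<circ> g2) c) t3 c" using g1(3) g2(2,3) by (fastforce simp: image_subset_iff)
      ultimately show "\<exists>g. inj_on g (children t3 n3) \<and> g ` children t3 n3 \<subseteq> children t1 n1
       \<and> (\<forall>c\<in>children t3 n3. Rl D AA t1 (g c) t3 c)" by blast
    qed
    show "?M = MStrF \<longrightarrow> (\<exists>f. bij_betw f (children t1 n1) (children t3 n3)
       \<and> (\<forall>c\<in>children t1 n1. tlab t3 (f c) = tlab t1 c))"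
    proof
      assume M: "?M = MStrF"
      obtain f1 where f1: "bij_betw f1 (children t1 n1) (children t2 n2)"
        "\<forall>c\<in>children t1 n1. tlab t2 (f1 c) = tlab t1 c" using RlI.hyps(3) M by blast
      obtain f2 where f2: "bij_betw f2 (children t2 n2) (children t3 n3)"
        "\<forall>c\<in>children t2 n2. tlab t3 (f2 c) = tlab t2 c" using ccD[OF c23] M M2 by simp blast
      have "bij_betw (f2 \<circ> f1) (children t1 n1) (children t3 n3)" using f1 f2 bij_betw_trans by blast
      moreover have "\<forall>c\<in>children t1 n1. tlab t3 ((f2 \<circ> f1) c) = tlab t1 c"
        using f1 f2 bij_betwE by fastforce
      ultimately show "\<exists>f. bij_betw f (children t1 n1) (children t3 n3)
       \<and> (\<forall>c\<in>children t1 n1. tlab t3 (f c) = tlab t1 c)" by blast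
    qed
    show "\<forall>A. ?M = MDisj A \<longrightarrow> (\<exists>f. bij_betw f (children t1 n1) (children t3 n3)
       \<and> (\<forall>c\<in>children t1 n1. Rl D AA t1 c t3 (f c) \<or> (\<exists>X Y. tlab t1 c = Elem X \<and> tlab t3 (f c) = Elem Y
            \<and> (X, Y) \<in> (replace_graph D AA A)\<^sup>+)))"
    proof (intro allI impI)
      fix A assume M: "?M = MDisj A"
      let ?G = "(replace_graph D AA A)\<^sup>+"
      obtain f1 where f1: "bij_betw f1 (children t1 n1) (children t2 n2)"
        "\<forall>c\<in>children t1 n1. (Rl D AA t1 c t2 (f1 c) \<and> (\<forall>t3 c'. Rl D AA t2 (f1 c) t3 c' \<longrightarrow> Rl D AA t1 c t3 c'))
           \<or> (\<exists>X Y. tlab t1 c = Elem X \<and> tlab t2 (f1 c) = Elem Y \<and> (X, Y) \<in> ?G)"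
        using RlI.IH(3) M by blast
      obtain f2 where f2: "bij_betw f2 (children t2 n2) (children t3 n3)"
        "\<forall>c\<in>children t2 n2. Rl D AA t2 c t3 (f2 c) \<or> (\<exists>X Y. tlab t2 c = Elem X \<and> tlab t3 (f2 c) = Elem Y \<and> (X, Y) \<in> ?G)"
        using ccD[OF c23] M M2 by simp blast
      have "bij_betw (f2 \<circ> f1) (children t1 n1) (children t3 n3)" using f1 f2 bij_betw_trans by blast
      moreover have "\<forall>c\<in>children t1 n1. Rl D AA t1 c t3 ((f2 \<circ> f1) c) \<or> (\<exists>X Y. tlab t1 c = Elem X \<and> tlab t3 ((f2 \<circ> f1) c) = Elem Y
            \<and> (X, Y) \<in> ?G)"
      proof
        fix c assume c: "c \<in> children t1 n1"
        then have d: "f1 c \<in> children t2 n2" using f1 bij_betwE by blast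
        from f1(2) c have A1: "(Rl D AA t1 c t2 (f1 c) \<and> (\<forall>t3 c'. Rl D AA t2 (f1 c) t3 c' \<longrightarrow> Rl D AA t1 c t3 c'))
           \<or> (\<exists>X Y. tlab t1 c = Elem X \<and> tlab t2 (f1 c) = Elem Y \<and> (X, Y) \<in> ?G)" by blast
        from f2(2) d have A2: "Rl D AA t2 (f1 c) t3 (f2 (f1 c)) \<or> (\<exists>X Y. tlab t2 (f1 c) = Elem X \<and> tlab t3 (f2 (f1 c)) = Elem Y \<and> (X, Y) \<in> ?G)" by blast
        show "Rl D AA t1 c t3 ((f2 \<circ> f1) c) \<or> (\<exists>X Y. tlab t1 c = Elem X \<and> tlab t3 ((f2 \<circ> f1) c) = Elem Y
            \<and> (X, Y) \<in> ?G)"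
          using A1 A2 Rl_lab trancl_trans by fastforce
      qed
      ultimately show "\<exists>f. bij_betw f (children t1 n1) (children t3 n3)
       \<and> (\<forall>c\<in>children t1 n1. Rl D AA t1 c t3 (f c) \<or> (\<exists>X Y. tlab t1 c = Elem X \<and> tlab t3 (f c) = Elem Y
            \<and> (X, Y) \<in> ?G))" by blast
    qed
    show "?M = MBij \<longrightarrow> (\<exists>f. bij_betw f (children t1 n1) (children t3 n3)
       \<and> (\<forall>c\<in>children t1 n1. Rl D AA t1 c t3 (f c)))"
    proof
      assume M: "?M = MBij"
      obtain f1 where f1: "bij_betw f1 (children t1 n1) (children t2 n2)"
        "\<forall>c\<in>children t1 n1. Rl D AA t1 c t2 (f1 c) \<and> (\<forall>t3 c'. Rl D AA t2 (f1 c) t3 c' \<longrightarrow> Rl D AA t1 c t3 c')"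
        using RlI.IH(4) M by blast
      obtain f2 where f2: "bij_betw f2 (children t2 n2) (children t3 n3)"
        "\<forall>c\<in>children t2 n2. Rl D AA t2 c t3 (f2 c)" using ccD[OF c23] M M2 by simp blast
      have "bij_betw (f2 \<circ> f1) (children t1 n1) (children t3 n3)" using f1 f2 bij_betw_trans by blast
      moreover have "\<forall>c\<in>children t1 n1. Rl D AA t1 c t3 ((f2 \<circ> f1) c)" using f1 f2 bij_betwE by fastforce
      ultimately show "\<exists>f. bij_betw f (children t1 n1) (children t3 n3)
       \<and> (\<forall>c\<in>children t1 n1. Rl D AA t1 c t3 (f c))" by blast
    qed
  qed
qed

lemma sim_gen:
  assumes w: "wf_dtd D" and o: "ok D t1" and S: "S \<subseteq> tnodes t1"
    and lab: "\<And>x. x \<in> S \<Longrightarrow> tlab t2 (f x) = tlab t1 x"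
    and val: "\<And>x. x \<in> S \<Longrightarrow> tlab t1 x = Str \<Longrightarrow> tval t2 (f x) = tval t1 x"
    and reg: "\<And>x. x \<in> S \<Longrightarrow> x \<notin> M \<Longrightarrow> children t1 x \<subseteq> S \<and> bij_betw f (children t1 x) (children t2 (f x))"
    and exc: "\<And>x. x \<in> S \<Longrightarrow> x \<in> M \<Longrightarrow> (\<forall>c\<in>children t1 x \<inter> S. Rl D AA t1 c t2 (f c)) \<Longrightarrow> cc D AA t1 x t2 (f x)"
  shows "x \<in> S \<Longrightarrow> Rl D AA t1 x t2 (f x)"
proof (induction "rk D (tlab t1 x)" arbitrary: x rule: less_induct)
  case less
  have IH: "\<forall>c\<in>children t1 x \<inter> S. Rl D AA t1 c t2 (f c)"
  proof
    fix c assume c: "c \<in> children t1 x \<inter> S"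
    then have "(x, c) \<in> tedges t1" unfolding children_def by auto
    then have "rk D (tlab t1 c) < rk D (tlab t1 x)" using edge_rk[OF w o] by blast
    then show "Rl D AA t1 c t2 (f c)" using less.hyps c by blast
  qed
  have "cc D AA t1 x t2 (f x)"
  proof (cases "x \<in> M")
    case True then show ?thesis using exc less.prems IH by blast
  next
    case False
    then have r: "children t1 x \<subseteq> S" "bij_betw f (children t1 x) (children t2 (f x))" using reg less.prems by auto
    show ?thesis using cc_bij[OF r(2)] IH r(1) by blast
  qed
  then show ?case unfolding Rl_iff using lab val less.prems by metis
qed

lemma Rl_refl:
  assumes w: "wf_dtd D" and o: "ok D t" and x: "x \<in> tnodes t"
  shows "Rl D AA t x t x"
  using sim_gen[OF w o order_refl, of t id "{}"] children_sub[OF okD(1)[OF o]] x by auto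

lemma iso_children:
  assumes t1: "is_tree t1" and t2: "is_tree t2" and b: "bij_betw f (tnodes t1) (tnodes t2)"
    and e: "\<forall>x \<in> tnodes t1. \<forall>y \<in> tnodes t1. (x, y) \<in> tedges t1 \<longleftrightarrow> (f x, f y) \<in> tedges t2"
    and x: "x \<in> tnodes t1"
  shows "bij_betw f (children t1 x) (children t2 (f x))"
proof -
  have "children t2 (f x) = f ` children t1 x"
  proof
    show "children t2 (f x) \<subseteq> f ` children t1 x"
    proof
      fix d assume "d \<in> children t2 (f x)"
      then have de: "(f x, d) \<in> tedges t2" unfolding children_def by auto
      then have "d \<in> tnodes t2" using edge_nodes[OF t2] by blast
      then obtain c where c: "c \<in> tnodes t1" "d = f c" using b bij_betw_imp_surj_on by blast
      then have "(x, c) \<in> tedges t1" using e x de by blast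
      then show "d \<in> f ` children t1 x" using c unfolding children_def by auto
    qed
    show "f ` children t1 x \<subseteq> children t2 (f x)"
    proof
      fix d assume "d \<in> f ` children t1 x"
      then obtain c where c: "(x, c) \<in> tedges t1" "d = f c" unfolding children_def by auto
      then have "c \<in> tnodes t1" using edge_nodes[OF t1] by blast
      then show "d \<in> children t2 (f x)" using c e x unfolding children_def by auto
    qed
  qed
  moreover have "inj_on f (children t1 x)"
    using b children_sub[OF t1] bij_betw_imp_inj_on inj_on_subset by metis
  ultimately show ?thesis unfolding bij_betw_def by simp
qed

lemma iso_Rl:
  assumes w: "wf_dtd D" and o1: "ok D t1" and o2: "ok D t2" and i: "iso t1 t2"
  shows "Rl D AA t1 (troot t1) t2 (troot t2)"
proof -
  obtain f where f: "bij_betw f (tnodes t1) (tnodes t2)" "f (troot t1) = troot t2"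
     "\<forall>x \<in> tnodes t1. \<forall>y \<in> tnodes t1. (x, y) \<in> tedges t1 \<longleftrightarrow> (f x, f y) \<in> tedges t2"
     "\<forall>x \<in> tnodes t1. tlab t2 (f x) = tlab t1 x"
     "\<forall>x \<in> tnodes t1. tlab t1 x = Str \<longrightarrow> tval t2 (f x) = tval t1 x"
    using i unfolding iso_def by blast
  have t1: "is_tree t1" and t2: "is_tree t2" using o1 o2 okD by auto
  have "Rl D AA t1 (troot t1) t2 (f (troot t1))"
    using sim_gen[OF w o1 order_refl, of t2 f "{}"] f(4,5) iso_children[OF t1 t2 f(1) f(3)]
      children_sub[OF t1] is_treeD(2)[OF t1] by auto
  then show ?thesis using f(2) by simp
qed

lemma orbit_return:
  assumes fin: "finite S" and b: "bij_betw h S S" and y: "y \<in> S"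
  shows "\<exists>k>0. (h ^^ k) y = y"
proof -
  let ?g = "\<lambda>i. (h ^^ i) y"
  have into: "?g ` {0..card S} \<subseteq> S" using bij_betw_funpow[OF b] y bij_betwE by blast
  have "\<not> inj_on ?g {0..card S}"
  proof
    assume "inj_on ?g {0..card S}"
    then have "card {0..card S} \<le> card S" using card_inj_on_le[OF _ into fin] by blast
    then show False by simp
  qed
  then obtain i j where ij: "i \<in> {0..card S}" "j \<in> {0..card S}" "i \<noteq> j" "?g i = ?g j"
    unfolding inj_on_def by blast
  have key: "\<And>i j. i < j \<Longrightarrow> ?g i = ?g j \<Longrightarrow> \<exists>k>0. (h ^^ k) y = y"
  proof -
    fix i j :: nat assume lt: "i < j" and eq: "?g i = ?g j"
    have "(h ^^ i) ((h ^^ (j - i)) y) = (h ^^ j) y"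
      using lt by (metis add_diff_inverse_nat comp_apply funpow_add less_imp_not_less)
    then have "(h ^^ i) ((h ^^ (j - i)) y) = (h ^^ i) y" using eq by simp
    moreover have "(h ^^ (j - i)) y \<in> S" using bij_betw_funpow[OF b] y bij_betwE by blast
    moreover have "inj_on (h ^^ i) S" using bij_betw_funpow[OF b] bij_betw_imp_inj_on by blast
    ultimately have "(h ^^ (j - i)) y = y" using y inj_onD by metis
    then show "\<exists>k>0. (h ^^ k) y = y" using lt by (intro exI[of _ "j - i"]) simp
  qed
  show ?thesis
  proof (cases "i < j")
    case True then show ?thesis using key ij by blast
  next
    case False then have "j < i" using ij by simp
    then show ?thesis using key ij by metis
  qed
qed

lemma orbit:
  assumes fin: "finite S" and inj: "inj_on h S" and img: "h ` S \<subseteq> S" and y: "y \<in> S"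
    and Q: "\<And>c. c \<in> S \<Longrightarrow> Q c (h c)"
    and Q': "\<And>d. d \<in> S \<Longrightarrow> d \<noteq> y \<Longrightarrow> Q' d"
    and tr: "\<And>a b c. Q a b \<Longrightarrow> Q' b \<Longrightarrow> Q b c \<Longrightarrow> Q a c"
  shows "Q y y"
proof -
  have "h ` S = S" using endo_inj_surj[OF fin img inj] .
  then have b: "bij_betw h S S" using inj unfolding bij_betw_def by simp
  obtain k where k: "k > 0" "(h ^^ k) y = y" using orbit_return[OF fin b y] by blast
  have inS: "\<And>j. (h ^^ j) y \<in> S" using bij_betw_funpow[OF b] y bij_betwE by blast
  have "\<And>j. j \<ge> 1 \<Longrightarrow> Q y y \<or> Q y ((h ^^ j) y)"
  proof -
    fix j :: nat assume "j \<ge> 1"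
    then show "Q y y \<or> Q y ((h ^^ j) y)"
    proof (induction j rule: dec_induct)
      case base then show ?case using Q[OF y] by simp
    next
      case (step j)
      show ?case
      proof (cases "Q y y")
        case False
        then have q: "Q y ((h ^^ j) y)" using step.IH by simp
        show ?thesis
        proof (cases "(h ^^ j) y = y")
          case True then show ?thesis using q by simp
        next
          case ne: False
          have "Q ((h ^^ j) y) (h ((h ^^ j) y))" using Q inS by blast
          then have "Q y (h ((h ^^ j) y))" using tr[OF q Q'[OF inS ne]] by blast
          then show ?thesis by simp
        qed
      qed simp
    qed
  qed
  then show ?thesis using k by (metis One_nat_def Suc_leI)
qed

lemma step_sim:
  assumes w: "wf_dtd D" and o: "ok D t" and o0: "ok D t0" and r: "troot t0 = troot t"
    and m: "m \<in> tnodes t" and C: "C \<subseteq> children t m"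
    and lab: "\<And>z. z \<in> tnodes t \<Longrightarrow> z \<in> tnodes t0 \<Longrightarrow> tlab t0 z = tlab t z"
    and val: "\<And>z. z \<in> tnodes t \<Longrightarrow> z \<in> tnodes t0 \<Longrightarrow> z \<notin> C \<Longrightarrow> tval t0 z = tval t z"
    and ch: "\<And>z. z \<in> tnodes t \<Longrightarrow> z \<in> tnodes t0 \<Longrightarrow> z \<noteq> m \<Longrightarrow> children t0 z = children t z"
    and exc: "m \<in> tnodes t0 \<Longrightarrow> (\<forall>c\<in>children t m \<inter> (tnodes t \<inter> tnodes t0 - C). Rl D AA t c t0 c)
       \<Longrightarrow> cc D AA t m t0 m"
  shows "Rl D AA t (troot t) t0 (troot t)"
proof -
  have tr: "is_tree t" and tr0: "is_tree t0" using o o0 okD by auto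
  let ?S = "tnodes t \<inter> tnodes t0 - C"
  have Cpar: "\<And>z c. c \<in> C \<Longrightarrow> c \<in> children t z \<Longrightarrow> z = m"
    using C uniq_parent[OF tr] unfolding children_def by blast
  have rS: "troot t \<in> ?S"
  proof -
    have "troot t \<in> tnodes t" using is_treeD(2)[OF tr] .
    moreover have "troot t \<in> tnodes t0" using is_treeD(2)[OF tr0] r by simp
    moreover have "troot t \<notin> C" using C is_treeD(4)[OF tr] unfolding children_def by blast
    ultimately show ?thesis by simp
  qed
  have "Rl D AA t (troot t) t0 (id (troot t))"
  proof (rule sim_gen[of D t ?S t0 id "{m}" AA "troot t", OF w o _ _ _ _ _ rS])
    show "?S \<subseteq> tnodes t" by blast
    show "\<And>x. x \<in> ?S \<Longrightarrow> tlab t0 (id x) = tlab t x" using lab by simp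
    show "\<And>x. x \<in> ?S \<Longrightarrow> tlab t x = Str \<Longrightarrow> tval t0 (id x) = tval t x" using val by simp
    show "\<And>x. x \<in> ?S \<Longrightarrow> x \<notin> {m} \<Longrightarrow> children t x \<subseteq> ?S \<and> bij_betw id (children t x) (children t0 (id x))"
    proof -
      fix x assume x: "x \<in> ?S" "x \<notin> {m}"
      then have e: "children t0 x = children t x" using ch by simp
      have "children t x \<subseteq> tnodes t" using children_sub[OF tr] .
      moreover have "children t x \<subseteq> tnodes t0" using children_sub[OF tr0] e by blast
      moreover have "children t x \<inter> C = {}" using Cpar x by blast
      ultimately show "children t x \<subseteq> ?S \<and> bij_betw id (children t x) (children t0 (id x))"
        using e by auto
    qed
    show "\<And>x. x \<in> ?S \<Longrightarrow> x \<in> {m} \<Longrightarrow> (\<forall>c\<in>children t x \<inter> ?S. Rl D AA t c t0 (id c)) \<Longrightarrow> cc D AA t x t0 (id x)"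
      using exc by simp
  qed
  then show ?thesis by simp
qed

lemma children_disj:
  assumes tr: "is_tree t" and cf: "conf_at D t p" and l: "tlab t p = Elem A" and rg: "d_rg D A = RDisj Bs"
    and n: "n \<in> children t p"
  shows "children t p = {n}"
proof -
  have "word_ok (d_rg D A) (child_labels t p)" using cf l unfolding conf_at_def by auto
  then obtain B where "child_labels t p = {#Elem B#}" using rg by auto
  then have "card (children t p) = 1" unfolding child_labels_def
    by (metis size_image_mset size_mset_set size_single)
  then show ?thesis using n by (metis card_1_singletonE singletonD)
qed

lemma children_str:
  assumes tr: "is_tree t" and cf: "conf_at D t p" and l: "tlab t p = Elem A" and rg: "d_rg D A = RStr"
    and n: "n \<in> children t p"
  shows "children t p = {n} \<and> tlab t n = Str"
proof -
  have "word_ok (d_rg D A) (child_labels t p)" using cf l unfolding conf_at_def by auto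
  then have cl: "child_labels t p = {#Str#}" using rg by auto
  then have "card (children t p) = 1" unfolding child_labels_def
    by (metis size_image_mset size_mset_set size_single)
  then have "children t p = {n}" using n by (metis card_1_singletonE singletonD)
  moreover have "tlab t n \<in># child_labels t p" using mem_child_labels[OF tr n] .
  ultimately show ?thesis using cl by simp
qed

lemma ins_facts:
  assumes w: "wf_dtd D" and o: "ok D t" and n: "n \<in> tnodes t" and d: "tnodes s \<inter> tnodes t = {}"
    and s: "s \<in> I_D D B" and l: "tlab t n = Elem A" and A: "A \<in> d_ele D" and rg: "d_rg D A = RStar B"
  shows "ok D (ins_tree t n s)" "troot (ins_tree t n s) = troot t"
    "tnodes (ins_tree t n s) = tnodes t \<union> tnodes s"
    "\<And>z. z \<in> tnodes t \<Longrightarrow> tlab (ins_tree t n s) z = tlab t z"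
    "\<And>z. z \<in> tnodes t \<Longrightarrow> tval (ins_tree t n s) z = tval t z"
    "\<And>z. z \<in> tnodes t \<Longrightarrow> z \<noteq> n \<Longrightarrow> children (ins_tree t n s) z = children t z"
    "children (ins_tree t n s) n = insert (troot s) (children t n)" "troot s \<notin> children t n"
    "tlab (ins_tree t n s) (troot s) = Elem B"
proof -
  have tr: "is_tree t" using okD[OF o] by simp
  have os: "ok D s" and ls: "tlab s (troot s) = Elem B" using s unfolding I_D_iff by simp_all
  have ts: "is_tree s" using okD[OF os] by simp
  interpret I: ins_ctx t s n using tr ts n d by unfold_locales
  show "troot (ins_tree t n s) = troot t" "tnodes (ins_tree t n s) = tnodes t \<union> tnodes s"
    using I.simps by auto
  show "\<And>z. z \<in> tnodes t \<Longrightarrow> tlab (ins_tree t n s) z = tlab t z" using I.lab_t by blast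
  show "\<And>z. z \<in> tnodes t \<Longrightarrow> tval (ins_tree t n s) z = tval t z" using I.val_t by blast
  show "\<And>z. z \<in> tnodes t \<Longrightarrow> z \<noteq> n \<Longrightarrow> children (ins_tree t n s) z = children t z"
    using I.children_t by simp
  show "children (ins_tree t n s) n = insert (troot s) (children t n)" using I.children_t[OF n] by simp
  show "troot s \<notin> children t n" using I.rs children_sub[OF tr] by blast
  show "tlab (ins_tree t n s) (troot s) = Elem B" using I.simps(4)[OF I.rs(1)] ls by simp
  show "ok D (ins_tree t n s)"
    unfolding ok_def
  proof (intro conjI ballI)
    show "is_tree (ins_tree t n s)" using I.is_tree .
    fix x assume "x \<in> tnodes (ins_tree t n s)"
    then have "x \<in> tnodes t \<or> x \<in> tnodes s" using I.simps by auto
    then show "conf_at D (ins_tree t n s) x"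
    proof
      assume xt: "x \<in> tnodes t"
      show ?thesis
      proof (cases "x = n")
        case False then show ?thesis using I.conf_t xt okD(2)[OF o xt] by simp
      next
        case True
        have "word_ok (d_rg D A) (child_labels t n)" using okD(2)[OF o n] l unfolding conf_at_def by simp
        then have "set_mset (child_labels t n) \<subseteq> {Elem B}" using rg by simp
        then have "word_ok (d_rg D A) (child_labels (ins_tree t n s) n)"
          using I.child_labels_t[OF n] rg ls by simp
        then show ?thesis unfolding conf_at_def using True I.lab_t[OF n] l A by simp
      qed
    next
      assume xs: "x \<in> tnodes s"
      then show ?thesis using I.conf_s okD(2)[OF os xs] by simp
    qed
  qed
qed

lemma del_facts:
  assumes w: "wf_dtd D" and o: "ok D t" and e: "(p, n) \<in> tedges t" and l: "tlab t p = Elem A"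
    and rg: "d_rg D A = RStar B"
  shows "ok D (del_tree t n)" "troot (del_tree t n) = troot t"
    "tnodes (del_tree t n) \<subseteq> tnodes t" "p \<in> tnodes (del_tree t n)"
    "tlab (del_tree t n) = tlab t" "tval (del_tree t n) = tval t"
    "\<And>z. z \<in> tnodes (del_tree t n) \<Longrightarrow> z \<noteq> p \<Longrightarrow> children (del_tree t n) z = children t z"
    "children (del_tree t n) p = children t p - {n}" "n \<in> children t p"
proof -
  have tr: "is_tree t" using okD[OF o] by simp
  have nt: "n \<in> tnodes t" and pt: "p \<in> tnodes t" using edge_nodes[OF tr e] by auto
  have nr: "n \<noteq> troot t" using is_treeD(4)[OF tr] e by blast
  interpret Dl: del_ctx t n using tr nt nr by unfold_locales
  have pK: "p \<in> Dl.K"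
  proof -
    have "p \<notin> Dl.De"
    proof
      assume "p \<in> Dl.De"
      then have "(n, p) \<in> (tedges t)\<^sup>*" unfolding Dl.De_def by simp
      then have "(n, n) \<in> (tedges t)\<^sup>+" using e by (meson rtrancl_into_trancl1)
      then show False using no_cycle[OF w o] by blast
    qed
    then show ?thesis using pt unfolding Dl.K_def by simp
  qed
  show "troot (del_tree t n) = troot t" "tlab (del_tree t n) = tlab t" "tval (del_tree t n) = tval t"
    using Dl.simps(3,4,5) by simp_all
  show "tnodes (del_tree t n) \<subseteq> tnodes t" "p \<in> tnodes (del_tree t n)"
    unfolding Dl.simps(1) using Dl.K_sub pK by simp_all
  show "n \<in> children t p" using e unfolding children_def by simp
  have parp: "\<And>z. (z, n) \<in> tedges t \<Longrightarrow> z = p" using uniq_parent[OF tr _ e] by blast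
  show "\<And>z. z \<in> tnodes (del_tree t n) \<Longrightarrow> z \<noteq> p \<Longrightarrow> children (del_tree t n) z = children t z"
  proof -
    fix z assume z: "z \<in> tnodes (del_tree t n)" "z \<noteq> p"
    then have "n \<notin> children t z" using parp unfolding children_def by auto
    moreover have "z \<in> Dl.K" using z(1) unfolding Dl.simps(1) .
    ultimately show "children (del_tree t n) z = children t z" using Dl.children_K by simp
  qed
  show "children (del_tree t n) p = children t p - {n}" using Dl.children_K[OF pK] .
  show "ok D (del_tree t n)"
    unfolding ok_def
  proof (intro conjI ballI)
    show "is_tree (del_tree t n)" using Dl.is_tree .
    fix x assume "x \<in> tnodes (del_tree t n)"
    then have xK: "x \<in> Dl.K" unfolding Dl.simps(1) .
    then have xt: "x \<in> tnodes t" using Dl.K_sub by blast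
    show "conf_at D (del_tree t n) x"
    proof (cases "(x, n) \<in> tedges t")
      case False then show ?thesis using Dl.conf_K[OF xK] okD(2)[OF o xt] by simp
    next
      case True
      then have xp: "x = p" using parp by simp
      have "word_ok (d_rg D A) (child_labels t p)" using okD(2)[OF o pt] l unfolding conf_at_def by simp
      then have "set_mset (child_labels t p) \<subseteq> {Elem B}" using rg by simp
      moreover have "set_mset (child_labels (del_tree t n) p) \<subseteq> set_mset (child_labels t p)"
        unfolding Dl.child_labels_K[OF pK] by (auto dest: in_diffD)
      ultimately have "set_mset (child_labels (del_tree t n) p) \<subseteq> {Elem B}" by blast
      then have "word_ok (d_rg D A) (child_labels (del_tree t n) p)" using rg by simp
      moreover have "A \<in> d_ele D" using okD(2)[OF o pt] l unfolding conf_at_def by simp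
      ultimately show ?thesis unfolding conf_at_def using xp l Dl.simps(4) by simp
    qed
  qed
qed


lemma rep_facts:
  assumes w: "wf_dtd D" and o: "ok D t" and e: "(p, n) \<in> tedges t" and l: "tlab t p = Elem A"
    and rg: "d_rg D A = RDisj Bs" and B': "B' \<in> set Bs" and s: "s \<in> I_D D B'"
    and d: "tnodes s \<inter> tnodes t = {}"
  shows "ok D (ins_tree (del_tree t n) p s)" "troot (ins_tree (del_tree t n) p s) = troot t"
    "tnodes t \<inter> tnodes (ins_tree (del_tree t n) p s) \<subseteq> tnodes (del_tree t n)"
    "tnodes (del_tree t n) \<subseteq> tnodes (ins_tree (del_tree t n) p s)"
    "p \<in> tnodes (del_tree t n)"
    "\<And>z. z \<in> tnodes t \<Longrightarrow> z \<in> tnodes (ins_tree (del_tree t n) p s) \<Longrightarrow> tlab (ins_tree (del_tree t n) p s) z = tlab t z"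
    "\<And>z. z \<in> tnodes t \<Longrightarrow> z \<in> tnodes (ins_tree (del_tree t n) p s) \<Longrightarrow> tval (ins_tree (del_tree t n) p s) z = tval t z"
    "\<And>z. z \<in> tnodes t \<Longrightarrow> z \<in> tnodes (ins_tree (del_tree t n) p s) \<Longrightarrow> z \<noteq> p \<Longrightarrow> children (ins_tree (del_tree t n) p s) z = children t z"
    "children (ins_tree (del_tree t n) p s) p = {troot s}" "children t p = {n}"
    "tlab (ins_tree (del_tree t n) p s) (troot s) = Elem B'" "parent t n = p"
proof -
  have tr: "is_tree t" using okD[OF o] by simp
  have nt: "n \<in> tnodes t" and pt: "p \<in> tnodes t" using edge_nodes[OF tr e] by auto
  have nr: "n \<noteq> troot t" using is_treeD(4)[OF tr] e by blast
  have os: "ok D s" and ls: "tlab s (troot s) = Elem B'" using s unfolding I_D_iff by simp_all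
  have ts: "is_tree s" using okD[OF os] by simp
  show "parent t n = p" using parent_eq[OF tr e] .
  interpret Dl: del_ctx t n using tr nt nr by unfold_locales
  have pK: "p \<in> Dl.K"
  proof -
    have "p \<notin> Dl.De"
    proof
      assume "p \<in> Dl.De"
      then have "(n, p) \<in> (tedges t)\<^sup>*" unfolding Dl.De_def by simp
      then have "(n, n) \<in> (tedges t)\<^sup>+" using e by (meson rtrancl_into_trancl1)
      then show False using no_cycle[OF w o] by blast
    qed
    then show ?thesis using pt unfolding Dl.K_def by simp
  qed
  have pd: "p \<in> tnodes (del_tree t n)" unfolding Dl.simps(1) using pK .
  then show "p \<in> tnodes (del_tree t n)" .
  have d1: "tnodes s \<inter> tnodes (del_tree t n) = {}" using d Dl.K_sub unfolding Dl.simps(1) by blast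
  interpret I: ins_ctx "del_tree t n" s p using Dl.is_tree ts pd d1 by unfold_locales
  let ?t0 = "ins_tree (del_tree t n) p s"
  have nodes0: "tnodes ?t0 = Dl.K \<union> tnodes s" using I.simps(1) Dl.simps(1) by simp
  show "troot ?t0 = troot t" using I.simps(2) Dl.simps(3) by simp
  show "tnodes t \<inter> tnodes ?t0 \<subseteq> tnodes (del_tree t n)" using nodes0 d Dl.simps(1) by blast
  show "tnodes (del_tree t n) \<subseteq> tnodes ?t0" using nodes0 Dl.simps(1) by blast
  have zK: "\<And>z. z \<in> tnodes t \<Longrightarrow> z \<in> tnodes ?t0 \<Longrightarrow> z \<in> Dl.K" using nodes0 d by blast
  show "\<And>z. z \<in> tnodes t \<Longrightarrow> z \<in> tnodes ?t0 \<Longrightarrow> tlab ?t0 z = tlab t z"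
    using zK I.lab_t Dl.simps(1,4) by metis
  show "\<And>z. z \<in> tnodes t \<Longrightarrow> z \<in> tnodes ?t0 \<Longrightarrow> tval ?t0 z = tval t z"
    using zK I.val_t Dl.simps(1,5) by metis
  have parp: "\<And>z. (z, n) \<in> tedges t \<Longrightarrow> z = p" using uniq_parent[OF tr _ e] by blast
  have chK: "\<And>z. z \<in> Dl.K \<Longrightarrow> z \<noteq> p \<Longrightarrow> children ?t0 z = children t z"
  proof -
    fix z assume z: "z \<in> Dl.K" "z \<noteq> p"
    then have "n \<notin> children t z" using parp unfolding children_def by auto
    moreover have "z \<in> tnodes (del_tree t n)" using z Dl.simps(1) by simp
    ultimately show "children ?t0 z = children t z" using Dl.children_K[OF z(1)] I.children_t z(2) by simp
  qed
  then show "\<And>z. z \<in> tnodes t \<Longrightarrow> z \<in> tnodes ?t0 \<Longrightarrow> z \<noteq> p \<Longrightarrow> children ?t0 z = children t z"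
    using zK by blast
  have nc: "n \<in> children t p" using e unfolding children_def by simp
  show cp: "children t p = {n}" using children_disj[OF tr okD(2)[OF o pt] l rg nc] .
  show "children ?t0 p = {troot s}" using I.children_t[OF pd] Dl.children_K[OF pK] cp by simp
  show "tlab ?t0 (troot s) = Elem B'" using I.simps(4)[OF I.rs(1)] ls by simp
  show "ok D ?t0"
    unfolding ok_def
  proof (intro conjI ballI)
    show "is_tree ?t0" using I.is_tree .
    fix x assume "x \<in> tnodes ?t0"
    then have "x \<in> Dl.K \<or> x \<in> tnodes s" using nodes0 by simp
    then show "conf_at D ?t0 x"
    proof
      assume xK: "x \<in> Dl.K"
      then have xt: "x \<in> tnodes t" and xd: "x \<in> tnodes (del_tree t n)" using Dl.K_sub Dl.simps(1) by auto
      show ?thesis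
      proof (cases "x = p")
        case False
        then have "(x, n) \<notin> tedges t" using parp by blast
        then show ?thesis using I.conf_t[OF xd False] Dl.conf_K[OF xK] okD(2)[OF o xt] by simp
      next
        case True
        have cl: "child_labels t p = {#tlab t n#}"
          unfolding child_labels_def cp by simp
        have "child_labels ?t0 p = {#Elem B'#}"
          using I.child_labels_t[OF pd] Dl.child_labels_K[OF pK] e cl ls by simp
        then have "word_ok (d_rg D A) (child_labels ?t0 p)" using rg B' by simp
        moreover have "A \<in> d_ele D" using okD(2)[OF o pt] l unfolding conf_at_def by simp
        moreover have "tlab ?t0 p = Elem A" using I.lab_t[OF pd] l Dl.simps(4) by simp
        ultimately show ?thesis unfolding conf_at_def using True by simp
      qed
    next
      assume xs: "x \<in> tnodes s"
      then show ?thesis using I.conf_s okD(2)[OF os xs] by simp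
    qed
  qed
qed

lemma ok_tval_upd: "ok D (t\<lparr>tval := v\<rparr>) = ok D t"
  unfolding ok_def is_tree_def conf_at_def child_labels_def children_def by simp

lemma mode_ins: "tlab t n = Elem A \<Longrightarrow> d_rg D A = RStar B \<Longrightarrow> UIns A B \<in> AA \<Longrightarrow>
  mode D AA (tlab t n) = MFree \<or> mode D AA (tlab t n) = MIns"
  unfolding mode_def by simp

lemma mode_del: "tlab t n = Elem A \<Longrightarrow> d_rg D A = RStar B \<Longrightarrow> UDel A B \<in> AA \<Longrightarrow>
  mode D AA (tlab t n) = MFree \<or> mode D AA (tlab t n) = MDel"
  unfolding mode_def by simp

lemma mode_disj: "tlab t n = Elem A \<Longrightarrow> d_rg D A = RDisj Bs \<Longrightarrow> mode D AA (tlab t n) = MDisj A"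
  unfolding mode_def by simp

lemma mode_str: "tlab t n = Elem A \<Longrightarrow> d_rg D A = RStr \<Longrightarrow> URepStr A \<in> AA \<Longrightarrow> mode D AA (tlab t n) = MStrF"
  unfolding mode_def by simp

lemma mode_strN: "tlab t n = Elem A \<Longrightarrow> d_rg D A = RStr \<Longrightarrow> URepStr A \<notin> AA \<Longrightarrow> mode D AA (tlab t n) = MBij"
  unfolding mode_def by simp

lemma mode_starN: "tlab t n = Elem A \<Longrightarrow> d_rg D A = RStar B \<Longrightarrow> UIns A B \<notin> AA \<Longrightarrow> UDel A B \<notin> AA \<Longrightarrow>
  mode D AA (tlab t n) = MBij"
  unfolding mode_def by simp

lemma mode_insN: "tlab t n = Elem A \<Longrightarrow> d_rg D A = RStar B \<Longrightarrow> UIns A B \<notin> AA \<Longrightarrow>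
  mode D AA (tlab t n) = MDel \<or> mode D AA (tlab t n) = MBij"
  unfolding mode_def by simp

lemma mode_delN: "tlab t n = Elem A \<Longrightarrow> d_rg D A = RStar B \<Longrightarrow> UDel A B \<notin> AA \<Longrightarrow>
  mode D AA (tlab t n) = MIns \<or> mode D AA (tlab t n) = MBij"
  unfolding mode_def by simp

lemma cc_ins: "mode D AA (tlab t1 n1) = MFree \<or> mode D AA (tlab t1 n1) = MIns \<Longrightarrow>
  inj_on f (children t1 n1) \<Longrightarrow> f ` children t1 n1 \<subseteq> children t2 n2 \<Longrightarrow>
  (\<forall>c\<in>children t1 n1. Rl D AA t1 c t2 (f c)) \<Longrightarrow> cc D AA t1 n1 t2 n2"
  unfolding cc_def by auto

lemma cc_del: "mode D AA (tlab t1 n1) = MFree \<or> mode D AA (tlab t1 n1) = MDel \<Longrightarrow>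
  inj_on g (children t2 n2) \<Longrightarrow> g ` children t2 n2 \<subseteq> children t1 n1 \<Longrightarrow>
  (\<forall>c\<in>children t2 n2. Rl D AA t1 (g c) t2 c) \<Longrightarrow> cc D AA t1 n1 t2 n2"
  unfolding cc_def by auto

lemma cc_strf: "mode D AA (tlab t1 n1) = MStrF \<Longrightarrow>
  bij_betw f (children t1 n1) (children t2 n2) \<Longrightarrow> (\<forall>c\<in>children t1 n1. tlab t2 (f c) = tlab t1 c) \<Longrightarrow>
  cc D AA t1 n1 t2 n2"
  unfolding cc_def by auto

lemma cc_disj: "mode D AA (tlab t1 n1) = MDisj A \<Longrightarrow>
  bij_betw f (children t1 n1) (children t2 n2) \<Longrightarrow>
  (\<forall>c\<in>children t1 n1. Rl D AA t1 c t2 (f c) \<or> (\<exists>X Y. tlab t1 c = Elem X \<and> tlab t2 (f c) = Elem Y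
            \<and> (X, Y) \<in> (replace_graph D AA A)\<^sup>+)) \<Longrightarrow>
  cc D AA t1 n1 t2 n2"
  unfolding cc_def by auto

lemma valid_setD: "u \<in> AA \<Longrightarrow> AA \<subseteq> valid_set D \<Longrightarrow> valid_uat D u"
  unfolding valid_set_def by auto

lemma step_Rl:
  assumes w: "wf_dtd D" and o: "ok D t" and AA: "AA \<subseteq> valid_set D"
    and v: "valid_upd op t" and m: "op \<in> sem_uats D AA t"
  shows "ok D (apply_upd op t) \<and> troot (apply_upd op t) = troot t
     \<and> Rl D AA t (troot t) (apply_upd op t) (troot t)"
proof -
  have tr: "is_tree t" using okD[OF o] by simp
  obtain u where u: "u \<in> AA" "matches D t op u" using m unfolding sem_uats_def by blast
  have vu: "valid_uat D u" using valid_setD[OF u(1) AA] .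
  show ?thesis
  proof (cases op)
    case (Insert n s)
    then obtain A B where uu: "u = UIns A B" using u(2) by (cases u) auto
    have l: "tlab t n = Elem A" and s: "s \<in> I_D D B" using u(2) Insert uu by auto
    have A: "A \<in> d_ele D" and rg: "d_rg D A = RStar B" using vu uu by auto
    have n: "n \<in> tnodes t" and d: "tnodes s \<inter> tnodes t = {}" using v Insert by auto
    note F = ins_facts[OF w o n d s l A rg]
    let ?t0 = "ins_tree t n s"
    have "Rl D AA t (troot t) ?t0 (troot t)"
    proof (rule step_sim[OF w o F(1) F(2) n, of "{}"])
      show "{} \<subseteq> children t n" by simp
      show "\<And>z. z \<in> tnodes t \<Longrightarrow> z \<in> tnodes ?t0 \<Longrightarrow> tlab ?t0 z = tlab t z" using F(4) by blast
      show "\<And>z. z \<in> tnodes t \<Longrightarrow> z \<in> tnodes ?t0 \<Longrightarrow> z \<notin> {} \<Longrightarrow> tval ?t0 z = tval t z" using F(5) by blast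
      show "\<And>z. z \<in> tnodes t \<Longrightarrow> z \<in> tnodes ?t0 \<Longrightarrow> z \<noteq> n \<Longrightarrow> children ?t0 z = children t z" using F(6) by blast
      show "n \<in> tnodes ?t0 \<Longrightarrow> \<forall>c\<in>children t n \<inter> (tnodes t \<inter> tnodes ?t0 - {}). Rl D AA t c ?t0 c \<Longrightarrow> cc D AA t n ?t0 n"
      proof -
        assume IH: "\<forall>c\<in>children t n \<inter> (tnodes t \<inter> tnodes ?t0 - {}). Rl D AA t c ?t0 c"
        have sub: "children t n \<subseteq> tnodes t \<inter> tnodes ?t0" using children_sub[OF tr] F(3) by blast
        show "cc D AA t n ?t0 n"
          by (rule cc_ins[OF mode_ins[OF l rg uu[THEN subst, of "\<lambda>x. x \<in> AA", OF u(1)]], of id])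
             (use IH sub F(7) in auto)
      qed
    qed
    then show ?thesis using F(1,2) Insert by simp
  next
    case (Delete n)
    then obtain A B where uu: "u = UDel A B" using u(2) by (cases u) auto
    obtain p where e: "(p, n) \<in> tedges t" and l: "tlab t p = Elem A"
      using u(2) Delete uu by (auto simp: parent_labelled_def)
    have rg: "d_rg D A = RStar B" using vu uu by auto
    note F = del_facts[OF w o e l rg]
    let ?t0 = "del_tree t n"
    have pt: "p \<in> tnodes t" using edge_nodes[OF tr e] by simp
    have "Rl D AA t (troot t) ?t0 (troot t)"
    proof (rule step_sim[OF w o F(1) F(2) pt, of "{}"])
      show "{} \<subseteq> children t p" by simp
      show "\<And>z. z \<in> tnodes t \<Longrightarrow> z \<in> tnodes ?t0 \<Longrightarrow> tlab ?t0 z = tlab t z" using F(5) by simp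
      show "\<And>z. z \<in> tnodes t \<Longrightarrow> z \<in> tnodes ?t0 \<Longrightarrow> z \<notin> {} \<Longrightarrow> tval ?t0 z = tval t z" using F(6) by simp
      show "\<And>z. z \<in> tnodes t \<Longrightarrow> z \<in> tnodes ?t0 \<Longrightarrow> z \<noteq> p \<Longrightarrow> children ?t0 z = children t z" using F(7) by blast
      show "p \<in> tnodes ?t0 \<Longrightarrow> \<forall>c\<in>children t p \<inter> (tnodes t \<inter> tnodes ?t0 - {}). Rl D AA t c ?t0 c \<Longrightarrow> cc D AA t p ?t0 p"
      proof -
        assume IH: "\<forall>c\<in>children t p \<inter> (tnodes t \<inter> tnodes ?t0 - {}). Rl D AA t c ?t0 c"
        have sub: "children ?t0 p \<subseteq> tnodes t \<inter> tnodes ?t0" using children_sub[OF okD(1)[OF F(1)]] F(3) by blast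
        have md: "mode D AA (tlab t p) = MFree \<or> mode D AA (tlab t p) = MDel"
          using mode_del[OF l rg] u(1) uu by simp
        show "cc D AA t p ?t0 p"
          by (rule cc_del[OF md, of id]) (use IH sub F(8) in auto)
      qed
    qed
    then show ?thesis using F(1,2) Delete by simp
  next
    case (ReplaceT n s)
    then obtain A B B' where uu: "u = URep A B B'" using u(2) by (cases u) auto
    obtain p where e: "(p, n) \<in> tedges t" and l: "tlab t p = Elem A"
      using u(2) ReplaceT uu by (auto simp: parent_labelled_def)
    have ln: "tlab t n = Elem B" and s: "s \<in> I_D D B'" using u(2) ReplaceT uu by auto
    obtain Bs where rg: "d_rg D A = RDisj Bs" and BB: "B \<in> set Bs" "B' \<in> set Bs" and A: "A \<in> d_ele D"
      using vu uu by auto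
    have d: "tnodes s \<inter> tnodes t = {}" using v ReplaceT by auto
    note F = rep_facts[OF w o e l rg BB(2) s d]
    let ?t0 = "ins_tree (del_tree t n) p s"
    have ap: "apply_upd op t = ?t0" using ReplaceT F(12) by simp
    have pt: "p \<in> tnodes t" using edge_nodes[OF tr e] by simp
    have "Rl D AA t (troot t) ?t0 (troot t)"
    proof (rule step_sim[OF w o F(1) F(2) pt, of "{}"])
      show "{} \<subseteq> children t p" by simp
      show "\<And>z. z \<in> tnodes t \<Longrightarrow> z \<in> tnodes ?t0 \<Longrightarrow> tlab ?t0 z = tlab t z" using F(6) by blast
      show "\<And>z. z \<in> tnodes t \<Longrightarrow> z \<in> tnodes ?t0 \<Longrightarrow> z \<notin> {} \<Longrightarrow> tval ?t0 z = tval t z" using F(7) by blast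
      show "\<And>z. z \<in> tnodes t \<Longrightarrow> z \<in> tnodes ?t0 \<Longrightarrow> z \<noteq> p \<Longrightarrow> children ?t0 z = children t z" using F(8) by blast
      show "p \<in> tnodes ?t0 \<Longrightarrow> \<forall>c\<in>children t p \<inter> (tnodes t \<inter> tnodes ?t0 - {}). Rl D AA t c ?t0 c \<Longrightarrow> cc D AA t p ?t0 p"
      proof -
        have g: "(B, B') \<in> replace_graph D AA A" unfolding replace_graph_def using rg BB u(1) uu by simp
        have b: "bij_betw (\<lambda>_. troot s) (children t p) (children ?t0 p)" using F(9,10) by (simp add: bij_betw_def)
        show "cc D AA t p ?t0 p"
          by (rule cc_disj[OF mode_disj[OF l rg] b]) (use F(10,11) ln g in auto)
      qed
    qed
    then show ?thesis using F(1,2) ap by simp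
  next
    case (ReplaceS n v')
    then obtain A where uu: "u = URepStr A" using u(2) by (cases u) auto
    obtain p where e: "(p, n) \<in> tedges t" and l: "tlab t p = Elem A"
      using u(2) ReplaceS uu by (auto simp: parent_labelled_def)
    have rg: "d_rg D A = RStr" using vu uu by auto
    let ?t0 = "t\<lparr>tval := (tval t)(n := v')\<rparr>"
    have o0: "ok D ?t0" using o ok_tval_upd by metis
    have pt: "p \<in> tnodes t" using edge_nodes[OF tr e] by simp
    have nc: "n \<in> children t p" using e unfolding children_def by simp
    have "Rl D AA t (troot t) ?t0 (troot t)"
    proof (rule step_sim[OF w o o0 _ pt, of "{n}"])
      show "troot ?t0 = troot t" by simp
      show "{n} \<subseteq> children t p" using nc by simp
      show "\<And>z. z \<in> tnodes t \<Longrightarrow> z \<in> tnodes ?t0 \<Longrightarrow> tlab ?t0 z = tlab t z" by simp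
      show "\<And>z. z \<in> tnodes t \<Longrightarrow> z \<in> tnodes ?t0 \<Longrightarrow> z \<notin> {n} \<Longrightarrow> tval ?t0 z = tval t z" by simp
      show "\<And>z. z \<in> tnodes t \<Longrightarrow> z \<in> tnodes ?t0 \<Longrightarrow> z \<noteq> p \<Longrightarrow> children ?t0 z = children t z"
        unfolding children_def by simp
      show "p \<in> tnodes ?t0 \<Longrightarrow> \<forall>c\<in>children t p \<inter> (tnodes t \<inter> tnodes ?t0 - {n}). Rl D AA t c ?t0 c \<Longrightarrow> cc D AA t p ?t0 p"
      proof -
        have ms: "mode D AA (tlab t p) = MStrF" using mode_str[OF l rg] u(1) uu by simp
        have b: "bij_betw id (children t p) (children ?t0 p)" unfolding children_def by simp
        show "cc D AA t p ?t0 p" by (rule cc_strf[OF ms b]) simp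
      qed
    qed
    then show ?thesis using o0 ReplaceS by simp
  qed
qed

lemma seq_Rl:
  assumes w: "wf_dtd D" and AA: "AA \<subseteq> valid_set D"
  shows "allowed D AA t ops \<Longrightarrow> ok D t \<Longrightarrow> ok D (apply_seq ops t) \<and> troot (apply_seq ops t) = troot t
     \<and> Rl D AA t (troot t) (apply_seq ops t) (troot t)"
proof (induction ops arbitrary: t)
  case Nil
  then show ?case using Rl_refl[OF w Nil(2) is_treeD(2)[OF okD(1)[OF Nil(2)]]] by simp
next
  case (Cons op ops)
  have v: "valid_upd op t" and m: "op \<in> sem_uats D AA t" and al: "allowed D AA (apply_upd op t) ops"
    using Cons.prems by auto
  have s1: "ok D (apply_upd op t) \<and> troot (apply_upd op t) = troot t
     \<and> Rl D AA t (troot t) (apply_upd op t) (troot t)" using step_Rl[OF w Cons.prems(2) AA v m] .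
  then have s2: "ok D (apply_seq ops (apply_upd op t)) \<and> troot (apply_seq ops (apply_upd op t)) = troot t
     \<and> Rl D AA (apply_upd op t) (troot t) (apply_seq ops (apply_upd op t)) (troot t)"
    using Cons.IH[OF al] by simp
  show ?case using s1 s2 Rl_trans by fastforce
qed

lemma iso_refl: "iso t t"
  unfolding iso_def by (rule exI[of _ id]) simp

lemma cc_MIns_card: "cc D AA t1 n1 t2 n2 \<Longrightarrow> mode D AA (tlab t1 n1) = MIns \<Longrightarrow> finite (children t2 n2)
  \<Longrightarrow> card (children t1 n1) \<le> card (children t2 n2)"
proof -
  assume c: "cc D AA t1 n1 t2 n2" and m: "mode D AA (tlab t1 n1) = MIns" and fin: "finite (children t2 n2)"
  obtain f where "inj_on f (children t1 n1)" "f ` children t1 n1 \<subseteq> children t2 n2"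
    using ccD(1)[OF c m] by blast
  then show ?thesis using card_inj_on_le[OF _ _ fin] by blast
qed

lemma cc_MDel_card: "cc D AA t1 n1 t2 n2 \<Longrightarrow> mode D AA (tlab t1 n1) = MDel \<Longrightarrow> finite (children t1 n1)
  \<Longrightarrow> card (children t2 n2) \<le> card (children t1 n1)"
proof -
  assume c: "cc D AA t1 n1 t2 n2" and m: "mode D AA (tlab t1 n1) = MDel" and fin: "finite (children t1 n1)"
  obtain f where "inj_on f (children t2 n2)" "f ` children t2 n2 \<subseteq> children t1 n1"
    using ccD(2)[OF c m] by blast
  then show ?thesis using card_inj_on_le[OF _ _ fin] by blast
qed

lemma cc_MBij_card: "cc D AA t1 n1 t2 n2 \<Longrightarrow> mode D AA (tlab t1 n1) = MBij
  \<Longrightarrow> card (children t2 n2) = card (children t1 n1)"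
proof -
  assume c: "cc D AA t1 n1 t2 n2" and m: "mode D AA (tlab t1 n1) = MBij"
  obtain f where "bij_betw f (children t1 n1) (children t2 n2)"
    using ccD(5)[OF c m] by blast
  then show ?thesis using bij_betw_same_card by metis
qed

lemma forb_struct:
  assumes w: "wf_dtd D" and o: "ok D t" and FFv: "FF \<subseteq> valid_set D" and v: "valid_upd op t"
    and mt: "op \<in> sem_uats D FF t" and dj: "AA \<inter> FF = {}"
    and c2: "\<forall>A \<in> d_ele D. \<forall>Bs. d_rg D A = RDisj Bs \<longrightarrow>
         (replace_graph D AA A)\<^sup>+ \<inter> forbidden_edges FF A = {}"
    and ni: "\<not> iso (apply_upd op t) t"
  obtains u m C where "u \<in> FF" "m \<in> tnodes t" "C \<subseteq> children t m" "ok D (apply_upd op t)"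
    "troot (apply_upd op t) = troot t" "m \<in> tnodes (apply_upd op t)"
    "tlab t m = Elem (uat_elem u)"
    "\<And>z. z \<in> tnodes t \<Longrightarrow> z \<in> tnodes (apply_upd op t) \<Longrightarrow> tlab (apply_upd op t) z = tlab t z"
    "\<And>z. z \<in> tnodes t \<Longrightarrow> z \<in> tnodes (apply_upd op t) \<Longrightarrow> z \<notin> C \<Longrightarrow> tval (apply_upd op t) z = tval t z"
    "\<And>z. z \<in> tnodes t \<Longrightarrow> z \<in> tnodes (apply_upd op t) \<Longrightarrow> z \<noteq> m \<Longrightarrow> children (apply_upd op t) z = children t z"
    "\<And>z. z \<in> tnodes t \<Longrightarrow> (z, m) \<in> (tedges t)\<^sup>* \<Longrightarrow> z \<in> tnodes (apply_upd op t)"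
    "\<not> Rl D AA t m (apply_upd op t) m"
proof -
  have tr: "is_tree t" using okD[OF o] by simp
  obtain u where u: "u \<in> FF" "matches D t op u" using mt unfolding sem_uats_def by blast
  have vu: "valid_uat D u" using valid_setD[OF u(1) FFv] .
  have uA: "u \<notin> AA" using u(1) dj by blast
  show ?thesis
  proof (cases op)
    case (Insert n s)
    then obtain A B where uu: "u = UIns A B" using u(2) by (cases u) auto
    have l: "tlab t n = Elem A" and s: "s \<in> I_D D B" using u(2) Insert uu by auto
    have A: "A \<in> d_ele D" and rg: "d_rg D A = RStar B" using vu uu by auto
    have n: "n \<in> tnodes t" and d: "tnodes s \<inter> tnodes t = {}" using v Insert by auto
    note F = ins_facts[OF w o n d s l A rg]
    let ?t0 = "ins_tree t n s"
    have ap: "apply_upd op t = ?t0" using Insert by simp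
    have nR: "\<not> Rl D AA t n ?t0 n"
    proof
      assume "Rl D AA t n ?t0 n"
      then have c: "cc D AA t n ?t0 n" using Rl_iff by blast
      have md: "mode D AA (tlab t n) = MDel \<or> mode D AA (tlab t n) = MBij"
        using mode_insN[OF l rg] uA uu by simp
      have fin: "finite (children t n)" using finite_children[OF tr] .
      have "card (children ?t0 n) = Suc (card (children t n))" using F(7,8) fin by simp
      then show False using md cc_MDel_card[OF c _ fin] cc_MBij_card[OF c] by force
    qed
    show ?thesis
      by (rule that[of u n "{}"]) (use u(1) n F ap l uu nR in auto)
  next
    case (Delete n)
    then obtain A B where uu: "u = UDel A B" using u(2) by (cases u) auto
    obtain p where e: "(p, n) \<in> tedges t" and l: "tlab t p = Elem A"
      using u(2) Delete uu by (auto simp: parent_labelled_def)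
    have rg: "d_rg D A = RStar B" using vu uu by auto
    note F = del_facts[OF w o e l rg]
    let ?t0 = "del_tree t n"
    have ap: "apply_upd op t = ?t0" using Delete by simp
    have pt: "p \<in> tnodes t" using edge_nodes[OF tr e] by simp
    have nt: "n \<in> tnodes t" using edge_nodes[OF tr e] by simp
    have nr: "n \<noteq> troot t" using is_treeD(4)[OF tr] e by blast
    interpret Dl: del_ctx t n using tr nt nr by unfold_locales
    have anc: "\<And>z. z \<in> tnodes t \<Longrightarrow> (z, p) \<in> (tedges t)\<^sup>* \<Longrightarrow> z \<in> tnodes ?t0"
    proof -
      fix z assume z: "z \<in> tnodes t" "(z, p) \<in> (tedges t)\<^sup>*"
      have "z \<notin> Dl.De"
      proof
        assume "z \<in> Dl.De"
        then have "(n, z) \<in> (tedges t)\<^sup>*" unfolding Dl.De_def by simp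
        then have "(n, p) \<in> (tedges t)\<^sup>*" using z(2) by simp
        then have "(n, n) \<in> (tedges t)\<^sup>+" using e by (meson rtrancl_into_trancl1)
        then show False using no_cycle[OF w o] by blast
      qed
      then show "z \<in> tnodes ?t0" using z(1) Dl.simps(1) unfolding Dl.K_def by simp
    qed
    have nR: "\<not> Rl D AA t p ?t0 p"
    proof
      assume "Rl D AA t p ?t0 p"
      then have c: "cc D AA t p ?t0 p" using Rl_iff by blast
      have md: "mode D AA (tlab t p) = MIns \<or> mode D AA (tlab t p) = MBij"
        using mode_delN[OF l rg] uA uu by simp
      have fin: "finite (children t p)" using finite_children[OF tr] .
      have fin0: "finite (children ?t0 p)" using finite_children[OF okD(1)[OF F(1)]] .
      have "card (children ?t0 p) < card (children t p)" unfolding F(8) using card_Diff1_less[OF fin F(9)] .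
      then show False using md cc_MIns_card[OF c _ fin0] cc_MBij_card[OF c] by force
    qed
    show ?thesis
      by (rule that[of u p "{}"]) (use u(1) pt F ap l uu nR anc in auto)
  next
    case (ReplaceT n s)
    then obtain A B B' where uu: "u = URep A B B'" using u(2) by (cases u) auto
    obtain p where e: "(p, n) \<in> tedges t" and l: "tlab t p = Elem A"
      using u(2) ReplaceT uu by (auto simp: parent_labelled_def)
    have ln: "tlab t n = Elem B" and s: "s \<in> I_D D B'" and BB': "B \<noteq> B'" using u(2) ReplaceT uu by auto
    obtain Bs where rg: "d_rg D A = RDisj Bs" and BB: "B \<in> set Bs" "B' \<in> set Bs" and A: "A \<in> d_ele D"
      using vu uu by auto
    have d: "tnodes s \<inter> tnodes t = {}" using v ReplaceT by auto
    note F = rep_facts[OF w o e l rg BB(2) s d]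
    let ?t0 = "ins_tree (del_tree t n) p s"
    have ap: "apply_upd op t = ?t0" using ReplaceT F(12) by simp
    have pt: "p \<in> tnodes t" using edge_nodes[OF tr e] by simp
    have nt: "n \<in> tnodes t" using edge_nodes[OF tr e] by simp
    have nr: "n \<noteq> troot t" using is_treeD(4)[OF tr] e by blast
    interpret Dl: del_ctx t n using tr nt nr by unfold_locales
    have anc: "\<And>z. z \<in> tnodes t \<Longrightarrow> (z, p) \<in> (tedges t)\<^sup>* \<Longrightarrow> z \<in> tnodes ?t0"
    proof -
      fix z assume z: "z \<in> tnodes t" "(z, p) \<in> (tedges t)\<^sup>*"
      have "z \<notin> Dl.De"
      proof
        assume "z \<in> Dl.De"
        then have "(n, z) \<in> (tedges t)\<^sup>*" unfolding Dl.De_def by simp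
        then have "(n, p) \<in> (tedges t)\<^sup>*" using z(2) by simp
        then have "(n, n) \<in> (tedges t)\<^sup>+" using e by (meson rtrancl_into_trancl1)
        then show False using no_cycle[OF w o] by blast
      qed
      then have "z \<in> tnodes (del_tree t n)" using z(1) Dl.simps(1) unfolding Dl.K_def by simp
      then show "z \<in> tnodes ?t0" using F(4) by blast
    qed
    have nR: "\<not> Rl D AA t p ?t0 p"
    proof
      assume "Rl D AA t p ?t0 p"
      then have c: "cc D AA t p ?t0 p" using Rl_iff by blast
      obtain f where f: "bij_betw f (children t p) (children ?t0 p)"
        "\<forall>c\<in>children t p. Rl D AA t c ?t0 (f c) \<or> (\<exists>X Y. tlab t c = Elem X \<and> tlab ?t0 (f c) = Elem Y
            \<and> (X, Y) \<in> (replace_graph D AA A)\<^sup>+)"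
        using ccD(4)[OF c mode_disj[OF l rg]] by blast
      have fn: "f n = troot s" using f(1) F(9,10) bij_betwE by fastforce
      have "Rl D AA t n ?t0 (troot s) \<or> (B, B') \<in> (replace_graph D AA A)\<^sup>+"
        using f(2) F(10,11) fn ln by auto
      moreover have "\<not> Rl D AA t n ?t0 (troot s)" using Rl_lab ln F(11) BB' by fastforce
      moreover have "(B, B') \<in> forbidden_edges FF A" unfolding forbidden_edges_def using u(1) uu by simp
      ultimately show False using c2 A rg by blast
    qed
    show ?thesis
      by (rule that[of u p "{}"]) (use u(1) pt F ap l uu nR anc in auto)
  next
    case (ReplaceS n v')
    then obtain A where uu: "u = URepStr A" using u(2) by (cases u) auto
    obtain p where e: "(p, n) \<in> tedges t" and l: "tlab t p = Elem A"
      using u(2) ReplaceS uu by (auto simp: parent_labelled_def)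
    have rg: "d_rg D A = RStr" using vu uu by auto
    let ?t0 = "t\<lparr>tval := (tval t)(n := v')\<rparr>"
    have ap: "apply_upd op t = ?t0" using ReplaceS by simp
    have o0: "ok D ?t0" using o ok_tval_upd by metis
    have pt: "p \<in> tnodes t" using edge_nodes[OF tr e] by simp
    have nc: "n \<in> children t p" using e unfolding children_def by simp
    have cs: "children t p = {n}" "tlab t n = Str" using children_str[OF tr okD(2)[OF o pt] l rg nc] by auto
    have nR: "\<not> Rl D AA t p ?t0 p"
    proof
      assume "Rl D AA t p ?t0 p"
      then have c: "cc D AA t p ?t0 p" using Rl_iff by blast
      have md: "mode D AA (tlab t p) = MBij" using mode_strN[OF l rg] uA uu by simp
      obtain f where f: "bij_betw f (children t p) (children ?t0 p)" "\<forall>c\<in>children t p. Rl D AA t c ?t0 (f c)"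
        using ccD(5)[OF c md] by blast
      have "children ?t0 p = {n}" using cs unfolding children_def by simp
      then have "f n = n" using f(1) cs bij_betwE by fastforce
      then have "Rl D AA t n ?t0 n" using f(2) cs by simp
      then have "v' = tval t n" using cs(2) by (simp add: Rl_iff)
      then have "?t0 = t" by simp
      then show False using ni ap iso_refl by metis
    qed
    show ?thesis
      by (rule that[of u p "{n}"]) (use u(1) pt o0 ap l uu nR nc in \<open>auto simp: children_def\<close>)
  qed
qed

lemma anc_linear:
  assumes tr: "is_tree t" and a: "(a, m) \<in> (tedges t)\<^sup>*"
  shows "(b, m) \<in> (tedges t)\<^sup>* \<Longrightarrow> (a, b) \<in> (tedges t)\<^sup>* \<or> (b, a) \<in> (tedges t)\<^sup>*"
  using a
proof (induction arbitrary: b rule: rtrancl_induct)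
  case base then show ?case by simp
next
  case (step m' m)
  from step.prems show ?case
  proof (cases rule: rtranclE)
    case base then show ?thesis using step.hyps by (meson rtrancl.rtrancl_into_rtrancl)
  next
    case (step m'')
    then have "m'' = m'" using uniq_parent[OF tr] \<open>(m', m) \<in> tedges t\<close> by blast
    then show ?thesis using step.IH step(1) by blast
  qed
qed

lemma anc_child_eq:
  assumes w: "wf_dtd D" and o: "ok D t" and xc: "(x, c) \<in> tedges t" and xy: "(x, y) \<in> tedges t"
    and cm: "(c, m) \<in> (tedges t)\<^sup>*" and ym: "(y, m) \<in> (tedges t)\<^sup>*"
  shows "c = y"
proof (rule ccontr)
  assume ne: "c \<noteq> y"
  have tr: "is_tree t" using okD[OF o] by simp
  have gen: "\<And>a b. (x, a) \<in> tedges t \<Longrightarrow> (x, b) \<in> tedges t \<Longrightarrow> a \<noteq> b \<Longrightarrow> (a, b) \<in> (tedges t)\<^sup>* \<Longrightarrow> False"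
  proof -
    fix a b assume xa: "(x, a) \<in> tedges t" and xb: "(x, b) \<in> tedges t" and ab: "a \<noteq> b" "(a, b) \<in> (tedges t)\<^sup>*"
    then have "(a, b) \<in> (tedges t)\<^sup>+" by (simp add: rtrancl_eq_or_trancl)
    then obtain z where z: "(a, z) \<in> (tedges t)\<^sup>*" "(z, b) \<in> tedges t" using tranclD2 by metis
    then have "z = x" using uniq_parent[OF tr _ xb] by blast
    then have "(x, x) \<in> (tedges t)\<^sup>+" using xa z(1) by (meson rtrancl_into_trancl2)
    then show False using no_cycle[OF w o] by blast
  qed
  show False using anc_linear[OF tr cm ym] gen xc xy ne by metis
qed

lemma mode_inv:
  "mode D AA (Elem A) = MFree \<Longrightarrow> \<exists>B. d_rg D A = RStar B \<and> UIns A B \<in> AA \<and> UDel A B \<in> AA"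
  "mode D AA (Elem A) = MStrF \<Longrightarrow> d_rg D A = RStr"
  "mode D AA (Elem A) = MDisj A' \<Longrightarrow> A' = A \<and> (\<exists>Bs. d_rg D A = RDisj Bs)"
  unfolding mode_def by (cases "d_rg D A"; auto split: if_splits)+

lemma unchanged_Rl:
  assumes w: "wf_dtd D" and o: "ok D t" and o0: "ok D t0" and C: "C \<subseteq> children t m"
    and lab: "\<And>z. z \<in> tnodes t \<Longrightarrow> z \<in> tnodes t0 \<Longrightarrow> tlab t0 z = tlab t z"
    and val: "\<And>z. z \<in> tnodes t \<Longrightarrow> z \<in> tnodes t0 \<Longrightarrow> z \<notin> C \<Longrightarrow> tval t0 z = tval t z"
    and ch: "\<And>z. z \<in> tnodes t \<Longrightarrow> z \<in> tnodes t0 \<Longrightarrow> z \<noteq> m \<Longrightarrow> children t0 z = children t z"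
    and c: "c \<in> tnodes t" "c \<in> tnodes t0" "(c, m) \<notin> (tedges t)\<^sup>*" "c \<notin> C"
  shows "Rl D AA t0 c t c"
proof -
  have tr: "is_tree t" and tr0: "is_tree t0" using o o0 okD by auto
  let ?S = "{z. z \<in> tnodes t \<and> z \<in> tnodes t0 \<and> (z, m) \<notin> (tedges t)\<^sup>* \<and> z \<notin> C}"
  have Cpar: "\<And>z d. d \<in> C \<Longrightarrow> d \<in> children t z \<Longrightarrow> z = m"
    using C uniq_parent[OF tr] unfolding children_def by blast
  have cS: "c \<in> ?S" using c by simp
  have "Rl D AA t0 c t (id c)"
  proof (rule sim_gen[of D t0 ?S t id "{}" AA c, OF w o0 _ _ _ _ _ cS])
    show "?S \<subseteq> tnodes t0" by blast
    show "\<And>x. x \<in> ?S \<Longrightarrow> tlab t (id x) = tlab t0 x" using lab by simp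
    show "\<And>x. x \<in> ?S \<Longrightarrow> tlab t0 x = Str \<Longrightarrow> tval t (id x) = tval t0 x" using val by simp
    show "\<And>x. x \<in> ?S \<Longrightarrow> x \<notin> {} \<Longrightarrow> children t0 x \<subseteq> ?S \<and> bij_betw id (children t0 x) (children t (id x))"
    proof -
      fix x assume x: "x \<in> ?S" "x \<notin> {}"
      then have xm: "x \<noteq> m" by auto
      then have e: "children t0 x = children t x" using ch x by simp
      have "children t x \<subseteq> ?S"
      proof
        fix d assume d: "d \<in> children t x"
        have "d \<in> tnodes t" using children_sub[OF tr] d by blast
        moreover have "d \<in> tnodes t0" using children_sub[OF tr0] d e by blast
        moreover have "(d, m) \<notin> (tedges t)\<^sup>*"
        proof
          assume "(d, m) \<in> (tedges t)\<^sup>*"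
          moreover have "(x, d) \<in> tedges t" using d unfolding children_def by simp
          ultimately have "(x, m) \<in> (tedges t)\<^sup>*" by (meson converse_rtrancl_into_rtrancl)
          then show False using x by simp
        qed
        moreover have "d \<notin> C" using Cpar d xm by blast
        ultimately show "d \<in> ?S" by simp
      qed
      then show "children t0 x \<subseteq> ?S \<and> bij_betw id (children t0 x) (children t (id x))" using e by simp
    qed
    show "\<And>x. x \<in> ?S \<Longrightarrow> x \<in> {} \<Longrightarrow> (\<forall>c\<in>children t0 x \<inter> ?S. Rl D AA t0 c t (id c)) \<Longrightarrow> cc D AA t0 x t (id x)"
      by simp
  qed
  then show ?thesis by simp
qed


lemma descend:
  assumes w: "wf_dtd D" and o: "ok D t" and o0: "ok D t0" and C: "C \<subseteq> children t m"
    and lm: "tlab t m = Elem (uat_elem u)" and u: "u \<in> FF"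
    and lab: "\<And>z. z \<in> tnodes t \<Longrightarrow> z \<in> tnodes t0 \<Longrightarrow> tlab t0 z = tlab t z"
    and val: "\<And>z. z \<in> tnodes t \<Longrightarrow> z \<in> tnodes t0 \<Longrightarrow> z \<notin> C \<Longrightarrow> tval t0 z = tval t z"
    and ch: "\<And>z. z \<in> tnodes t \<Longrightarrow> z \<in> tnodes t0 \<Longrightarrow> z \<noteq> m \<Longrightarrow> children t0 z = children t z"
    and anc: "\<And>z. z \<in> tnodes t \<Longrightarrow> (z, m) \<in> (tedges t)\<^sup>* \<Longrightarrow> z \<in> tnodes t0"
    and nR: "\<not> Rl D AA t m t0 m"
    and c1: "\<forall>A \<in> d_ele D. \<forall>B. d_rg D A = RStar B \<longrightarrow>
         UIns A B \<in> AA \<longrightarrow> UDel A B \<in> AA \<longrightarrow> nothing_forbidden_below D FF B"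
    and c3: "\<forall>A \<in> d_ele D. \<forall>Bs. d_rg D A = RDisj Bs \<longrightarrow>
         (\<forall>Bi \<in> set Bs. (Bi, Bi) \<in> (replace_graph D AA A)\<^sup>+ \<longrightarrow> nothing_forbidden_below D FF Bi)"
  shows "(x, m) \<in> (tedges t)\<^sup>* \<Longrightarrow> \<not> Rl D AA t x t0 x"
proof (induction rule: converse_rtrancl_induct)
  case base then show ?case using nR .
next
  case (step x y)
  have tr: "is_tree t" and tr0: "is_tree t0" using o o0 okD by auto
  have xy: "(x, y) \<in> tedges t" using step.hyps(1) .
  have xt: "x \<in> tnodes t" and yt: "y \<in> tnodes t" using edge_nodes[OF tr xy] by auto
  have xm: "(x, m) \<in> (tedges t)\<^sup>*" using step.hyps by (meson converse_rtrancl_into_rtrancl)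
  have x0: "x \<in> tnodes t0" using anc[OF xt xm] .
  have xnm: "x \<noteq> m"
  proof
    assume "x = m"
    then have "(x, x) \<in> (tedges t)\<^sup>+" using xy step.hyps(2) by (meson rtrancl_into_trancl2)
    then show False using no_cycle[OF w o] by blast
  qed
  have chx: "children t0 x = children t x" using ch[OF xt x0 xnm] .
  have yc: "y \<in> children t x" using xy unfolding children_def by simp
  obtain A where lx: "tlab t x = Elem A"
    and cs: "(tlab t y = Str \<and> d_rg D A = RStr) \<or> (\<exists>B. tlab t y = Elem B \<and> B \<in> subs (d_rg D A))"
    using child_label_cases[OF tr okD(2)[OF o xt] yc] by (cases "tlab t x") auto
  have A: "A \<in> d_ele D" using okD(2)[OF o xt] lx unfolding conf_at_def by simp
  have yS: "tlab t y \<noteq> Str"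
  proof
    assume ys: "tlab t y = Str"
    then have "children t y = {}" using okD(2)[OF o yt] unfolding conf_at_def by simp
    then have "y = m" using step.hyps(2) unfolding children_def
      by (metis converse_rtranclE empty_iff mem_Collect_eq)
    then show False using ys lm by simp
  qed
  then obtain B where ly: "tlab t y = Elem B" and Bs: "B \<in> subs (d_rg D A)" using cs by auto
  have le: "le_D D B (uat_elem u)" using path_le[OF w o step.hyps(2) yt ly lm] .
  have nfb: "\<not> nothing_forbidden_below D FF B" using u le unfolding nothing_forbidden_below_def by blast
  have Q': "\<And>d. d \<in> children t x \<Longrightarrow> d \<noteq> y \<Longrightarrow> Rl D AA t0 d t d"
  proof -
    fix d assume d: "d \<in> children t x" "d \<noteq> y"
    have xd: "(x, d) \<in> tedges t" using d unfolding children_def by simp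
    show "Rl D AA t0 d t d"
    proof (rule unchanged_Rl[OF w o o0 C lab val ch])
      show "d \<in> tnodes t" using edge_nodes[OF tr xd] by simp
      show "d \<in> tnodes t0" using children_sub[OF tr0] d chx by blast
      show "(d, m) \<notin> (tedges t)\<^sup>*" using anc_child_eq[OF w o xd xy _ step.hyps(2)] d(2) by blast
      show "d \<notin> C" using C uniq_parent[OF tr] xd xnm unfolding children_def by blast
    qed
  qed
  have trQ: "\<And>a b c. Rl D AA t a t0 b \<Longrightarrow> Rl D AA t0 b t b \<Longrightarrow> Rl D AA t b t0 c \<Longrightarrow> Rl D AA t a t0 c"
    using Rl_trans by metis
  have fin: "finite (children t x)" using finite_children[OF tr] .
  show ?case
  proof
    assume R: "Rl D AA t x t0 x"
    then have c: "cc D AA t x t0 x" using Rl_iff by blast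
    have "Rl D AA t y t0 y"
    proof (cases "mode D AA (tlab t x)")
      case MFree
      then obtain B0 where "d_rg D A = RStar B0" "UIns A B0 \<in> AA" "UDel A B0 \<in> AA" using mode_inv(1) lx by metis
      moreover then have "B0 = B" using Bs by simp
      ultimately show ?thesis using c1 A nfb by blast
    next
      case MIns
      obtain f where f: "inj_on f (children t x)" "f ` children t x \<subseteq> children t0 x"
        "\<forall>c\<in>children t x. Rl D AA t c t0 (f c)" using ccD(1)[OF c MIns] by blast
      show ?thesis
        by (rule orbit[OF fin f(1) f(2)[unfolded chx] yc, where Q = "\<lambda>a b. Rl D AA t a t0 b"
             and Q' = "\<lambda>d. Rl D AA t0 d t d"]) (use f(3) Q' trQ in blast)+
    next
      case MDel
      obtain g where g: "inj_on g (children t x)" "g ` children t x \<subseteq> children t x"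
        "\<forall>c\<in>children t x. Rl D AA t (g c) t0 c" using ccD(2)[OF c MDel] chx by auto
      have gs: "g ` children t x = children t x" using endo_inj_surj[OF fin g(2) g(1)] .
      then have gb: "bij_betw g (children t x) (children t x)" using g(1) unfolding bij_betw_def by simp
      let ?h = "inv_into (children t x) g"
      have hb: "bij_betw ?h (children t x) (children t x)" using bij_betw_inv_into[OF gb] .
      have hQ: "\<And>c. c \<in> children t x \<Longrightarrow> Rl D AA t c t0 (?h c)"
      proof -
        fix c assume cx: "c \<in> children t x"
        then have "?h c \<in> children t x" using hb bij_betwE by blast
        moreover have "g (?h c) = c" using cx gs f_inv_into_f by metis
        ultimately show "Rl D AA t c t0 (?h c)" using g(3) by metis
      qed
      show ?thesis
        by (rule orbit[OF fin bij_betw_imp_inj_on[OF hb] _ yc, where Q = "\<lambda>a b. Rl D AA t a t0 b"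
             and Q' = "\<lambda>d. Rl D AA t0 d t d"]) (use hb hQ Q' trQ bij_betwE in blast)+
    next
      case MStrF
      then have "d_rg D A = RStr" using mode_inv(2) lx by metis
      then show ?thesis using Bs by simp
    next
      case (MDisj A')
      then have AA': "A' = A" and "\<exists>Bs. d_rg D A = RDisj Bs" using mode_inv(3) lx by metis+
      then obtain Bl where rg: "d_rg D A = RDisj Bl" by blast
      have cx: "children t x = {y}" using children_disj[OF tr okD(2)[OF o xt] lx rg yc] .
      obtain f where f: "bij_betw f (children t x) (children t0 x)"
        "\<forall>c\<in>children t x. Rl D AA t c t0 (f c) \<or> (\<exists>X Y. tlab t c = Elem X \<and> tlab t0 (f c) = Elem Y
            \<and> (X, Y) \<in> (replace_graph D AA A')\<^sup>+)" using ccD(4)[OF c MDisj] by blast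
      have fy: "f y = y" using f(1) cx chx bij_betwE by fastforce
      have ly0: "tlab t0 y = Elem B" using lab[OF yt] children_sub[OF tr0] chx yc ly by auto
      have "Rl D AA t y t0 y \<or> (B, B) \<in> (replace_graph D AA A)\<^sup>+"
        using f(2) cx fy ly ly0 AA' by auto
      moreover have "(B, B) \<notin> (replace_graph D AA A)\<^sup>+" using c3 A rg Bs nfb by auto
      ultimately show ?thesis by blast
    next
      case MBij
      obtain f where f: "bij_betw f (children t x) (children t0 x)"
        "\<forall>c\<in>children t x. Rl D AA t c t0 (f c)" using ccD(5)[OF c MBij] by blast
      have fi: "inj_on f (children t x)" "f ` children t x \<subseteq> children t x"
        using f(1) chx unfolding bij_betw_def by auto
      show ?thesis
        by (rule orbit[OF fin fi yc, where Q = "\<lambda>a b. Rl D AA t a t0 b"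
             and Q' = "\<lambda>d. Rl D AA t0 d t d"]) (use f(2) Q' trQ in blast)+
    qed
    then show False using step.IH by simp
  qed
qed

lemma if_dir:
  assumes w: "wf_dtd D" and pol: "policy D AA FF"
    and c1: "\<forall>A \<in> d_ele D. \<forall>B. d_rg D A = RStar B \<longrightarrow>
         UIns A B \<in> AA \<longrightarrow> UDel A B \<in> AA \<longrightarrow> nothing_forbidden_below D FF B"
    and c2: "\<forall>A \<in> d_ele D. \<forall>Bs. d_rg D A = RDisj Bs \<longrightarrow>
         (replace_graph D AA A)\<^sup>+ \<inter> forbidden_edges FF A = {}"
    and c3: "\<forall>A \<in> d_ele D. \<forall>Bs. d_rg D A = RDisj Bs \<longrightarrow>
         (\<forall>Bi \<in> set Bs. (Bi, Bi) \<in> (replace_graph D AA A)\<^sup>+ \<longrightarrow> nothing_forbidden_below D FF Bi)"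
  shows "consistent D AA FF"
  unfolding consistent_def
proof (intro notI, elim exE conjE)
  fix t ops op0
  assume tI: "t \<in> I_D D (d_rt D)" and al: "allowed D AA t ops"
    and m0: "op0 \<in> sem_uats D FF t" and v0: "valid_upd op0 t" and ni: "\<not> iso (apply_upd op0 t) t"
    and iso2: "iso (apply_seq ops t) (apply_upd op0 t)"
  have AA: "AA \<subseteq> valid_set D" and FFv: "FF \<subseteq> valid_set D" and dj: "AA \<inter> FF = {}"
    using pol unfolding policy_def by auto
  have o: "ok D t" using tI unfolding I_D_iff by simp
  have tr: "is_tree t" using okD[OF o] by simp
  have sq: "ok D (apply_seq ops t) \<and> troot (apply_seq ops t) = troot t
     \<and> Rl D AA t (troot t) (apply_seq ops t) (troot t)" using seq_Rl[OF w AA al o] .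
  obtain u m C where F: "u \<in> FF" "m \<in> tnodes t" "C \<subseteq> children t m" "ok D (apply_upd op0 t)"
    "troot (apply_upd op0 t) = troot t" "m \<in> tnodes (apply_upd op0 t)"
    "tlab t m = Elem (uat_elem u)"
    "\<And>z. z \<in> tnodes t \<Longrightarrow> z \<in> tnodes (apply_upd op0 t) \<Longrightarrow> tlab (apply_upd op0 t) z = tlab t z"
    "\<And>z. z \<in> tnodes t \<Longrightarrow> z \<in> tnodes (apply_upd op0 t) \<Longrightarrow> z \<notin> C \<Longrightarrow> tval (apply_upd op0 t) z = tval t z"
    "\<And>z. z \<in> tnodes t \<Longrightarrow> z \<in> tnodes (apply_upd op0 t) \<Longrightarrow> z \<noteq> m \<Longrightarrow> children (apply_upd op0 t) z = children t z"
    "\<And>z. z \<in> tnodes t \<Longrightarrow> (z, m) \<in> (tedges t)\<^sup>* \<Longrightarrow> z \<in> tnodes (apply_upd op0 t)"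
    "\<not> Rl D AA t m (apply_upd op0 t) m"
    by (rule forb_struct[OF w o FFv v0 m0 dj c2 ni]) (rule that)
  have ok1: "ok D (apply_seq ops t)" and rt1: "troot (apply_seq ops t) = troot t"
    and R1: "Rl D AA t (troot t) (apply_seq ops t) (troot t)" using sq by simp_all
  have R2: "Rl D AA (apply_seq ops t) (troot (apply_seq ops t)) (apply_upd op0 t) (troot (apply_upd op0 t))"
    using iso_Rl[OF w ok1 F(4) iso2] .
  have R: "Rl D AA t (troot t) (apply_upd op0 t) (troot t)"
    using Rl_trans[OF R1] R2 rt1 F(5) by simp
  have rm: "(troot t, m) \<in> (tedges t)\<^sup>*" using is_treeD(6)[OF tr F(2)] .
  show False using descend[OF w o F(4) F(3) F(7) F(1) F(8) F(9) F(10) F(11) F(12) c1 c3 rm] R by blast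
qed

definition eqv :: "'l xtree \<Rightarrow> 'l xtree \<Rightarrow> bool" where
  "eqv t1 t2 \<longleftrightarrow> tnodes t1 = tnodes t2 \<and> troot t1 = troot t2 \<and> tedges t1 = tedges t2
     \<and> (\<forall>x\<in>tnodes t1. tlab t1 x = tlab t2 x \<and> tval t1 x = tval t2 x)"

lemma eqv_refl: "eqv t t" unfolding eqv_def by simp
lemma eqv_sym: "eqv t1 t2 \<Longrightarrow> eqv t2 t1" unfolding eqv_def by auto
lemma eqv_trans: "eqv t1 t2 \<Longrightarrow> eqv t2 t3 \<Longrightarrow> eqv t1 t3" unfolding eqv_def by auto

lemma eqv_iso: "eqv t1 t2 \<Longrightarrow> iso t1 t2"
  unfolding eqv_def iso_def by (intro exI[of _ id]) auto

lemma eqv_ins: "eqv T1 T2 \<Longrightarrow> eqv (ins_tree T1 q s) (ins_tree T2 q s)"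
  unfolding eqv_def ins_tree_def by auto

lemma eqv_del: "eqv T1 T2 \<Longrightarrow> eqv (del_tree T1 n) (del_tree T2 n)"
  unfolding eqv_def del_tree_def Let_def by auto

lemma del_ins:
  assumes eT: "tedges T \<subseteq> tnodes T \<times> tnodes T" and te: "is_tree e"
    and d: "tnodes e \<inter> tnodes T = {}" and q: "q \<in> tnodes T"
  shows "eqv (del_tree (ins_tree T q e) (troot e)) T"
proof -
  let ?E = "tedges (ins_tree T q e)"
  have E: "?E = tedges T \<union> tedges e \<union> {(q, troot e)}" unfolding ins_tree_def by simp
  have De: "{m. (troot e, m) \<in> ?E\<^sup>*} = tnodes e"
  proof
    show "{m. (troot e, m) \<in> ?E\<^sup>*} \<subseteq> tnodes e"
    proof
      fix m assume "m \<in> {m. (troot e, m) \<in> ?E\<^sup>*}"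
      then have "(troot e, m) \<in> ?E\<^sup>*" by simp
      then show "m \<in> tnodes e"
      proof (induction rule: rtrancl_induct)
        case base then show ?case using is_treeD(2)[OF te] .
      next
        case (step y z)
        have "(y, z) \<in> tedges e"
        proof -
          have "(y, z) \<notin> tedges T" using eT step.IH d by blast
          moreover have "y \<noteq> q" using step.IH d q by blast
          ultimately show ?thesis using step.hyps(2) E by blast
        qed
        then show ?case using edge_nodes[OF te] by blast
      qed
    qed
    show "tnodes e \<subseteq> {m. (troot e, m) \<in> ?E\<^sup>*}"
    proof
      fix m assume "m \<in> tnodes e"
      then have "(troot e, m) \<in> (tedges e)\<^sup>*" using is_treeD(6)[OF te] by blast
      moreover have "(tedges e)\<^sup>* \<subseteq> ?E\<^sup>*" using E by (intro rtrancl_mono) blast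
      ultimately show "m \<in> {m. (troot e, m) \<in> ?E\<^sup>*}" by blast
    qed
  qed
  have N: "tnodes (ins_tree T q e) - tnodes e = tnodes T" using d unfolding ins_tree_def by auto
  have eE: "tedges e \<subseteq> tnodes e \<times> tnodes e" using is_treeD(3)[OF te] .
  have "?E \<inter> (tnodes T \<times> tnodes T) = tedges T" using E eT eE d q is_treeD(2)[OF te] by blast
  then show ?thesis unfolding del_tree_def Let_def eqv_def De N using d
    by (auto simp: ins_tree_def)
qed

definition cnt :: "('l lab \<Rightarrow> string \<Rightarrow> bool) \<Rightarrow> 'l xtree \<Rightarrow> nat" where
  "cnt P t = card {x \<in> tnodes t. P (tlab t x) (if tlab t x = Str then tval t x else [])}"

lemma eqv_cnt: "eqv t1 t2 \<Longrightarrow> cnt P t1 = cnt P t2"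
  unfolding eqv_def cnt_def by (metis (no_types, lifting) Collect_cong)

lemma iso_cnt:
  assumes "iso t1 t2"
  shows "cnt P t1 = cnt P t2"
proof -
  obtain f where f: "bij_betw f (tnodes t1) (tnodes t2)"
     "\<forall>x \<in> tnodes t1. tlab t2 (f x) = tlab t1 x"
     "\<forall>x \<in> tnodes t1. tlab t1 x = Str \<longrightarrow> tval t2 (f x) = tval t1 x"
    using assms unfolding iso_def by blast
  let ?Q1 = "\<lambda>x. P (tlab t1 x) (if tlab t1 x = Str then tval t1 x else [])"
  let ?Q2 = "\<lambda>x. P (tlab t2 x) (if tlab t2 x = Str then tval t2 x else [])"
  have Q: "\<And>x. x \<in> tnodes t1 \<Longrightarrow> ?Q2 (f x) = ?Q1 x" using f(2,3) by simp
  have img: "f ` {x \<in> tnodes t1. ?Q1 x} = {y \<in> tnodes t2. ?Q2 y}"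
  proof
    show "f ` {x \<in> tnodes t1. ?Q1 x} \<subseteq> {y \<in> tnodes t2. ?Q2 y}"
    proof
      fix y assume "y \<in> f ` {x \<in> tnodes t1. ?Q1 x}"
      then obtain x where x: "x \<in> tnodes t1" "?Q1 x" "y = f x" by blast
      have "f x \<in> tnodes t2" using f(1) x(1) bij_betwE by blast
      then show "y \<in> {y \<in> tnodes t2. ?Q2 y}" using Q[OF x(1)] x by simp
    qed
    show "{y \<in> tnodes t2. ?Q2 y} \<subseteq> f ` {x \<in> tnodes t1. ?Q1 x}"
    proof
      fix y assume y: "y \<in> {y \<in> tnodes t2. ?Q2 y}"
      then obtain x where x: "x \<in> tnodes t1" "y = f x" using f(1) bij_betw_imp_surj_on by blast
      have "?Q2 (f x)" using y x(2) by blast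
      then have "?Q1 x" using Q[OF x(1)] by (rule rev_iffD1)
      then show "y \<in> f ` {x \<in> tnodes t1. ?Q1 x}" using x by blast
    qed
  qed
  have inj: "inj_on f {x \<in> tnodes t1. ?Q1 x}"
    by (rule inj_on_subset[OF bij_betw_imp_inj_on[OF f(1)]]) blast
  have "card {x \<in> tnodes t1. ?Q1 x} = card (f ` {x \<in> tnodes t1. ?Q1 x})" using card_image[OF inj] by simp
  also have "\<dots> = card {y \<in> tnodes t2. ?Q2 y}" using img by simp
  finally show ?thesis unfolding cnt_def .
qed

lemma cnt_ins:
  assumes fT: "finite (tnodes T)" and fs: "finite (tnodes s)" and d: "tnodes s \<inter> tnodes T = {}"
  shows "cnt P (ins_tree T q s) = cnt P T + cnt P s"
proof -
  let ?Q = "\<lambda>t x. P (tlab t x) (if tlab t x = Str then tval t x else [])"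
  have "{x \<in> tnodes (ins_tree T q s). ?Q (ins_tree T q s) x} = {x \<in> tnodes T. ?Q T x} \<union> {x \<in> tnodes s. ?Q s x}"
    using d unfolding ins_tree_def by auto
  moreover have "{x \<in> tnodes T. ?Q T x} \<inter> {x \<in> tnodes s. ?Q s x} = {}" using d by auto
  ultimately show ?thesis unfolding cnt_def using fT fs by (simp add: card_Un_disjoint)
qed

definition leaf :: "nat \<Rightarrow> 'l lab \<Rightarrow> 'l xtree" where
  "leaf k L = \<lparr>tnodes = {k}, tedges = {}, tlab = (\<lambda>_. L), troot = k, tval = (\<lambda>_. [])\<rparr>"

lemma leaf_simps: "tnodes (leaf k L) = {k}" "tedges (leaf k L) = {}" "tlab (leaf k L) x = L"
  "troot (leaf k L) = k" "children (leaf k L) x = {}" "child_labels (leaf k L) x = {#}"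
  unfolding leaf_def children_def child_labels_def by simp_all

lemma leaf_tree: "is_tree (leaf k L)"
  unfolding is_tree_def leaf_def by simp

lemma fresh_nat: "finite (N :: nat set) \<Longrightarrow> \<exists>k. k \<notin> N"
  using ex_new_if_finite[OF infinite_UNIV_nat] by blast

lemma build:
  assumes finN: "finite N"
    and hyp: "\<forall>C \<in> set Cs. \<forall>N'. finite N' \<longrightarrow> (\<exists>s \<in> I_D D C. tnodes s \<inter> N' = {})"
  shows "\<exists>T. is_tree T \<and> tlab T (troot T) = Elem X \<and> (\<forall>x\<in>tnodes T. x \<noteq> troot T \<longrightarrow> conf_at D T x)
     \<and> child_labels T (troot T) = mset (map Elem Cs) \<and> tnodes T \<inter> N = {}"
  using hyp
proof (induction Cs)
  case Nil
  obtain k where k: "k \<notin> N" using fresh_nat[OF finN] by blast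
  show ?case
    by (rule exI[of _ "leaf k (Elem X)"]) (use k leaf_tree in \<open>simp add: leaf_simps\<close>)
next
  case (Cons C Cs)
  obtain T where T: "is_tree T" "tlab T (troot T) = Elem X" "\<forall>x\<in>tnodes T. x \<noteq> troot T \<longrightarrow> conf_at D T x"
     "child_labels T (troot T) = mset (map Elem Cs)" "tnodes T \<inter> N = {}" using Cons by auto
  have "finite (N \<union> tnodes T)" using finN is_treeD(1)[OF T(1)] by simp
  then obtain s where s: "s \<in> I_D D C" "tnodes s \<inter> (N \<union> tnodes T) = {}" using Cons.prems by auto
  have os: "ok D s" and ls: "tlab s (troot s) = Elem C" using s(1) unfolding I_D_iff by simp_all
  have ts: "is_tree s" using okD[OF os] by simp
  have r: "troot T \<in> tnodes T" using is_treeD(2)[OF T(1)] .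
  have d: "tnodes s \<inter> tnodes T = {}" using s(2) by blast
  interpret I: ins_ctx T s "troot T" using T(1) ts r d by unfold_locales
  let ?T = "ins_tree T (troot T) s"
  show ?case
  proof (rule exI[of _ ?T], intro conjI)
    show "is_tree ?T" using I.is_tree .
    show "tlab ?T (troot ?T) = Elem X" using I.lab_t[OF r] T(2) I.simps(2) by simp
    show "\<forall>x\<in>tnodes ?T. x \<noteq> troot ?T \<longrightarrow> conf_at D ?T x"
    proof (intro ballI impI)
      fix x assume x: "x \<in> tnodes ?T" "x \<noteq> troot ?T"
      then have "x \<in> tnodes T \<or> x \<in> tnodes s" using I.simps(1) by simp
      then show "conf_at D ?T x"
      proof
        assume xT: "x \<in> tnodes T"
        have "x \<noteq> troot T" using x(2) I.simps(2) by simp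
        then show ?thesis using I.conf_t[OF xT] T(3) xT by simp
      next
        assume xs: "x \<in> tnodes s"
        then show ?thesis using I.conf_s okD(2)[OF os] by simp
      qed
    qed
    show "child_labels ?T (troot ?T) = mset (map Elem (C # Cs))"
      using I.child_labels_t[OF r] T(4) ls I.simps(2) by simp
    show "tnodes ?T \<inter> N = {}" using I.simps(1) T(5) s(2) by blast
  qed
qed

lemma build_ok:
  assumes "is_tree T" "tlab T (troot T) = Elem X" "\<forall>x\<in>tnodes T. x \<noteq> troot T \<longrightarrow> conf_at D T x"
    "X \<in> d_ele D" "word_ok (d_rg D X) (child_labels T (troot T))"
  shows "T \<in> I_D D X"
  unfolding I_D_iff ok_def using assms unfolding conf_at_def by auto

lemma wf_conv: "wf_dtd D \<Longrightarrow> wf ((sub_rel D)\<inverse>)"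
proof -
  assume w: "wf_dtd D"
  have "finite (sub_rel D)" using sub_rel_sub[OF w] w unfolding wf_dtd_def
    by (meson finite_SigmaI finite_subset)
  moreover have "acyclic (sub_rel D)" using w unfolding wf_dtd_def by simp
  ultimately show ?thesis using finite_acyclic_wf_converse by blast
qed

lemma subs_ele: "wf_dtd D \<Longrightarrow> A \<in> d_ele D \<Longrightarrow> B \<in> subs (d_rg D A) \<Longrightarrow> B \<in> d_ele D"
  unfolding wf_dtd_def by blast

lemma exists_fresh:
  assumes w: "wf_dtd D"
  shows "A \<in> d_ele D \<Longrightarrow> finite N \<Longrightarrow> \<exists>s\<in>I_D D A. tnodes s \<inter> N = {}"
proof (induction A arbitrary: N rule: wf_induct_rule[OF wf_conv[OF w]])
  case (1 A)
  have hyp: "\<And>Cs. set Cs \<subseteq> subs (d_rg D A) \<Longrightarrow> \<forall>C \<in> set Cs. \<forall>N'. finite N' \<longrightarrow> (\<exists>s \<in> I_D D C. tnodes s \<inter> N' = {})"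
  proof (intro ballI allI impI)
    fix Cs C and N' :: "nat set" assume Cs: "set Cs \<subseteq> subs (d_rg D A)" and C: "C \<in> set Cs" and N': "finite N'"
    have "C \<in> subs (d_rg D A)" using Cs C by blast
    then have "(C, A) \<in> (sub_rel D)\<inverse>" and "C \<in> d_ele D" using 1(2) sub_rel_I subs_ele[OF w] by auto
    then show "\<exists>s \<in> I_D D C. tnodes s \<inter> N' = {}" using 1(1) N' by blast
  qed
  have rok: "rg_ok (d_rg D A)" using w 1(2) unfolding wf_dtd_def by blast
  have mk: "\<And>Cs. set Cs \<subseteq> subs (d_rg D A) \<Longrightarrow> word_ok (d_rg D A) (mset (map Elem Cs)) \<Longrightarrow> \<exists>s\<in>I_D D A. tnodes s \<inter> N = {}"
  proof -
    fix Cs assume Cs: "set Cs \<subseteq> subs (d_rg D A)" and wo: "word_ok (d_rg D A) (mset (map Elem Cs))"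
    obtain T where T: "is_tree T" "tlab T (troot T) = Elem A" "\<forall>x\<in>tnodes T. x \<noteq> troot T \<longrightarrow> conf_at D T x"
      "child_labels T (troot T) = mset (map Elem Cs)" "tnodes T \<inter> N = {}"
      using build[OF 1(3) hyp[OF Cs], of A] by blast
    have "T \<in> I_D D A" using build_ok[OF T(1-3) 1(2)] T(4) wo by simp
    then show "\<exists>s\<in>I_D D A. tnodes s \<inter> N = {}" using T(5) by blast
  qed
  show ?case
  proof (cases "d_rg D A")
    case RStr
    obtain k where k: "k \<notin> N" using fresh_nat[OF 1(3)] by blast
    obtain k' where k': "k' \<notin> N \<union> {k}" using fresh_nat 1(3) by (meson finite_insert finite_Un finite.emptyI)
    let ?T = "ins_tree (leaf k (Elem A)) k (leaf k' Str)"
    interpret I: ins_ctx "leaf k (Elem A)" "leaf k' Str" k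
      using leaf_tree k' by unfold_locales (auto simp: leaf_simps)
    have kk: "k' \<noteq> k" using k' by simp
    have T: "?T \<in> I_D D A"
      unfolding I_D_iff ok_def
    proof (intro conjI ballI)
      show "is_tree ?T" using I.is_tree .
      show "tlab ?T (troot ?T) = Elem A" using I.simps(2,5) kk by (simp add: leaf_simps)
      fix x assume "x \<in> tnodes ?T"
      then have "x = k \<or> x = k'" using I.simps(1) by (auto simp: leaf_simps)
      then show "conf_at D ?T x"
      proof
        assume x: "x = k"
        have "child_labels ?T k = {#Str#}" using I.child_labels_t[of k] kk by (simp add: leaf_simps)
        then show ?thesis unfolding conf_at_def using x I.simps(5) kk RStr 1(2) by (simp add: leaf_simps)
      next
        assume x: "x = k'"
        have "children ?T k' = {}" using I.children_s[of k'] by (simp add: leaf_simps)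
        then show ?thesis unfolding conf_at_def using x I.simps(4) by (simp add: leaf_simps)
      qed
    qed
    show ?thesis using T k k' I.simps(1) by (intro bexI[OF _ T]) (auto simp: leaf_simps)
  next
    case REps then show ?thesis using mk[of "[]"] by simp
  next
    case (RConc Bs) then show ?thesis using mk[of Bs] by simp
  next
    case (RDisj Bs)
    then have "Bs \<noteq> []" using rok by simp
    then show ?thesis using mk[of "[hd Bs]"] RDisj by simp
  next
    case (RStar B) then show ?thesis using mk[of "[]"] by simp
  qed
qed


lemma attach:
  assumes w: "wf_dtd D" and XY: "(X, Y) \<in> sub_rel D" and s: "s \<in> I_D D Y" and finN: "finite N"
  shows "\<exists>T. is_tree T \<and> tnodes T \<inter> (N \<union> tnodes s) = {} \<and> ins_tree T (troot T) s \<in> I_D D X"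
proof -
  have X: "X \<in> d_ele D" and Y: "Y \<in> subs (d_rg D X)" using XY unfolding sub_rel_def by auto
  have os: "ok D s" and ls: "tlab s (troot s) = Elem Y" using s unfolding I_D_iff by simp_all
  have ts: "is_tree s" using okD[OF os] by simp
  have fin2: "finite (N \<union> tnodes s)" using finN is_treeD(1)[OF ts] by simp
  obtain Cs where Cs: "set Cs \<subseteq> subs (d_rg D X)"
    and wo: "word_ok (d_rg D X) (mset (map Elem Cs) + {#Elem Y#})"
  proof (cases "d_rg D X")
    case (RConc Bs)
    then have YB: "Y \<in> set Bs" using Y by simp
    have e1: "add_mset Y (mset (remove1 Y Bs)) = mset Bs" using YB by (simp add: insert_DiffM)
    have "mset (map Elem (remove1 Y Bs)) + {#Elem Y#} = image_mset Elem (add_mset Y (mset (remove1 Y Bs)))"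
      by simp
    also have "\<dots> = mset (map Elem Bs)" using e1 by simp
    finally have "mset (map Elem (remove1 Y Bs)) + {#Elem Y#} = mset (map Elem Bs)" .
    then show ?thesis using that[of "remove1 Y Bs"] RConc by (simp add: set_remove1_subset)
  next
    case (RDisj Bs) then show ?thesis using that[of "[]"] Y by simp
  next
    case (RStar B) then show ?thesis using that[of "[]"] Y by simp
  qed (use Y in auto)
  have hyp: "\<forall>C \<in> set Cs. \<forall>N'. finite N' \<longrightarrow> (\<exists>s \<in> I_D D C. tnodes s \<inter> N' = {})"
    using exists_fresh[OF w] subs_ele[OF w X] Cs by blast
  obtain T where T: "is_tree T" "tlab T (troot T) = Elem X" "\<forall>x\<in>tnodes T. x \<noteq> troot T \<longrightarrow> conf_at D T x"
      "child_labels T (troot T) = mset (map Elem Cs)" "tnodes T \<inter> (N \<union> tnodes s) = {}"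
    using build[OF fin2 hyp, of X] by blast
  have r: "troot T \<in> tnodes T" using is_treeD(2)[OF T(1)] .
  have d: "tnodes s \<inter> tnodes T = {}" using T(5) by blast
  interpret I: ins_ctx T s "troot T" using T(1) ts r d by unfold_locales
  let ?T = "ins_tree T (troot T) s"
  have "?T \<in> I_D D X"
    unfolding I_D_iff ok_def
  proof (intro conjI ballI)
    show "is_tree ?T" using I.is_tree .
    show "tlab ?T (troot ?T) = Elem X" using I.lab_t[OF r] T(2) I.simps(2) by simp
    fix x assume x: "x \<in> tnodes ?T"
    then have "x \<in> tnodes T \<or> x \<in> tnodes s" using I.simps(1) by simp
    then show "conf_at D ?T x"
    proof
      assume xT: "x \<in> tnodes T"
      show ?thesis
      proof (cases "x = troot T")
        case False then show ?thesis using I.conf_t[OF xT] T(3) xT by simp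
      next
        case True
        have "child_labels ?T x = mset (map Elem Cs) + {#Elem Y#}"
          using I.child_labels_t[OF r] T(4) ls True by simp
        then show ?thesis unfolding conf_at_def using wo X I.lab_t[OF r] T(2) True by simp
      qed
    next
      assume xs: "x \<in> tnodes s"
      then show ?thesis using I.conf_s okD(2)[OF os] by simp
    qed
  qed
  then show ?thesis using T(1,5) by blast
qed

lemma lift_node:
  assumes w: "wf_dtd D"
  shows "(X, A) \<in> (sub_rel D)\<^sup>* \<Longrightarrow> X \<in> d_ele D \<Longrightarrow> finite N \<Longrightarrow>
    \<exists>t\<in>I_D D X. tnodes t \<inter> N = {} \<and> (\<exists>q\<in>tnodes t. tlab t q = Elem A)"
proof (induction arbitrary: N rule: converse_rtrancl_induct)
  case base
  obtain t where t: "t \<in> I_D D A" "tnodes t \<inter> N = {}" using exists_fresh[OF w base] by blast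
  have "troot t \<in> tnodes t" "tlab t (troot t) = Elem A"
    using t(1) is_treeD(2) okD(1) unfolding I_D_iff by auto
  then show ?case using t by blast
next
  case (step X Y)
  have Y: "Y \<in> d_ele D" using step.hyps(1) sub_rel_sub[OF w] by blast
  obtain tY q where tY: "tY \<in> I_D D Y" "tnodes tY \<inter> N = {}" "q \<in> tnodes tY" "tlab tY q = Elem A"
    using step.IH[OF Y step.prems(2)] by blast
  obtain T where T: "is_tree T" "tnodes T \<inter> (N \<union> tnodes tY) = {}" "ins_tree T (troot T) tY \<in> I_D D X"
    using attach[OF w step.hyps(1) tY(1) step.prems(2)] by blast
  have "tnodes (ins_tree T (troot T) tY) \<inter> N = {}" using T(2) tY(2) by (auto simp: ins_tree_def)
  moreover have "q \<in> tnodes (ins_tree T (troot T) tY)" "tlab (ins_tree T (troot T) tY) q = Elem A"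
    using tY(3,4) by (auto simp: ins_tree_def)
  ultimately show ?case using T(3) by blast
qed

lemma comm_ins:
  assumes "tnodes e \<inter> tnodes T = {}" "tnodes e \<inter> tnodes s = {}" "tnodes s \<inter> tnodes T = {}"
  shows "eqv (ins_tree (ins_tree T q s) n e) (ins_tree T q (ins_tree s n e))"
  using assms unfolding eqv_def ins_tree_def by auto

lemma comm_str:
  assumes "n \<in> tnodes s"
  shows "eqv ((ins_tree T q s)\<lparr>tval := (tval (ins_tree T q s))(n := v)\<rparr>) (ins_tree T q (s\<lparr>tval := (tval s)(n := v)\<rparr>))"
  using assms unfolding eqv_def ins_tree_def by auto

lemma comm_del:
  assumes eT: "tedges T \<subseteq> tnodes T \<times> tnodes T" and ts: "is_tree s" and d: "tnodes s \<inter> tnodes T = {}"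
    and q: "q \<in> tnodes T" and n: "n \<in> tnodes s" and nr: "n \<noteq> troot s"
  shows "eqv (del_tree (ins_tree T q s) n) (ins_tree T q (del_tree s n))"
proof -
  let ?E = "tedges (ins_tree T q s)"
  have E: "?E = tedges T \<union> tedges s \<union> {(q, troot s)}" unfolding ins_tree_def by simp
  let ?Ds = "{m. (n, m) \<in> (tedges s)\<^sup>*}"
  have Ds_sub: "?Ds \<subseteq> tnodes s"
  proof
    fix m assume "m \<in> ?Ds"
    then have "(n, m) \<in> (tedges s)\<^sup>*" by simp
    then show "m \<in> tnodes s" by (induction rule: rtrancl_induct) (use n edge_nodes[OF ts] in blast)+
  qed
  have De: "{m. (n, m) \<in> ?E\<^sup>*} = ?Ds"
  proof
    show "{m. (n, m) \<in> ?E\<^sup>*} \<subseteq> ?Ds"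
    proof
      fix m assume "m \<in> {m. (n, m) \<in> ?E\<^sup>*}"
      then have "(n, m) \<in> ?E\<^sup>*" by simp
      then show "m \<in> ?Ds"
      proof (induction rule: rtrancl_induct)
        case base then show ?case by simp
      next
        case (step y z)
        have ys: "y \<in> tnodes s" using step.IH Ds_sub by blast
        have "(y, z) \<in> tedges s"
        proof -
          have "(y, z) \<notin> tedges T" using eT ys d by blast
          moreover have "y \<noteq> q" using ys d q by blast
          ultimately show ?thesis using step.hyps(2) E by blast
        qed
        then show ?case using step.IH by (simp add: rtrancl_into_rtrancl)
      qed
    qed
    show "?Ds \<subseteq> {m. (n, m) \<in> ?E\<^sup>*}"
    proof -
      have "(tedges s)\<^sup>* \<subseteq> ?E\<^sup>*" using E by (intro rtrancl_mono) blast
      then show ?thesis by blast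
    qed
  qed
  have rs: "troot s \<notin> ?Ds"
  proof
    assume "troot s \<in> ?Ds"
    then have "(n, troot s) \<in> (tedges s)\<^sup>+" using nr by (simp add: rtrancl_eq_or_trancl)
    then obtain y where "(y, troot s) \<in> tedges s" using tranclD2 by metis
    then show False using is_treeD(4)[OF ts] by blast
  qed
  have rsn: "troot s \<in> tnodes s" using is_treeD(2)[OF ts] .
  have eS: "tedges s \<subseteq> tnodes s \<times> tnodes s" using is_treeD(3)[OF ts] .
  have N: "tnodes (ins_tree T q s) - ?Ds = tnodes T \<union> (tnodes s - ?Ds)"
    using Ds_sub d unfolding ins_tree_def by auto
  have Ed: "?E \<inter> ((tnodes T \<union> (tnodes s - ?Ds)) \<times> (tnodes T \<union> (tnodes s - ?Ds)))
     = tedges T \<union> (tedges s \<inter> ((tnodes s - ?Ds) \<times> (tnodes s - ?Ds))) \<union> {(q, troot s)}"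
    using E eT eS d q rs rsn by blast
  have 1: "tnodes (del_tree (ins_tree T q s) n) = tnodes (ins_tree T q (del_tree s n))"
    unfolding del_tree_def Let_def De N by (simp add: ins_tree_def)
  have 2: "troot (del_tree (ins_tree T q s) n) = troot (ins_tree T q (del_tree s n))"
    unfolding del_tree_def Let_def by (simp add: ins_tree_def)
  have 3: "tedges (del_tree (ins_tree T q s) n) = tedges (ins_tree T q (del_tree s n))"
    unfolding del_tree_def Let_def De N Ed by (simp add: ins_tree_def)
  have 4: "\<forall>x \<in> tnodes (del_tree (ins_tree T q s) n). tlab (del_tree (ins_tree T q s) n) x = tlab (ins_tree T q (del_tree s n)) x \<and>
          tval (del_tree (ins_tree T q s) n) x = tval (ins_tree T q (del_tree s n)) x"
  proof
    fix x assume x: "x \<in> tnodes (del_tree (ins_tree T q s) n)"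
    then have "x \<in> tnodes T \<union> (tnodes s - ?Ds)" unfolding del_tree_def Let_def De N by simp
    then show "tlab (del_tree (ins_tree T q s) n) x = tlab (ins_tree T q (del_tree s n)) x \<and>
          tval (del_tree (ins_tree T q s) n) x = tval (ins_tree T q (del_tree s n)) x"
      using d unfolding del_tree_def Let_def by (auto simp: ins_tree_def)
  qed
  show ?thesis unfolding eqv_def using 1 2 3 4 by blast
qed


fun tgt :: "'l upd \<Rightarrow> nat" where
  "tgt (Insert n e) = n" | "tgt (Delete n) = n" | "tgt (ReplaceT n e) = n" | "tgt (ReplaceS n v) = n"

fun newn :: "'l upd \<Rightarrow> nat set" where
  "newn (Insert n e) = tnodes e" | "newn (Delete n) = {}" | "newn (ReplaceT n e) = tnodes e"
| "newn (ReplaceS n v) = {}"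

definition good_op :: "'l dtd \<Rightarrow> 'l uat \<Rightarrow> nat set \<Rightarrow> 'l xtree \<Rightarrow> 'l upd \<Rightarrow> bool" where
  "good_op D u N s op \<longleftrightarrow> valid_upd op s \<and> matches D s op u \<and> newn op \<inter> (N \<union> tnodes s) = {}
     \<and> (\<exists>P. cnt P (apply_upd op s) \<noteq> cnt P s) \<and> tgt op \<in> tnodes s \<and> finite (newn op)"

lemma nodes_apply:
  assumes "is_tree s"
  shows "tnodes (apply_upd op s) \<subseteq> tnodes s \<union> newn op"
  by (cases op) (auto simp: ins_tree_def del_tree_def Let_def)

lemma plab_ins:
  assumes ts: "is_tree s" and d: "tnodes s \<inter> tnodes T = {}"
    and pl: "parent_labelled s n A"
  shows "parent_labelled (ins_tree T q s) n A"
proof -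
  obtain p where p: "(p, n) \<in> tedges s" "tlab s p = Elem A" using pl unfolding parent_labelled_def by blast
  have "p \<in> tnodes s" using edge_nodes[OF ts p(1)] by simp
  then show ?thesis using p d unfolding parent_labelled_def by (auto simp: ins_tree_def)
qed

lemma pl_notroot: "is_tree s \<Longrightarrow> parent_labelled s n A \<Longrightarrow> n \<noteq> troot s"
  unfolding parent_labelled_def using is_treeD(4) by blast

lemma pl_edge: "parent_labelled s n A \<Longrightarrow> \<exists>p. (p, n) \<in> tedges s"
  unfolding parent_labelled_def by blast

lemma transfer:
  assumes w: "wf_dtd D" and os: "ok D s" and tT: "is_tree T" and d: "tnodes s \<inter> tnodes T = {}"
    and q: "q \<in> tnodes T" and g: "good_op D u N s op" and fr: "newn op \<inter> tnodes T = {}"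
  shows "good_op D u N (ins_tree T q s) op \<and> eqv (apply_upd op (ins_tree T q s)) (ins_tree T q (apply_upd op s))"
proof -
  have ts: "is_tree s" using okD[OF os] by simp
  have eT: "tedges T \<subseteq> tnodes T \<times> tnodes T" using is_treeD(3)[OF tT] .
  have g1: "valid_upd op s" "matches D s op u" "newn op \<inter> (N \<union> tnodes s) = {}"
     "\<exists>P. cnt P (apply_upd op s) \<noteq> cnt P s" "tgt op \<in> tnodes s" "finite (newn op)"
    using g unfolding good_op_def by auto
  have nins: "tnodes (ins_tree T q s) = tnodes T \<union> tnodes s" by (simp add: ins_tree_def)
  have labs: "\<And>x. x \<in> tnodes s \<Longrightarrow> tlab (ins_tree T q s) x = tlab s x" by (simp add: ins_tree_def)
  have E: "eqv (apply_upd op (ins_tree T q s)) (ins_tree T q (apply_upd op s))"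
  proof (cases op)
    case (Insert n e)
    have "tnodes e \<inter> tnodes T = {}" "tnodes e \<inter> tnodes s = {}" using fr g1(1) Insert by auto
    then show ?thesis using comm_ins d Insert by simp
  next
    case (Delete n)
    have pl: "\<exists>A. parent_labelled s n A" using g1(2) Delete by (cases u) auto
    have nr: "n \<noteq> troot s" using pl pl_notroot[OF ts] by blast
    show ?thesis using comm_del[OF eT ts d q _ nr] g1(5) Delete by simp
  next
    case (ReplaceT n e)
    have pl: "\<exists>A. parent_labelled s n A" using g1(2) ReplaceT by (cases u) auto
    have nr: "n \<noteq> troot s" using pl pl_notroot[OF ts] by blast
    obtain A where "parent_labelled s n A" using pl by blast
    then obtain p where p: "(p, n) \<in> tedges s" unfolding parent_labelled_def by blast
    have ns: "n \<in> tnodes s" using g1(5) ReplaceT by simp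
    interpret I: ins_ctx T s q using tT ts q d by unfold_locales
    have p1: "parent (ins_tree T q s) n = p"
      using parent_eq[OF I.is_tree] p by (simp add: ins_tree_def)
    have p2: "parent s n = p" using parent_eq[OF ts p] .
    have de: "tnodes e \<inter> tnodes T = {}" "tnodes e \<inter> tnodes s = {}" using fr g1(1) ReplaceT by auto
    have e1: "eqv (ins_tree (del_tree (ins_tree T q s) n) p e) (ins_tree (ins_tree T q (del_tree s n)) p e)"
      using eqv_ins[OF comm_del[OF eT ts d q ns nr]] .
    have e2: "eqv (ins_tree (ins_tree T q (del_tree s n)) p e) (ins_tree T q (ins_tree (del_tree s n) p e))"
      by (rule comm_ins) (use de d in \<open>auto simp: del_tree_def Let_def\<close>)
    show ?thesis using eqv_trans[OF e1 e2] ReplaceT p1 p2 by simp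
  next
    case (ReplaceS n v)
    then show ?thesis using comm_str g1(5) by simp
  qed
  have valid': "valid_upd op (ins_tree T q s)"
    using g1(1) fr nins by (cases op) auto
  have match': "matches D (ins_tree T q s) op u"
  proof (cases op)
    case (Insert n e)
    then show ?thesis using g1(2,5) labs by (cases u) auto
  next
    case (Delete n)
    then show ?thesis using g1(2,5) labs plab_ins[OF ts d] by (cases u) auto
  next
    case (ReplaceT n e)
    then show ?thesis using g1(2,5) labs plab_ins[OF ts d] by (cases u) auto
  next
    case (ReplaceS n v)
    then show ?thesis using g1(2,5) labs plab_ins[OF ts d] by (cases u) auto
  qed
  have fin: "finite (tnodes T)" "finite (tnodes s)" using is_treeD(1) tT ts by auto
  have fa: "finite (tnodes (apply_upd op s))" using nodes_apply[OF ts] fin g1(6) finite_subset by blast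
  have da: "tnodes (apply_upd op s) \<inter> tnodes T = {}" using nodes_apply[OF ts] d fr by blast
  obtain P where P: "cnt P (apply_upd op s) \<noteq> cnt P s" using g1(4) by blast
  have "cnt P (apply_upd op (ins_tree T q s)) = cnt P T + cnt P (apply_upd op s)"
    using eqv_cnt[OF E] cnt_ins[OF fin(1) fa da] by simp
  moreover have "cnt P (ins_tree T q s) = cnt P T + cnt P s" using cnt_ins[OF fin d] .
  ultimately have "cnt P (apply_upd op (ins_tree T q s)) \<noteq> cnt P (ins_tree T q s)" using P by simp
  then have "good_op D u N (ins_tree T q s) op"
    unfolding good_op_def using valid' match' g1(3,5,6) fr nins by auto
  then show ?thesis using E by simp
qed

lemma labels_ge:
  assumes w: "wf_dtd D" and e: "e \<in> I_D D Z" and x: "x \<in> tnodes e" and l: "tlab e x = Elem W"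
  shows "le_D D Z W"
proof -
  have o: "ok D e" and r: "tlab e (troot e) = Elem Z" using e unfolding I_D_iff by simp_all
  have tr: "is_tree e" using okD[OF o] by simp
  show ?thesis using path_le[OF w o is_treeD(6)[OF tr x] is_treeD(2)[OF tr] r l] .
qed

lemma le_antisym:
  assumes w: "wf_dtd D" and "le_D D X Y" "le_D D Y X"
  shows "X = Y"
proof (rule ccontr)
  assume ne: "X \<noteq> Y"
  have "(X, Y) \<in> (sub_rel D)\<^sup>+" using assms(2) ne unfolding le_D_def by (simp add: rtrancl_eq_or_trancl)
  moreover have "(Y, X) \<in> (sub_rel D)\<^sup>*" using assms(3) unfolding le_D_def by simp
  ultimately have "(X, X) \<in> (sub_rel D)\<^sup>+" by simp
  then show False using w unfolding wf_dtd_def acyclic_def by blast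
qed

lemma cnt_pos:
  assumes "finite (tnodes t)" "x \<in> tnodes t" "P (tlab t x) (if tlab t x = Str then tval t x else [])"
  shows "cnt P t > 0"
  unfolding cnt_def using assms by (auto simp: card_gt_0_iff)

lemma cnt_zero:
  assumes "\<forall>x\<in>tnodes t. \<not> P (tlab t x) (if tlab t x = Str then tval t x else [])"
  shows "cnt P t = 0"
proof -
  have "{x \<in> tnodes t. P (tlab t x) (if tlab t x = Str then tval t x else [])} = {}" using assms by blast
  then show ?thesis unfolding cnt_def by (simp only: card.empty)
qed

lemma lab_cnt_diff:
  assumes w: "wf_dtd D" and eX: "eX \<in> I_D D X" and eY: "eY \<in> I_D D Y" and ne: "X \<noteq> Y"
  shows "\<exists>P. cnt P eX \<noteq> cnt P eY"
proof -
  have oX: "ok D eX" and rX: "tlab eX (troot eX) = Elem X" using eX unfolding I_D_iff by simp_all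
  have oY: "ok D eY" and rY: "tlab eY (troot eY) = Elem Y" using eY unfolding I_D_iff by simp_all
  have tX: "is_tree eX" and tY: "is_tree eY" using okD oX oY by auto
  show ?thesis
  proof (cases "le_D D Y X")
    case False
    let ?P = "\<lambda>L (v::string). L = Elem X"
    have "cnt ?P eX > 0" using cnt_pos[OF is_treeD(1)[OF tX] is_treeD(2)[OF tX]] rX by simp
    moreover have "cnt ?P eY = 0" using labels_ge[OF w eY] False by (intro cnt_zero) auto
    ultimately show ?thesis by (intro exI[of _ ?P]) simp
  next
    case True
    then have nXY: "\<not> le_D D X Y" using le_antisym[OF w] ne by blast
    let ?P = "\<lambda>L (v::string). L = Elem Y"
    have "cnt ?P eY > 0" using cnt_pos[OF is_treeD(1)[OF tY] is_treeD(2)[OF tY]] rY by simp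
    moreover have "cnt ?P eX = 0" using labels_ge[OF w eX] nXY by (intro cnt_zero) auto
    ultimately show ?thesis by (intro exI[of _ ?P]) simp
  qed
qed

lemma rep_cnt:
  assumes w: "wf_dtd D" and tT: "is_tree T" and q: "q \<in> tnodes T"
    and eX: "eX \<in> I_D D X" and eY: "eY \<in> I_D D Y" and ne: "X \<noteq> Y"
    and d1: "tnodes eX \<inter> tnodes T = {}" and d2: "tnodes eY \<inter> tnodes T = {}"
  shows "\<exists>P. cnt P (ins_tree (del_tree (ins_tree T q eX) (troot eX)) q eY) \<noteq> cnt P (ins_tree T q eX)"
proof -
  have tX: "is_tree eX" and tY: "is_tree eY" using eX eY okD unfolding I_D_iff by auto
  obtain P where P: "cnt P eX \<noteq> cnt P eY" using lab_cnt_diff[OF w eX eY ne] by blast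
  have eT: "tedges T \<subseteq> tnodes T \<times> tnodes T" using is_treeD(3)[OF tT] .
  have e: "eqv (ins_tree (del_tree (ins_tree T q eX) (troot eX)) q eY) (ins_tree T q eY)"
    using eqv_ins[OF del_ins[OF eT tX d1 q]] .
  have fT: "finite (tnodes T)" and fX: "finite (tnodes eX)" and fY: "finite (tnodes eY)"
    using is_treeD(1) tT tX tY by auto
  have "cnt P (ins_tree (del_tree (ins_tree T q eX) (troot eX)) q eY) = cnt P T + cnt P eY"
    using eqv_cnt[OF e] cnt_ins[OF fT fY d2] by simp
  moreover have "cnt P (ins_tree T q eX) = cnt P T + cnt P eX" using cnt_ins[OF fT fX d1] .
  ultimately show ?thesis using P by (intro exI[of _ P]) simp
qed


lemma I_D_tree: "s \<in> I_D D A \<Longrightarrow> is_tree s" unfolding I_D_iff ok_def by simp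
lemma I_D_ok: "s \<in> I_D D A \<Longrightarrow> ok D s" unfolding I_D_iff by simp
lemma I_D_lab: "s \<in> I_D D A \<Longrightarrow> tlab s (troot s) = Elem A" unfolding I_D_iff by simp

lemma fin_nodes: "s \<in> I_D D A \<Longrightarrow> finite (tnodes s)" by (rule is_treeD(1)[OF I_D_tree])

lemma base_ins:
  assumes w: "wf_dtd D" and C: "C \<in> d_ele D" and rg: "d_rg D C = RStar E" and finN: "finite N"
  shows "\<exists>s\<in>I_D D C. tnodes s \<inter> N = {} \<and> (\<exists>op. good_op D (UIns C E) N s op)"
proof -
  obtain s where s: "s \<in> I_D D C" "tnodes s \<inter> N = {}" using exists_fresh[OF w C finN] by blast
  have E: "E \<in> d_ele D" using subs_ele[OF w C] rg by simp
  have f2: "finite (N \<union> tnodes s)" using finN fin_nodes[OF s(1)] by simp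
  obtain e where e: "e \<in> I_D D E" "tnodes e \<inter> (N \<union> tnodes s) = {}" using exists_fresh[OF w E f2] by blast
  have ts: "is_tree s" and te: "is_tree e" using I_D_tree[OF s(1)] I_D_tree[OF e(1)] by simp_all
  let ?op = "Insert (troot s) e"
  let ?P = "\<lambda>(L::'a lab) (v::string). True"
  have d: "tnodes e \<inter> tnodes s = {}" using e(2) by blast
  have "cnt ?P (apply_upd ?op s) = cnt ?P s + cnt ?P e"
    using cnt_ins[OF fin_nodes[OF s(1)] fin_nodes[OF e(1)] d] by simp
  moreover have "cnt ?P e > 0" using cnt_pos[OF fin_nodes[OF e(1)] is_treeD(2)[OF te]] by simp
  ultimately have "cnt ?P (apply_upd ?op s) \<noteq> cnt ?P s" by simp
  moreover have "valid_upd ?op s" using is_treeD(2)[OF ts] d by simp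
  moreover have "matches D s ?op (UIns C E)" using I_D_lab[OF s(1)] e(1) by simp
  moreover have "newn ?op \<inter> (N \<union> tnodes s) = {}" using e(2) by simp
  moreover have "tgt ?op \<in> tnodes s" using is_treeD(2)[OF ts] by simp
  moreover have "finite (newn ?op)" using fin_nodes[OF e(1)] by simp
  ultimately have "good_op D (UIns C E) N s ?op" unfolding good_op_def by blast
  then show ?thesis using s by blast
qed

lemma base_del:
  assumes w: "wf_dtd D" and C: "C \<in> d_ele D" and rg: "d_rg D C = RStar E" and finN: "finite N"
  shows "\<exists>s\<in>I_D D C. tnodes s \<inter> N = {} \<and> (\<exists>op. good_op D (UDel C E) N s op)"
proof -
  obtain s0 where s0: "s0 \<in> I_D D C" "tnodes s0 \<inter> N = {}" using exists_fresh[OF w C finN] by blast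
  have E: "E \<in> d_ele D" using subs_ele[OF w C] rg by simp
  have f2: "finite (N \<union> tnodes s0)" using finN fin_nodes[OF s0(1)] by simp
  obtain e where e: "e \<in> I_D D E" "tnodes e \<inter> (N \<union> tnodes s0) = {}" using exists_fresh[OF w E f2] by blast
  have ts: "is_tree s0" and te: "is_tree e" using I_D_tree[OF s0(1)] I_D_tree[OF e(1)] by simp_all
  have d: "tnodes e \<inter> tnodes s0 = {}" using e(2) by blast
  have r0: "troot s0 \<in> tnodes s0" using is_treeD(2)[OF ts] .
  have l0: "tlab s0 (troot s0) = Elem C" using I_D_lab[OF s0(1)] .
  note F = ins_facts[OF w I_D_ok[OF s0(1)] r0 d e(1) l0 C rg]
  let ?s = "ins_tree s0 (troot s0) e"
  have sI: "?s \<in> I_D D C" unfolding I_D_iff using F(1,2,4) r0 l0 by simp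
  have fr: "tnodes ?s \<inter> N = {}" using F(3) s0(2) e(2) by blast
  let ?op = "Delete (troot e)"
  let ?P = "\<lambda>(L::'a lab) (v::string). True"
  have re: "troot e \<in> tnodes e" using is_treeD(2)[OF te] .
  have eT: "tedges s0 \<subseteq> tnodes s0 \<times> tnodes s0" using is_treeD(3)[OF ts] .
  have "cnt ?P (apply_upd ?op ?s) = cnt ?P s0" using eqv_cnt[OF del_ins[OF eT te d r0]] by simp
  moreover have "cnt ?P ?s = cnt ?P s0 + cnt ?P e" using cnt_ins[OF fin_nodes[OF s0(1)] fin_nodes[OF e(1)] d] .
  moreover have "cnt ?P e > 0" using cnt_pos[OF fin_nodes[OF e(1)] re] by simp
  ultimately have cn: "cnt ?P (apply_upd ?op ?s) \<noteq> cnt ?P ?s" by simp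
  have pl: "parent_labelled ?s (troot e) C"
    unfolding parent_labelled_def using F(4)[OF r0] l0 by (intro exI[of _ "troot s0"]) (simp add: ins_tree_def)
  have "valid_upd ?op ?s" using F(3) re by simp
  moreover have "matches D ?s ?op (UDel C E)" using pl F(9) by simp
  moreover have "newn ?op \<inter> (N \<union> tnodes ?s) = {}" by simp
  moreover have "tgt ?op \<in> tnodes ?s" using F(3) re by simp
  moreover have "finite (newn ?op)" by simp
  ultimately have "good_op D (UDel C E) N ?s ?op" unfolding good_op_def using cn by blast
  then show ?thesis using sI fr by blast
qed


lemma base_rep:
  assumes w: "wf_dtd D" and C: "C \<in> d_ele D" and rg: "d_rg D C = RDisj Bs" and X: "X \<in> set Bs"
    and Y: "Y \<in> set Bs" and ne: "X \<noteq> Y" and finN: "finite N"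
  shows "\<exists>s\<in>I_D D C. tnodes s \<inter> N = {} \<and> (\<exists>op. good_op D (URep C X Y) N s op)"
proof -
  have Xe: "X \<in> d_ele D" and Ye: "Y \<in> d_ele D" using subs_ele[OF w C] rg X Y by auto
  have CX: "(C, X) \<in> sub_rel D" using sub_rel_I[OF C] rg X by simp
  obtain eX where eX: "eX \<in> I_D D X" "tnodes eX \<inter> N = {}" using exists_fresh[OF w Xe finN] by blast
  obtain T where T: "is_tree T" "tnodes T \<inter> (N \<union> tnodes eX) = {}" "ins_tree T (troot T) eX \<in> I_D D C"
    using attach[OF w CX eX(1) finN] by blast
  let ?s = "ins_tree T (troot T) eX"
  have fT: "finite (tnodes T)" using is_treeD(1)[OF T(1)] .
  have sN: "tnodes ?s = tnodes T \<union> tnodes eX" by (simp add: ins_tree_def)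
  have f2: "finite (N \<union> tnodes ?s)" using finN fT fin_nodes[OF eX(1)] sN by simp
  obtain eY where eY: "eY \<in> I_D D Y" "tnodes eY \<inter> (N \<union> tnodes ?s) = {}" using exists_fresh[OF w Ye f2] by blast
  have tX: "is_tree eX" using I_D_tree[OF eX(1)] .
  have rT: "troot T \<in> tnodes T" using is_treeD(2)[OF T(1)] .
  have rX: "troot eX \<in> tnodes eX" using is_treeD(2)[OF tX] .
  have d1: "tnodes eX \<inter> tnodes T = {}" using T(2) by blast
  have d2: "tnodes eY \<inter> tnodes T = {}" using eY(2) sN by blast
  let ?op = "ReplaceT (troot eX) eY"
  interpret I: ins_ctx T eX "troot T" using T(1) tX rT d1 by unfold_locales
  have par: "parent ?s (troot eX) = troot T" using parent_eq[OF I.is_tree] by (simp add: ins_tree_def)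
  have ap: "apply_upd ?op ?s = ins_tree (del_tree (ins_tree T (troot T) eX) (troot eX)) (troot T) eY"
    using par by simp
  obtain P where P: "cnt P (apply_upd ?op ?s) \<noteq> cnt P ?s"
    using rep_cnt[OF w T(1) rT eX(1) eY(1) ne d1 d2] ap by auto
  have lr: "tlab ?s (troot T) = Elem C" using I_D_lab[OF T(3)] by (simp add: ins_tree_def)
  have pl: "parent_labelled ?s (troot eX) C"
    unfolding parent_labelled_def using lr by (intro exI[of _ "troot T"]) (simp add: ins_tree_def)
  have "valid_upd ?op ?s" using sN rX eY(2) by auto
  moreover have "matches D ?s ?op (URep C X Y)" using pl eY(1) ne I_D_lab[OF eX(1)] rX
    by (simp add: ins_tree_def)
  moreover have "newn ?op \<inter> (N \<union> tnodes ?s) = {}" using eY(2) by simp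
  moreover have "tgt ?op \<in> tnodes ?s" using sN rX by simp
  moreover have "finite (newn ?op)" using fin_nodes[OF eY(1)] by simp
  ultimately have "good_op D (URep C X Y) N ?s ?op" unfolding good_op_def using P by blast
  moreover have "tnodes ?s \<inter> N = {}" using sN T(2) eX(2) by blast
  ultimately show ?thesis using T(3) by blast
qed

lemma base_str:
  assumes w: "wf_dtd D" and C: "C \<in> d_ele D" and rg: "d_rg D C = RStr" and finN: "finite N"
  shows "\<exists>s\<in>I_D D C. tnodes s \<inter> N = {} \<and> (\<exists>op. good_op D (URepStr C) N s op)"
proof -
  obtain s where s: "s \<in> I_D D C" "tnodes s \<inter> N = {}" using exists_fresh[OF w C finN] by blast
  have ts: "is_tree s" and os: "ok D s" using I_D_tree[OF s(1)] I_D_ok[OF s(1)] by simp_all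
  have r: "troot s \<in> tnodes s" using is_treeD(2)[OF ts] .
  have l: "tlab s (troot s) = Elem C" using I_D_lab[OF s(1)] .
  have "child_labels s (troot s) = {#Str#}" using okD(2)[OF os r] l rg unfolding conf_at_def by simp
  then have "children s (troot s) \<noteq> {}" unfolding child_labels_def by auto
  then obtain n where n: "n \<in> children s (troot s)" by blast
  have ln: "tlab s n = Str" using children_str[OF ts okD(2)[OF os r] l rg n] by simp
  have e: "(troot s, n) \<in> tedges s" using n unfolding children_def by simp
  have nt: "n \<in> tnodes s" using edge_nodes[OF ts e] by simp
  let ?v = "CHR ''a'' # tval s n"
  let ?op = "ReplaceS n ?v"
  let ?P = "\<lambda>L v. L = Str \<and> v = tval s n"
  let ?t = "s\<lparr>tval := (tval s)(n := ?v)\<rparr>"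
  define S where "S = {x \<in> tnodes s. ?P (tlab s x) (if tlab s x = Str then tval s x else [])}"
  have e1: "cnt ?P ?t = card (S - {n})" unfolding cnt_def S_def by (rule arg_cong[where f=card]) auto
  have e2: "cnt ?P s = card S" unfolding cnt_def S_def by simp
  have nS: "n \<in> S" unfolding S_def using nt ln by simp
  have fS: "finite S" unfolding S_def using fin_nodes[OF s(1)] by simp
  have "cnt ?P ?t < cnt ?P s" unfolding e1 e2 using card_Diff1_less[OF fS nS] .
  then have P: "cnt ?P (apply_upd ?op s) \<noteq> cnt ?P s" by simp
  have pl: "parent_labelled s n C" unfolding parent_labelled_def using e l by blast
  have "valid_upd ?op s" using nt by simp
  moreover have "matches D s ?op (URepStr C)" using pl ln by simp
  moreover have "newn ?op \<inter> (N \<union> tnodes s) = {}" by simp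
  moreover have "tgt ?op \<in> tnodes s" using nt by simp
  moreover have "finite (newn ?op)" by simp
  ultimately have "good_op D (URepStr C) N s ?op" unfolding good_op_def using P by blast
  then show ?thesis using s by blast
qed

lemma base_good:
  assumes w: "wf_dtd D" and vu: "valid_uat D u" and finN: "finite N"
  shows "\<exists>s\<in>I_D D (uat_elem u). tnodes s \<inter> N = {} \<and> (\<exists>op. good_op D u N s op)"
proof (cases u)
  case (UIns C E) then show ?thesis using base_ins[OF w _ _ finN] vu by simp
next
  case (UDel C E) then show ?thesis using base_del[OF w _ _ finN] vu by simp
next
  case (URep C X Y)
  then obtain Bs where "C \<in> d_ele D" "X \<noteq> Y" "d_rg D C = RDisj Bs" "X \<in> set Bs" "Y \<in> set Bs" using vu by auto
  then show ?thesis using base_rep[OF w _ _ _ _ _ finN] URep by simp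
next
  case (URepStr C) then show ?thesis using base_str[OF w _ _ finN] vu by simp
qed

lemma lift_good:
  assumes w: "wf_dtd D"
    and base: "\<And>N. finite N \<Longrightarrow> \<exists>s\<in>I_D D C. tnodes s \<inter> N = {} \<and> (\<exists>op. good_op D u N s op)"
  shows "(B, C) \<in> (sub_rel D)\<^sup>* \<Longrightarrow> finite N \<Longrightarrow> \<exists>s\<in>I_D D B. tnodes s \<inter> N = {} \<and> (\<exists>op. good_op D u N s op)"
proof (induction arbitrary: N rule: converse_rtrancl_induct)
  case base then show ?case using assms(2) by blast
next
  case (step X Y)
  obtain sY op where sY: "sY \<in> I_D D Y" "tnodes sY \<inter> N = {}" and g: "good_op D u N sY op"
    using step.IH[OF step.prems] by blast
  have fn: "finite (newn op)" using g unfolding good_op_def by simp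
  have f2: "finite (N \<union> newn op)" using step.prems fn by simp
  obtain T where T: "is_tree T" "tnodes T \<inter> (N \<union> newn op \<union> tnodes sY) = {}" "ins_tree T (troot T) sY \<in> I_D D X"
    using attach[OF w step.hyps(1) sY(1) f2] by blast
  have rT: "troot T \<in> tnodes T" using is_treeD(2)[OF T(1)] .
  have d: "tnodes sY \<inter> tnodes T = {}" using T(2) by blast
  have fr: "newn op \<inter> tnodes T = {}" using T(2) by blast
  have "good_op D u N (ins_tree T (troot T) sY) op"
    using transfer[OF w I_D_ok[OF sY(1)] T(1) d rT g fr] by simp
  moreover have "tnodes (ins_tree T (troot T) sY) \<inter> N = {}" using T(2) sY(2) by (auto simp: ins_tree_def)
  ultimately show ?case using T(3) by blast
qed

lemma chain:
  assumes w: "wf_dtd D" and AAv: "AA \<subseteq> valid_set D"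
    and XY: "(X, Y) \<in> (replace_graph D AA A)\<^sup>+"
    and lq: "tlab t q = Elem A" and rg: "d_rg D A = RDisj Bs" and sY: "sY \<in> I_D D Y"
  shows "ok D t \<Longrightarrow> (q, n) \<in> tedges t \<Longrightarrow> tlab t q = Elem A \<Longrightarrow> tlab t n = Elem X
    \<Longrightarrow> tnodes sY \<inter> tnodes t = {}
    \<Longrightarrow> \<exists>ops. ops \<noteq> [] \<and> allowed D AA t ops \<and> eqv (apply_seq ops t) (ins_tree (del_tree t n) q sY)"
  using XY
proof (induction arbitrary: t n rule: converse_trancl_induct)
  case (base X)
  have G: "URep A X Y \<in> AA" using base.hyps unfolding replace_graph_def by simp
  have vu: "valid_uat D (URep A X Y)" using valid_setD[OF G AAv] .
  have ne: "X \<noteq> Y" using vu by simp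
  have tr: "is_tree t" using okD[OF base.prems(1)] by simp
  have nt: "n \<in> tnodes t" using edge_nodes[OF tr base.prems(2)] by simp
  let ?op = "ReplaceT n sY"
  have pl: "parent_labelled t n A" unfolding parent_labelled_def using base.prems(2,3) by blast
  have "valid_upd ?op t" using nt base.prems(5) by simp
  moreover have "?op \<in> sem_uats D AA t" unfolding sem_uats_def
    by (simp, intro bexI[OF _ G]) (use pl base.prems(4) sY ne in simp)
  moreover have "apply_upd ?op t = ins_tree (del_tree t n) q sY" using parent_eq[OF tr base.prems(2)] by simp
  ultimately have "allowed D AA t [?op] \<and> eqv (apply_seq [?op] t) (ins_tree (del_tree t n) q sY)"
    using eqv_refl by simp
  then show ?case by blast
next
  case (step X Z)
  have G: "URep A X Z \<in> AA" and ZB: "Z \<in> subs (d_rg D A)" using step.hyps(1) unfolding replace_graph_def by auto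
  have vu: "valid_uat D (URep A X Z)" using valid_setD[OF G AAv] .
  have ne: "X \<noteq> Z" and A: "A \<in> d_ele D" using vu by auto
  have Zs: "Z \<in> set Bs" using ZB rg by simp
  have Ze: "Z \<in> d_ele D" using subs_ele[OF w A ZB] .
  have o: "ok D t" using step.prems(1) .
  have tr: "is_tree t" using okD[OF o] by simp
  have e: "(q, n) \<in> tedges t" using step.prems(2) .
  have nt: "n \<in> tnodes t" and qt: "q \<in> tnodes t" using edge_nodes[OF tr e] by auto
  have nr: "n \<noteq> troot t" using is_treeD(4)[OF tr] e by blast
  have f2: "finite (tnodes t \<union> tnodes sY)" using is_treeD(1)[OF tr] fin_nodes[OF sY] by simp
  obtain sZ where sZ: "sZ \<in> I_D D Z" "tnodes sZ \<inter> (tnodes t \<union> tnodes sY) = {}"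
    using exists_fresh[OF w Ze f2] by blast
  have dZ: "tnodes sZ \<inter> tnodes t = {}" using sZ(2) by blast
  note F = rep_facts[OF w o e step.prems(3) rg Zs sZ(1) dZ]
  let ?t1 = "ins_tree (del_tree t n) q sZ"
  have tZ: "is_tree sZ" using I_D_tree[OF sZ(1)] .
  have rZ: "troot sZ \<in> tnodes sZ" using is_treeD(2)[OF tZ] .
  have e1: "(q, troot sZ) \<in> tedges ?t1" by (simp add: ins_tree_def)
  have q1: "q \<in> tnodes ?t1" using F(4,5) by blast
  have lq1: "tlab ?t1 q = Elem A" using F(6)[OF qt q1] step.prems(3) by simp
  have n1: "tnodes ?t1 \<subseteq> tnodes t \<union> tnodes sZ" by (auto simp: ins_tree_def del_tree_def Let_def)
  have dY: "tnodes sY \<inter> tnodes ?t1 = {}" using n1 sZ(2) step.prems(5) by blast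
  obtain ops where ops: "ops \<noteq> []" "allowed D AA ?t1 ops"
      "eqv (apply_seq ops ?t1) (ins_tree (del_tree ?t1 (troot sZ)) q sY)"
    using step.IH[OF F(1) e1 lq1 F(11) dY] by blast
  let ?op = "ReplaceT n sZ"
  have pl: "parent_labelled t n A" unfolding parent_labelled_def using e step.prems(3) by blast
  have ap: "apply_upd ?op t = ?t1" using F(12) by simp
  have "valid_upd ?op t" using nt dZ by simp
  moreover have "?op \<in> sem_uats D AA t" unfolding sem_uats_def
    by (simp, intro bexI[OF _ G]) (use pl step.prems(4) sZ(1) ne in simp)
  ultimately have al: "allowed D AA t (?op # ops)" using ops(2) ap by simp
  interpret Dl: del_ctx t n using tr nt nr by unfold_locales
  have eD: "tedges (del_tree t n) \<subseteq> tnodes (del_tree t n) \<times> tnodes (del_tree t n)"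
    using is_treeD(3)[OF Dl.is_tree] .
  have dZ': "tnodes sZ \<inter> tnodes (del_tree t n) = {}" using dZ Dl.K_sub Dl.simps(1) by blast
  have "eqv (ins_tree (del_tree ?t1 (troot sZ)) q sY) (ins_tree (del_tree t n) q sY)"
    using eqv_ins[OF del_ins[OF eD tZ dZ' F(5)]] .
  then have "eqv (apply_seq (?op # ops) t) (ins_tree (del_tree t n) q sY)"
    using eqv_trans[OF ops(3)] ap by simp
  then show ?case using al by blast
qed

lemma s0_I_D:
  assumes w: "wf_dtd D" and s: "s \<in> I_D D B" and g: "good_op D u N s op" and vu: "valid_uat D u"
  shows "apply_upd op s \<in> I_D D B"
proof -
  have v: "valid_upd op s" and m: "matches D s op u" using g unfolding good_op_def by auto
  have "{u} \<subseteq> valid_set D" using vu unfolding valid_set_def by simp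
  moreover have "op \<in> sem_uats D {u} s" using m unfolding sem_uats_def by simp
  ultimately have R: "ok D (apply_upd op s) \<and> troot (apply_upd op s) = troot s
     \<and> Rl D {u} s (troot s) (apply_upd op s) (troot s)" using step_Rl[OF w I_D_ok[OF s] _ v] by blast
  then have "tlab (apply_upd op s) (troot s) = tlab s (troot s)" using Rl_lab by metis
  then show ?thesis unfolding I_D_iff using R I_D_lab[OF s] by simp
qed

lemma good_ni: "good_op D u N t op \<Longrightarrow> \<not> iso (apply_upd op t) t"
  unfolding good_op_def using iso_cnt by metis

lemma root_node:
  assumes w: "wf_dtd D" and A: "A \<in> d_ele D" and finN: "finite N"
  shows "\<exists>T\<in>I_D D (d_rt D). tnodes T \<inter> N = {} \<and> (\<exists>q\<in>tnodes T. tlab T q = Elem A)"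
proof -
  have "le_D D (d_rt D) A" and "d_rt D \<in> d_ele D" using w A unfolding wf_dtd_def by auto
  then show ?thesis using lift_node[OF w _ _ finN] unfolding le_D_def by blast
qed

lemma disj_child:
  assumes o: "ok D T" and q: "q \<in> tnodes T" and l: "tlab T q = Elem A" and rg: "d_rg D A = RDisj Bs"
  shows "\<exists>c. (q, c) \<in> tedges T"
proof -
  have "word_ok (d_rg D A) (child_labels T q)" using okD(2)[OF o q] l unfolding conf_at_def by simp
  then obtain X where "child_labels T q = {#Elem X#}" using rg by auto
  then have "children T q \<noteq> {}" unfolding child_labels_def by auto
  then show ?thesis unfolding children_def by auto
qed

lemma not_consistentI:
  assumes "t \<in> I_D D (d_rt D)" "ops \<noteq> []" "allowed D AA t ops" "op0 \<in> sem_uats D FF t"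
    "valid_upd op0 t" "\<not> iso (apply_upd op0 t) t" "iso (apply_seq ops t) (apply_upd op0 t)"
  shows "\<not> consistent D AA FF"
  unfolding consistent_def using assms by blast

lemma not_c1:
  assumes w: "wf_dtd D" and pol: "policy D AA FF" and A: "A \<in> d_ele D" and rg: "d_rg D A = RStar B"
    and ins: "UIns A B \<in> AA" and del: "UDel A B \<in> AA" and nf: "\<not> nothing_forbidden_below D FF B"
  shows "\<not> consistent D AA FF"
proof -
  have AAv: "AA \<subseteq> valid_set D" and FFv: "FF \<subseteq> valid_set D" using pol unfolding policy_def by auto
  obtain u where u: "u \<in> FF" "le_D D B (uat_elem u)" using nf unfolding nothing_forbidden_below_def by blast
  have vu: "valid_uat D u" using valid_setD[OF u(1) FFv] .
  have bg: "\<And>N. finite N \<Longrightarrow> \<exists>s\<in>I_D D (uat_elem u). tnodes s \<inter> N = {} \<and> (\<exists>op. good_op D u N s op)"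
    using base_good[OF w vu] .
  have "\<exists>s\<in>I_D D B. tnodes s \<inter> {} = {} \<and> (\<exists>op. good_op D u {} s op)"
    by (rule lift_good[OF w bg]) (use u(2) in \<open>simp_all add: le_D_def\<close>)
  then obtain s op0 where s: "s \<in> I_D D B" and g: "good_op D u {} s op0" by blast
  have ts: "is_tree s" using I_D_tree[OF s] .
  have fn: "finite (newn op0)" using g unfolding good_op_def by simp
  have fN1: "finite (tnodes s \<union> newn op0)" using fin_nodes[OF s] fn by simp
  from root_node[OF w A fN1] obtain T where T1: "T \<in> I_D D (d_rt D)"
    and T23: "tnodes T \<inter> (tnodes s \<union> newn op0) = {} \<and> (\<exists>q\<in>tnodes T. tlab T q = Elem A)" ..
  from T23 have T2: "tnodes T \<inter> (tnodes s \<union> newn op0) = {}" by (rule conjunct1)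
  from T23 have "\<exists>q\<in>tnodes T. tlab T q = Elem A" by (rule conjunct2)
  then obtain q where q1: "q \<in> tnodes T" and q2: "tlab T q = Elem A" ..
  note T = T1 T2 and q = q1 q2
  have tT: "is_tree T" using I_D_tree[OF T(1)] .
  have d: "tnodes s \<inter> tnodes T = {}" using T(2) by blast
  have fr: "newn op0 \<inter> tnodes T = {}" using T(2) by blast
  note F = ins_facts[OF w I_D_ok[OF T(1)] q(1) d s q(2) A rg]
  let ?t = "ins_tree T q s"
  have rT: "troot T \<in> tnodes T" using is_treeD(2)[OF tT] .
  have tI: "?t \<in> I_D D (d_rt D)" unfolding I_D_iff using F(1) F(2) F(4)[OF rT] I_D_lab[OF T(1)] by simp
  have tr: "good_op D u {} ?t op0" "eqv (apply_upd op0 ?t) (ins_tree T q (apply_upd op0 s))"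
    using transfer[OF w I_D_ok[OF s] tT d q(1) g fr] by auto
  let ?s0 = "apply_upd op0 s"
  have s0: "?s0 \<in> I_D D B" using s0_I_D[OF w s g vu] .
  have rs: "troot s \<in> tnodes s" using is_treeD(2)[OF ts] .
  let ?op1 = "Delete (troot s)"
  let ?t1 = "del_tree ?t (troot s)"
  have eT: "tedges T \<subseteq> tnodes T \<times> tnodes T" using is_treeD(3)[OF tT] .
  have e1: "eqv ?t1 T" using del_ins[OF eT ts d q(1)] .
  have n1: "tnodes ?t1 = tnodes T" and l1: "tlab ?t1 q = Elem A" using e1 q unfolding eqv_def by auto
  let ?op2 = "Insert q ?s0"
  have ns0: "tnodes ?s0 \<subseteq> tnodes s \<union> newn op0" using nodes_apply[OF ts] .
  have d0: "tnodes ?s0 \<inter> tnodes ?t1 = {}" using ns0 T(2) n1 by blast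
  have v1: "valid_upd ?op1 ?t" using F(3) rs by simp
  have pl: "parent_labelled ?t (troot s) A" unfolding parent_labelled_def
    using q(2) F(4)[OF q(1)] by (intro exI[of _ q]) (simp add: ins_tree_def)
  have m1: "?op1 \<in> sem_uats D AA ?t" unfolding sem_uats_def
    by (simp, intro bexI[OF _ del]) (use pl F(9) in simp)
  have v2: "valid_upd ?op2 ?t1" using n1 q(1) d0 by simp
  have m2: "?op2 \<in> sem_uats D AA ?t1" unfolding sem_uats_def
    by (simp, intro bexI[OF _ ins]) (use l1 s0 in simp)
  have al: "allowed D AA ?t [?op1, ?op2]" using v1 m1 v2 m2 by simp
  have fin: "eqv (apply_seq [?op1, ?op2] ?t) (apply_upd op0 ?t)"
    using eqv_trans[OF eqv_ins[OF e1] eqv_sym[OF tr(2)]] by simp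
  have v0: "valid_upd op0 ?t" and m0: "matches D ?t op0 u" using tr(1) unfolding good_op_def by auto
  have "op0 \<in> sem_uats D FF ?t" unfolding sem_uats_def using m0 u(1) by blast
  moreover have "\<not> iso (apply_upd op0 ?t) ?t" using good_ni[OF tr(1)] .
  ultimately show ?thesis using not_consistentI[OF tI _ al _ v0 _ eqv_iso[OF fin]] by simp
qed


lemma start_disj:
  assumes w: "wf_dtd D" and A: "A \<in> d_ele D" and rg: "d_rg D A = RDisj Bs" and B: "B \<in> set Bs"
    and s: "s \<in> I_D D B" and finN: "finite N"
  shows "\<exists>T q. is_tree T \<and> q \<in> tnodes T \<and> tnodes T \<inter> (N \<union> tnodes s) = {}
     \<and> ins_tree T q s \<in> I_D D (d_rt D) \<and> tlab (ins_tree T q s) q = Elem A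
     \<and> (\<exists>c T'. T' \<in> I_D D (d_rt D) \<and> (q, c) \<in> tedges T' \<and> tlab T' q = Elem A \<and> T = del_tree T' c
          \<and> tnodes s \<inter> tnodes T' = {})"
proof -
  have fN1: "finite (N \<union> tnodes s)" using finN fin_nodes[OF s] by simp
  from root_node[OF w A fN1] obtain T' where T1: "T' \<in> I_D D (d_rt D)"
    and T23: "tnodes T' \<inter> (N \<union> tnodes s) = {} \<and> (\<exists>q\<in>tnodes T'. tlab T' q = Elem A)" ..
  from T23 have T2: "tnodes T' \<inter> (N \<union> tnodes s) = {}" by (rule conjunct1)
  from T23 have "\<exists>q\<in>tnodes T'. tlab T' q = Elem A" by (rule conjunct2)
  then obtain q where q1: "q \<in> tnodes T'" and q2: "tlab T' q = Elem A" ..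
  have o: "ok D T'" using I_D_ok[OF T1] .
  have tr: "is_tree T'" using okD[OF o] by simp
  obtain c where c: "(q, c) \<in> tedges T'" using disj_child[OF o q1 q2 rg] by blast
  have d: "tnodes s \<inter> tnodes T' = {}" using T2 by blast
  note F = rep_facts[OF w o c q2 rg B s d]
  have ct: "c \<in> tnodes T'" using edge_nodes[OF tr c] by simp
  have cr: "c \<noteq> troot T'" using is_treeD(4)[OF tr] c by blast
  interpret Dl: del_ctx T' c using tr ct cr by unfold_locales
  have rT: "troot T' \<in> tnodes T'" using is_treeD(2)[OF tr] .
  have r0': "troot (ins_tree (del_tree T' c) q s) \<in> tnodes (ins_tree (del_tree T' c) q s)"
    using is_treeD(2)[OF okD(1)[OF F(1)]] .
  have r0: "troot T' \<in> tnodes (ins_tree (del_tree T' c) q s)" using r0' F(2) by simp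
  have tI: "ins_tree (del_tree T' c) q s \<in> I_D D (d_rt D)"
    unfolding I_D_iff using F(1) F(2) F(6)[OF rT r0] I_D_lab[OF T1] by simp
  have q0: "q \<in> tnodes (ins_tree (del_tree T' c) q s)" using F(4,5) by blast
  have lq: "tlab (ins_tree (del_tree T' c) q s) q = Elem A"
    using F(6)[OF q1 q0] q2 by simp
  have "tnodes (del_tree T' c) \<inter> (N \<union> tnodes s) = {}" using T2 Dl.K_sub Dl.simps(1) by blast
  then show ?thesis using Dl.is_tree F(5) tI lq T1 c q2 d by blast
qed


lemma not_c3:
  assumes w: "wf_dtd D" and pol: "policy D AA FF" and A: "A \<in> d_ele D" and rg: "d_rg D A = RDisj Bs"
    and Bi: "Bi \<in> set Bs" and cyc: "(Bi, Bi) \<in> (replace_graph D AA A)\<^sup>+"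
    and nf: "\<not> nothing_forbidden_below D FF Bi"
  shows "\<not> consistent D AA FF"
proof -
  have AAv: "AA \<subseteq> valid_set D" and FFv: "FF \<subseteq> valid_set D" using pol unfolding policy_def by auto
  obtain u where u: "u \<in> FF" "le_D D Bi (uat_elem u)" using nf unfolding nothing_forbidden_below_def by blast
  have vu: "valid_uat D u" using valid_setD[OF u(1) FFv] .
  have bg: "\<And>N. finite N \<Longrightarrow> \<exists>s\<in>I_D D (uat_elem u). tnodes s \<inter> N = {} \<and> (\<exists>op. good_op D u N s op)"
    using base_good[OF w vu] .
  have "\<exists>s\<in>I_D D Bi. tnodes s \<inter> {} = {} \<and> (\<exists>op. good_op D u {} s op)"
    by (rule lift_good[OF w bg]) (use u(2) in \<open>simp_all add: le_D_def\<close>)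
  then obtain s op0 where s: "s \<in> I_D D Bi" and g: "good_op D u {} s op0" by blast
  have ts: "is_tree s" using I_D_tree[OF s] .
  have fn: "finite (newn op0)" using g unfolding good_op_def by simp
  obtain T q where Tq: "is_tree T" "q \<in> tnodes T" "tnodes T \<inter> (newn op0 \<union> tnodes s) = {}"
     "ins_tree T q s \<in> I_D D (d_rt D)" "tlab (ins_tree T q s) q = Elem A"
    using start_disj[OF w A rg Bi s fn] by blast
  let ?t = "ins_tree T q s"
  have d: "tnodes s \<inter> tnodes T = {}" using Tq(3) by blast
  have fr: "newn op0 \<inter> tnodes T = {}" using Tq(3) by blast
  have tr: "good_op D u {} ?t op0" "eqv (apply_upd op0 ?t) (ins_tree T q (apply_upd op0 s))"
    using transfer[OF w I_D_ok[OF s] Tq(1) d Tq(2) g fr] by auto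
  let ?s0 = "apply_upd op0 s"
  have s0: "?s0 \<in> I_D D Bi" using s0_I_D[OF w s g vu] .
  have ns0: "tnodes ?s0 \<subseteq> tnodes s \<union> newn op0" using nodes_apply[OF ts] .
  obtain Z where Z1: "(Bi, Z) \<in> replace_graph D AA A" and Z2: "(Z, Bi) \<in> (replace_graph D AA A)\<^sup>*"
    using tranclD[OF cyc] by blast
  have G: "URep A Bi Z \<in> AA" and ZB: "Z \<in> subs (d_rg D A)" using Z1 unfolding replace_graph_def by auto
  have ne: "Bi \<noteq> Z" using valid_setD[OF G AAv] by simp
  have ZBi: "(Z, Bi) \<in> (replace_graph D AA A)\<^sup>+" using Z2 ne by (simp add: rtrancl_eq_or_trancl)
  have Zs: "Z \<in> set Bs" using ZB rg by simp
  have Ze: "Z \<in> d_ele D" using subs_ele[OF w A ZB] .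
  have ot: "ok D ?t" using I_D_ok[OF Tq(4)] .
  have tt: "is_tree ?t" using okD(1)[OF ot] .
  have f2: "finite (tnodes ?t \<union> tnodes ?s0)" using is_treeD(1)[OF tt] fin_nodes[OF s0] by simp
  obtain sZ where sZ: "sZ \<in> I_D D Z" "tnodes sZ \<inter> (tnodes ?t \<union> tnodes ?s0) = {}"
    using exists_fresh[OF w Ze f2] by blast
  have dZ: "tnodes sZ \<inter> tnodes ?t = {}" using sZ(2) by blast
  have e: "(q, troot s) \<in> tedges ?t" by (simp add: ins_tree_def)
  have rs: "troot s \<in> tnodes s" using is_treeD(2)[OF ts] .
  have ls: "tlab ?t (troot s) = Elem Bi" using I_D_lab[OF s] rs by (simp add: ins_tree_def)
  note F = rep_facts[OF w ot e Tq(5) rg Zs sZ(1) dZ]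
  let ?t1 = "ins_tree (del_tree ?t (troot s)) q sZ"
  let ?op1 = "ReplaceT (troot s) sZ"
  have pl: "parent_labelled ?t (troot s) A" unfolding parent_labelled_def using e Tq(5) by blast
  have v1: "valid_upd ?op1 ?t" using rs dZ by (simp add: ins_tree_def)
  have m1: "?op1 \<in> sem_uats D AA ?t" unfolding sem_uats_def
    by (simp, intro bexI[OF _ G]) (use pl ls sZ(1) ne in simp)
  have ap1: "apply_upd ?op1 ?t = ?t1" using F(12) by simp
  have tZ: "is_tree sZ" using I_D_tree[OF sZ(1)] .
  have e1: "(q, troot sZ) \<in> tedges ?t1" by (simp add: ins_tree_def)
  have qt: "q \<in> tnodes ?t" using Tq(2) by (simp add: ins_tree_def)
  have q1: "q \<in> tnodes ?t1" using F(4,5) by blast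
  have lq1: "tlab ?t1 q = Elem A" using F(6)[OF qt q1] Tq(5) by simp
  have eT: "tedges T \<subseteq> tnodes T \<times> tnodes T" using is_treeD(3)[OF Tq(1)] .
  have eD: "eqv (del_tree ?t (troot s)) T" using del_ins[OF eT ts d Tq(2)] .
  have n1: "tnodes ?t1 \<subseteq> tnodes T \<union> tnodes sZ"
    using eD unfolding eqv_def by (auto simp: ins_tree_def)
  have d1: "tnodes ?s0 \<inter> tnodes ?t1 = {}" using n1 ns0 Tq(3) sZ(2) by blast
  obtain ops where ops: "ops \<noteq> []" "allowed D AA ?t1 ops"
      "eqv (apply_seq ops ?t1) (ins_tree (del_tree ?t1 (troot sZ)) q ?s0)"
    using chain[OF w AAv ZBi lq1 rg s0 F(1) e1 lq1 F(11) d1] by blast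
  have al: "allowed D AA ?t (?op1 # ops)" using v1 m1 ap1 ops(2) by simp
  have rt: "troot ?t \<noteq> troot s" using rs d is_treeD(2)[OF Tq(1)] by (auto simp: ins_tree_def)
  have st: "troot s \<in> tnodes ?t" using rs by (simp add: ins_tree_def)
  interpret Dl: del_ctx ?t "troot s" using tt st rt[symmetric] by unfold_locales
  have eD1: "tedges (del_tree ?t (troot s)) \<subseteq> tnodes (del_tree ?t (troot s)) \<times> tnodes (del_tree ?t (troot s))"
    using is_treeD(3)[OF Dl.is_tree] .
  have dZ': "tnodes sZ \<inter> tnodes (del_tree ?t (troot s)) = {}" using dZ Dl.K_sub Dl.simps(1) by blast
  have eD2: "eqv (del_tree ?t1 (troot sZ)) (del_tree ?t (troot s))" using del_ins[OF eD1 tZ dZ' F(5)] .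
  have "eqv (ins_tree (del_tree ?t1 (troot sZ)) q ?s0) (ins_tree T q ?s0)"
    using eqv_ins[OF eqv_trans[OF eD2 eD]] .
  then have fin: "eqv (apply_seq (?op1 # ops) ?t) (apply_upd op0 ?t)"
    using eqv_trans[OF ops(3)] eqv_sym[OF tr(2)] ap1 eqv_trans by fastforce
  have v0: "valid_upd op0 ?t" and m0: "matches D ?t op0 u" using tr(1) unfolding good_op_def by auto
  have "op0 \<in> sem_uats D FF ?t" unfolding sem_uats_def using m0 u(1) by blast
  moreover have "\<not> iso (apply_upd op0 ?t) ?t" using good_ni[OF tr(1)] .
  ultimately show ?thesis using not_consistentI[OF Tq(4) _ al _ v0 _ eqv_iso[OF fin]] by simp
qed


lemma not_c2:
  assumes w: "wf_dtd D" and pol: "policy D AA FF" and A: "A \<in> d_ele D" and rg: "d_rg D A = RDisj Bs"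
    and XY: "(X, Y) \<in> (replace_graph D AA A)\<^sup>+" and F0: "URep A X Y \<in> FF"
  shows "\<not> consistent D AA FF"
proof -
  have AAv: "AA \<subseteq> valid_set D" and FFv: "FF \<subseteq> valid_set D" using pol unfolding policy_def by auto
  obtain Z1 where "(X, Z1) \<in> replace_graph D AA A" using tranclD[OF XY] by blast
  then have XB: "X \<in> subs (d_rg D A)" unfolding replace_graph_def by auto
  obtain W1 where "(W1, Y) \<in> replace_graph D AA A" using tranclD2[OF XY] by blast
  then have YB: "Y \<in> subs (d_rg D A)" unfolding replace_graph_def by auto
  have Xs: "X \<in> set Bs" using XB rg by simp
  have Xe: "X \<in> d_ele D" and Ye: "Y \<in> d_ele D" using subs_ele[OF w A] XB YB by auto
  have ne: "X \<noteq> Y" using valid_setD[OF F0 FFv] by simp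
  obtain sX where sX: "sX \<in> I_D D X" using exists_fresh[OF w Xe, of "{}"] by blast
  obtain T q where Tq: "is_tree T" "q \<in> tnodes T" "tnodes T \<inter> ({} \<union> tnodes sX) = {}"
     "ins_tree T q sX \<in> I_D D (d_rt D)" "tlab (ins_tree T q sX) q = Elem A"
    using start_disj[OF w A rg Xs sX finite.emptyI] by blast
  let ?t = "ins_tree T q sX"
  have ot: "ok D ?t" using I_D_ok[OF Tq(4)] .
  have tt: "is_tree ?t" using okD(1)[OF ot] .
  obtain sY where sY: "sY \<in> I_D D Y" "tnodes sY \<inter> tnodes ?t = {}"
    using exists_fresh[OF w Ye is_treeD(1)[OF tt]] by blast
  have tX: "is_tree sX" using I_D_tree[OF sX] .
  have rs: "troot sX \<in> tnodes sX" using is_treeD(2)[OF tX] .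
  let ?n = "troot sX"
  have e: "(q, ?n) \<in> tedges ?t" by (simp add: ins_tree_def)
  have ln: "tlab ?t ?n = Elem X" using I_D_lab[OF sX] rs by (simp add: ins_tree_def)
  let ?op0 = "ReplaceT ?n sY"
  have pl: "parent_labelled ?t ?n A" unfolding parent_labelled_def using e Tq(5) by blast
  have v0: "valid_upd ?op0 ?t" using rs sY(2) by (simp add: ins_tree_def)
  have m0: "?op0 \<in> sem_uats D FF ?t" unfolding sem_uats_def
    by (simp, intro bexI[OF _ F0]) (use pl ln sY(1) ne in simp)
  have ap0: "apply_upd ?op0 ?t = ins_tree (del_tree ?t ?n) q sY" using parent_eq[OF tt e] by simp
  obtain ops where ops: "ops \<noteq> []" "allowed D AA ?t ops"
      "eqv (apply_seq ops ?t) (ins_tree (del_tree ?t ?n) q sY)"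
    using chain[OF w AAv XY Tq(5) rg sY(1) ot e Tq(5) ln sY(2)] by blast
  have d1: "tnodes sX \<inter> tnodes T = {}" using Tq(3) by blast
  have d2: "tnodes sY \<inter> tnodes T = {}" using sY(2) by (auto simp: ins_tree_def)
  obtain P where "cnt P (ins_tree (del_tree (ins_tree T q sX) (troot sX)) q sY) \<noteq> cnt P (ins_tree T q sX)"
    using rep_cnt[OF w Tq(1) Tq(2) sX sY(1) ne d1 d2] by blast
  then have "\<not> iso (apply_upd ?op0 ?t) ?t" using ap0 iso_cnt by metis
  then show ?thesis using not_consistentI[OF Tq(4) ops(1) ops(2) m0 v0 _ eqv_iso] ops(3) ap0 by simp
qed

theorem theorem1:
  fixes D :: "'l dtd" and AA FF :: "'l uat set"
  assumes "wf_dtd D" and "policy D AA FF"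
  shows "consistent D AA FF \<longleftrightarrow>
     ((\<forall>A \<in> d_ele D. \<forall>B. d_rg D A = RStar B \<longrightarrow>
         UIns A B \<in> AA \<longrightarrow> UDel A B \<in> AA \<longrightarrow> nothing_forbidden_below D FF B)
    \<and> (\<forall>A \<in> d_ele D. \<forall>Bs. d_rg D A = RDisj Bs \<longrightarrow>
         (replace_graph D AA A)\<^sup>+ \<inter> forbidden_edges FF A = {})
    \<and> (\<forall>A \<in> d_ele D. \<forall>Bs. d_rg D A = RDisj Bs \<longrightarrow>
         (\<forall>Bi \<in> set Bs. (Bi, Bi) \<in> (replace_graph D AA A)\<^sup>+ \<longrightarrow> nothing_forbidden_below D FF Bi)))"
proof
  assume c: "consistent D AA FF"
  have 1: "\<forall>A \<in> d_ele D. \<forall>B. d_rg D A = RStar B \<longrightarrow>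
         UIns A B \<in> AA \<longrightarrow> UDel A B \<in> AA \<longrightarrow> nothing_forbidden_below D FF B"
    using not_c1[OF assms] c by blast
  have 2: "\<forall>A \<in> d_ele D. \<forall>Bs. d_rg D A = RDisj Bs \<longrightarrow>
         (replace_graph D AA A)\<^sup>+ \<inter> forbidden_edges FF A = {}"
  proof (intro ballI allI impI)
    fix A Bs assume A: "A \<in> d_ele D" and rg: "d_rg D A = RDisj Bs"
    show "(replace_graph D AA A)\<^sup>+ \<inter> forbidden_edges FF A = {}"
    proof (rule ccontr)
      assume "(replace_graph D AA A)\<^sup>+ \<inter> forbidden_edges FF A \<noteq> {}"
      then obtain X Y where "(X, Y) \<in> (replace_graph D AA A)\<^sup>+" "URep A X Y \<in> FF"
        unfolding forbidden_edges_def by auto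
      then show False using not_c2[OF assms A rg] c by blast
    qed
  qed
  have 3: "\<forall>A \<in> d_ele D. \<forall>Bs. d_rg D A = RDisj Bs \<longrightarrow>
         (\<forall>Bi \<in> set Bs. (Bi, Bi) \<in> (replace_graph D AA A)\<^sup>+ \<longrightarrow> nothing_forbidden_below D FF Bi)"
    using not_c3[OF assms] c by blast
  show "(\<forall>A \<in> d_ele D. \<forall>B. d_rg D A = RStar B \<longrightarrow>
         UIns A B \<in> AA \<longrightarrow> UDel A B \<in> AA \<longrightarrow> nothing_forbidden_below D FF B)
    \<and> (\<forall>A \<in> d_ele D. \<forall>Bs. d_rg D A = RDisj Bs \<longrightarrow>
         (replace_graph D AA A)\<^sup>+ \<inter> forbidden_edges FF A = {})
    \<and> (\<forall>A \<in> d_ele D. \<forall>Bs. d_rg D A = RDisj Bs \<longrightarrow>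
         (\<forall>Bi \<in> set Bs. (Bi, Bi) \<in> (replace_graph D AA A)\<^sup>+ \<longrightarrow> nothing_forbidden_below D FF Bi))"
    using 1 2 3 by blast
next
  assume h: "(\<forall>A \<in> d_ele D. \<forall>B. d_rg D A = RStar B \<longrightarrow>
         UIns A B \<in> AA \<longrightarrow> UDel A B \<in> AA \<longrightarrow> nothing_forbidden_below D FF B)
    \<and> (\<forall>A \<in> d_ele D. \<forall>Bs. d_rg D A = RDisj Bs \<longrightarrow>
         (replace_graph D AA A)\<^sup>+ \<inter> forbidden_edges FF A = {})
    \<and> (\<forall>A \<in> d_ele D. \<forall>Bs. d_rg D A = RDisj Bs \<longrightarrow>
         (\<forall>Bi \<in> set Bs. (Bi, Bi) \<in> (replace_graph D AA A)\<^sup>+ \<longrightarrow> nothing_forbidden_below D FF Bi))"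
  show "consistent D AA FF" using if_dir[OF assms] h by blast
qed

end
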